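(* Consider the setting described in the context, with distinct treatments $s\neq t$. Assume (C1), (C2), (C3), that $X$ and $XY^{(\ell)}$, $\ell=1,\dots,k$, have finite second-order moments, and that ${\rm var}(X\mid Z=z)$ is positive definite for every $z\in\mathcal Z$. Define \begin{align*} \widehat\sigma_U^2&=\sum_{z\in\mathcal Z}\frac{n(z)}{n}\Big\{\frac{S_t^2(z)}{\pi_t}+\frac{S_s^2(z)}{\pi_s}\Big\},\qquad \widehat\sigma_V^2=\sum_{z\in\mathcal Z}\frac{n(z)}{n}\{\bar Y_t(z)-\bar Y_s(z)\}^2-\widehat\theta^2,\\ \widehat\sigma_A^2&=\sum_{z\in\mathcal Z}\frac{n(z)}{n}\Big[\frac{S_{t,A}^2(z)}{\pi_t}+\frac{S_{s,A}^2(z)}{\pi_s}+\{\widehat\beta_t(z)-\widehat\beta_s(z)\}^T\widehat\Sigma(z)\{\widehat\beta_t(z)-\widehat\beta_s(z)\}\Big],\\ \widehat\sigma_B^2&=\sum_{z\in\mathcal Z}\frac{n(z)}{n}\Big\{\frac{S_{t,B}^2(z)}{\pi_t}+\frac{S_{s,B}^2(z)}{\pi_s}\Big\}. \end{align*} Then, as $n\to\infty$, $\widehat\sigma_U^2\to\sigma_U^2$, $\widehat\sigma_V^2\to\sigma_V^2$, $\widehat\sigma_A^2\to\sigma_A^2$, and $\widehat\sigma_B^2\to\sigma_B^2$ in probability, where, with $\beta_\ell(z)=\{{\rm var}(X\mid Z=z)\}^{-1}{\rm cov}(X,Y^{(\ell)}\mid Z=z)$ and $\beta(z)=\sum_{\ell=1}^k\pi_\ell\beta_\ell(z)$,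 \begin{align*} \sigma_U^2&=E\{{\rm var}(Y^{(t)}\mid Z)/\pi_t+{\rm var}(Y^{(s)}\mid Z)/\pi_s\},\qquad \sigma_V^2={\rm var}\{E(Y^{(t)}-Y^{(s)}\mid Z)\},\\ \sigma_A^2&=E[{\rm var}\{Y^{(t)}-X^T\beta_t(Z)\mid Z\}/\pi_t+{\rm var}\{Y^{(s)}-X^T\beta_s(Z)\mid Z\}/\pi_s]+E[\{\beta_t(Z)-\beta_s(Z)\}^T{\rm var}(X\mid Z)\{\beta_t(Z)-\beta_s(Z)\}],\\ \sigma_B^2&=E[{\rm var}\{Y^{(t)}-X^T\beta(Z)\mid Z\}/\pi_t+{\rm var}\{Y^{(s)}-X^T\beta(Z)\mid Z\}/\pi_s]. \end{align*}
   Context: Setting: a trial compares $k\ge2$ treatments (fixed) with known assignment proportions $\pi_1,\dots,\pi_k\in(0,1)$, $\sum_t\pi_t=1$. Let $e_t$ be the $t$-th unit vector in $\mathbb R^k$. For patient $i=1,\dots,n$: $I_i\in\{e_1,\dots,e_k\}$ is the treatment indicator, $Y_i^{(1)},\dots,Y_i^{(k)}$ are potential responses, $W_i$ the observed covariate vector, $Z_i$ a discrete function of $W_i$ used in randomization, $X_i$ a vector-valued function of $W_i$. Observed $Y_i=Y_i^{(t)}$ iff $I_i=e_t$. Generic variables $(Y^{(1)},\dots,Y^{(k)},W)$, $Z$, $X$. Conditions: (C1) $(Y_i^{(1)},\dots,Y_i^{(k)},W_i)$, $i=1,\dots,n$, are i.i.d. as $(Y^{(1)},\dots,Y^{(k)},W)$,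 each $Y^{(t)}$ with finite second moments. (C2) $(I_1,\dots,I_n)$ and $\{(Y_i^{(1)},\dots,Y_i^{(k)},W_i)\}_{i}$ are conditionally independent given $Z_1,\dots,Z_n$. (C3) $Z$ takes finitely many values in $\mathcal Z$; ${\rm pr}(I_i=e_t\mid Z_1,\dots,Z_n)=\pi_t$ for all $t,i$; and for every $z\in\mathcal Z$ and $t$, $D_t(z)/n(z)\to0$ in probability, where $n(z)=\#\{i:Z_i=z\}$, $n_t(z)=\#\{i:Z_i=z,I_i=e_t\}$, $D_t(z)=n_t(z)-\pi_tn(z)$. Estimators: $\bar Y_t(z)$, $\bar X_t(z)$ are the sample means of $Y_i$, $X_i$ over $\{i:I_i=e_t,Z_i=z\}$; $\widehat\theta=\sum_{z}\frac{n(z)}{n}\{\bar Y_t(z)-\bar Y_s(z)\}$; $\widehat\beta_t(z)=\big[\sum_{i:I_i=e_t,Z_i=z}\{X_i-\bar X_t(z)\}\{X_i-\bar X_t(z)\}^T\big]^{-1}\sum_{i:I_i=e_t,Z_i=z}\{X_i-\bar X_t(z)\}Y_i$; $\widehat\beta(z)=\big[\sum_{\ell=1}^k\sum_{i:I_i=e_\ell,Z_i=z}\{X_i-\bar X_\ell(z)\}\{X_i-\bar X_\ell(z)\}^T\big]^{-1}\sum_{\ell=1}^k\sum_{i:I_i=e_\ell,Z_i=z}\{X_i-\bar X_\ell(z)\}Y_i$. $S_t^2(z)$ is the sample variance of $Y_i$ over $\{i:I_i=e_t,Z_i=z\}$; $S_{t,A}^2(z)$ is the same with $Y_i$ replaced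 by $Y_i-X_i^T\widehat\beta_t(z)$; $S_{t,B}^2(z)$ is the same with $Y_i$ replaced by $Y_i-X_i^T\widehat\beta(z)$; $\widehat\Sigma(z)$ is the sample covariance matrix of $X_i$ over $\{i:Z_i=z\}$. *)

theory Defs
  imports "HOL-Probability.Probability"
begin

definition conv_in_prob :: "'a measure \<Rightarrow> (nat \<Rightarrow> 'a \<Rightarrow> real) \<Rightarrow> real \<Rightarrow> bool" where
  "conv_in_prob M Xn c \<longleftrightarrow>
     (\<forall>e>0. (\<lambda>n. measure M {\<omega> \<in> space M. \<bar>Xn n \<omega> - c\<bar> > e}) \<longlonglongrightarrow> 0)"

text \<open>Elementary conditional expectation given the discrete event Z = z (P(Z = z) > 0).\<close>
definition cexp :: "'a measure \<Rightarrow> ('a \<Rightarrow> 'z) \<Rightarrow> 'z \<Rightarrow> ('a \<Rightarrow> real) \<Rightarrow> real" where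
  "cexp M Z z f =
     (\<integral>\<omega>. indicator {\<omega> \<in> space M. Z \<omega> = z} \<omega> * f \<omega> \<partial>M) / measure M {\<omega> \<in> space M. Z \<omega> = z}"

definition ccov :: "'a measure \<Rightarrow> ('a \<Rightarrow> 'z) \<Rightarrow> 'z \<Rightarrow> ('a \<Rightarrow> real) \<Rightarrow> ('a \<Rightarrow> real) \<Rightarrow> real" where
  "ccov M Z z f g = cexp M Z z (\<lambda>\<omega>. (f \<omega> - cexp M Z z f) * (g \<omega> - cexp M Z z g))"

definition cvar :: "'a measure \<Rightarrow> ('a \<Rightarrow> 'z) \<Rightarrow> 'z \<Rightarrow> ('a \<Rightarrow> real) \<Rightarrow> real" where
  "cvar M Z z f = cexp M Z z (\<lambda>\<omega>. (f \<omega> - cexp M Z z f)\<^sup>2)"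

definition cvar_vec :: "'a measure \<Rightarrow> ('a \<Rightarrow> 'z) \<Rightarrow> 'z \<Rightarrow> ('a \<Rightarrow> real^'p) \<Rightarrow> real^'p^'p" where
  "cvar_vec M Z z X = (\<chi> a b. ccov M Z z (\<lambda>\<omega>. X \<omega> $ a) (\<lambda>\<omega>. X \<omega> $ b))"

definition ccov_vec :: "'a measure \<Rightarrow> ('a \<Rightarrow> 'z) \<Rightarrow> 'z \<Rightarrow> ('a \<Rightarrow> real^'p) \<Rightarrow> ('a \<Rightarrow> real) \<Rightarrow> real^'p" where
  "ccov_vec M Z z X f = (\<chi> a. ccov M Z z (\<lambda>\<omega>. X \<omega> $ a) f)"

definition pvar :: "'a measure \<Rightarrow> ('a \<Rightarrow> real) \<Rightarrow> real" where
  "pvar M f = (\<integral>\<omega>. (f \<omega> - (\<integral>\<omega>'. f \<omega>' \<partial>M))\<^sup>2 \<partial>M)"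

definition pos_def :: "real^'p^'p \<Rightarrow> bool" where
  "pos_def A \<longleftrightarrow> (\<forall>x. x \<noteq> 0 \<longrightarrow> x \<bullet> (A *v x) > 0)"

definition pvec :: "nat \<Rightarrow> (nat \<Rightarrow> nat \<Rightarrow> 'a \<Rightarrow> real) \<Rightarrow> (nat \<Rightarrow> 'a \<Rightarrow> 'w) \<Rightarrow> nat \<Rightarrow> 'a \<Rightarrow> (nat \<Rightarrow> real) \<times> 'w" where
  "pvec k Y W i \<omega> = (restrict (\<lambda>l. Y i l \<omega>) {..<k}, W i \<omega>)"

definition pspace :: "nat \<Rightarrow> 'w measure \<Rightarrow> ((nat \<Rightarrow> real) \<times> 'w) measure" where
  "pspace k Wsp = (\<Pi>\<^sub>M l\<in>{..<k}. (borel :: real measure)) \<Otimes>\<^sub>M Wsp"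

definition smean :: "nat set \<Rightarrow> (nat \<Rightarrow> real) \<Rightarrow> real" where
  "smean A f = (\<Sum>i\<in>A. f i) / real (card A)"

definition svar :: "nat set \<Rightarrow> (nat \<Rightarrow> real) \<Rightarrow> real" where
  "svar A f = (\<Sum>i\<in>A. (f i - smean A f)\<^sup>2) / (real (card A) - 1)"

definition smean_vec :: "nat set \<Rightarrow> (nat \<Rightarrow> real^'p) \<Rightarrow> real^'p" where
  "smean_vec A x = (1 / real (card A)) *\<^sub>R (\<Sum>i\<in>A. x i)"

definition outer :: "real^'p \<Rightarrow> real^'p \<Rightarrow> real^'p^'p" where
  "outer u v = (\<chi> a b. u $ a * v $ b)"

definition scp :: "nat set \<Rightarrow> (nat \<Rightarrow> real^'p) \<Rightarrow> real^'p^'p" where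
  "scp A x = (\<Sum>i\<in>A. outer (x i - smean_vec A x) (x i - smean_vec A x))"

definition scov :: "nat set \<Rightarrow> (nat \<Rightarrow> real^'p) \<Rightarrow> real^'p^'p" where
  "scov A x = (1 / (real (card A) - 1)) *\<^sub>R scp A x"

definition scross :: "nat set \<Rightarrow> (nat \<Rightarrow> real^'p) \<Rightarrow> (nat \<Rightarrow> real) \<Rightarrow> real^'p" where
  "scross A x y = (\<Sum>i\<in>A. y i *\<^sub>R (x i - smean_vec A x))"

text \<open>Patients are indexed 0..n-1, treatments 0..k-1. Iv i: treatment of patient i;
  Yo i: observed response; Zo i: stratum variable; Xo i: covariate vector.\<close>

definition cell :: "nat \<Rightarrow> (nat \<Rightarrow> nat) \<Rightarrow> (nat \<Rightarrow> 'z) \<Rightarrow> nat \<Rightarrow> 'z \<Rightarrow> nat set" where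
  "cell n Iv Zo l z = {i. i < n \<and> Iv i = l \<and> Zo i = z}"

definition stratum :: "nat \<Rightarrow> (nat \<Rightarrow> 'z) \<Rightarrow> 'z \<Rightarrow> nat set" where
  "stratum n Zo z = {i. i < n \<and> Zo i = z}"

definition wt :: "nat \<Rightarrow> (nat \<Rightarrow> 'z) \<Rightarrow> 'z \<Rightarrow> real" where
  "wt n Zo z = real (card (stratum n Zo z)) / real n"

definition Ybar :: "nat \<Rightarrow> (nat \<Rightarrow> nat) \<Rightarrow> (nat \<Rightarrow> 'z) \<Rightarrow> (nat \<Rightarrow> real) \<Rightarrow> nat \<Rightarrow> 'z \<Rightarrow> real" where
  "Ybar n Iv Zo Yo l z = smean (cell n Iv Zo l z) Yo"

definition theta_hat :: "'z set \<Rightarrow> nat \<Rightarrow> (nat \<Rightarrow> nat) \<Rightarrow> (nat \<Rightarrow> 'z) \<Rightarrow> (nat \<Rightarrow> real) \<Rightarrow> nat \<Rightarrow> nat \<Rightarrow> real" where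
  "theta_hat Zs n Iv Zo Yo t s = (\<Sum>z\<in>Zs. wt n Zo z * (Ybar n Iv Zo Yo t z - Ybar n Iv Zo Yo s z))"

definition beta_hat :: "nat \<Rightarrow> (nat \<Rightarrow> nat) \<Rightarrow> (nat \<Rightarrow> 'z) \<Rightarrow> (nat \<Rightarrow> real^'p) \<Rightarrow> (nat \<Rightarrow> real) \<Rightarrow> nat \<Rightarrow> 'z \<Rightarrow> real^'p" where
  "beta_hat n Iv Zo Xo Yo l z =
     matrix_inv (scp (cell n Iv Zo l z) Xo) *v scross (cell n Iv Zo l z) Xo Yo"

definition beta_pool :: "nat \<Rightarrow> nat \<Rightarrow> (nat \<Rightarrow> nat) \<Rightarrow> (nat \<Rightarrow> 'z) \<Rightarrow> (nat \<Rightarrow> real^'p) \<Rightarrow> (nat \<Rightarrow> real) \<Rightarrow> 'z \<Rightarrow> real^'p" where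
  "beta_pool k n Iv Zo Xo Yo z =
     matrix_inv (\<Sum>l<k. scp (cell n Iv Zo l z) Xo) *v (\<Sum>l<k. scross (cell n Iv Zo l z) Xo Yo)"

definition sigU_hat :: "(nat \<Rightarrow> real) \<Rightarrow> 'z set \<Rightarrow> nat \<Rightarrow> (nat \<Rightarrow> nat) \<Rightarrow> (nat \<Rightarrow> 'z) \<Rightarrow> (nat \<Rightarrow> real) \<Rightarrow> nat \<Rightarrow> nat \<Rightarrow> real" where
  "sigU_hat \<pi> Zs n Iv Zo Yo t s =
     (\<Sum>z\<in>Zs. wt n Zo z * (svar (cell n Iv Zo t z) Yo / \<pi> t + svar (cell n Iv Zo s z) Yo / \<pi> s))"

definition sigV_hat :: "'z set \<Rightarrow> nat \<Rightarrow> (nat \<Rightarrow> nat) \<Rightarrow> (nat \<Rightarrow> 'z) \<Rightarrow> (nat \<Rightarrow> real) \<Rightarrow> nat \<Rightarrow> nat \<Rightarrow> real" where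
  "sigV_hat Zs n Iv Zo Yo t s =
     (\<Sum>z\<in>Zs. wt n Zo z * (Ybar n Iv Zo Yo t z - Ybar n Iv Zo Yo s z)\<^sup>2) - (theta_hat Zs n Iv Zo Yo t s)\<^sup>2"

definition sigA_hat :: "(nat \<Rightarrow> real) \<Rightarrow> 'z set \<Rightarrow> nat \<Rightarrow> (nat \<Rightarrow> nat) \<Rightarrow> (nat \<Rightarrow> 'z) \<Rightarrow> (nat \<Rightarrow> real^'p) \<Rightarrow> (nat \<Rightarrow> real) \<Rightarrow> nat \<Rightarrow> nat \<Rightarrow> real" where
  "sigA_hat \<pi> Zs n Iv Zo Xo Yo t s =
     (\<Sum>z\<in>Zs. wt n Zo z *
        (svar (cell n Iv Zo t z) (\<lambda>i. Yo i - Xo i \<bullet> beta_hat n Iv Zo Xo Yo t z) / \<pi> t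
       + svar (cell n Iv Zo s z) (\<lambda>i. Yo i - Xo i \<bullet> beta_hat n Iv Zo Xo Yo s z) / \<pi> s
       + (beta_hat n Iv Zo Xo Yo t z - beta_hat n Iv Zo Xo Yo s z) \<bullet>
           (scov (stratum n Zo z) Xo *v (beta_hat n Iv Zo Xo Yo t z - beta_hat n Iv Zo Xo Yo s z))))"

definition sigB_hat :: "nat \<Rightarrow> (nat \<Rightarrow> real) \<Rightarrow> 'z set \<Rightarrow> nat \<Rightarrow> (nat \<Rightarrow> nat) \<Rightarrow> (nat \<Rightarrow> 'z) \<Rightarrow> (nat \<Rightarrow> real^'p) \<Rightarrow> (nat \<Rightarrow> real) \<Rightarrow> nat \<Rightarrow> nat \<Rightarrow> real" where
  "sigB_hat k \<pi> Zs n Iv Zo Xo Yo t s =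
     (\<Sum>z\<in>Zs. wt n Zo z *
        (svar (cell n Iv Zo t z) (\<lambda>i. Yo i - Xo i \<bullet> beta_pool k n Iv Zo Xo Yo z) / \<pi> t
       + svar (cell n Iv Zo s z) (\<lambda>i. Yo i - Xo i \<bullet> beta_pool k n Iv Zo Xo Yo z) / \<pi> s))"

definition beta_pop :: "'a measure \<Rightarrow> ('a \<Rightarrow> 'z) \<Rightarrow> ('a \<Rightarrow> real^'p) \<Rightarrow> ('a \<Rightarrow> real) \<Rightarrow> 'z \<Rightarrow> real^'p" where
  "beta_pop M Z X Yl z = matrix_inv (cvar_vec M Z z X) *v ccov_vec M Z z X Yl"

definition sigU :: "'a measure \<Rightarrow> ('a \<Rightarrow> 'z) \<Rightarrow> (nat \<Rightarrow> 'a \<Rightarrow> real) \<Rightarrow> (nat \<Rightarrow> real) \<Rightarrow> nat \<Rightarrow> nat \<Rightarrow> real" where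
  "sigU M Z Y \<pi> t s =
     (\<integral>\<omega>. cvar M Z (Z \<omega>) (Y t) / \<pi> t + cvar M Z (Z \<omega>) (Y s) / \<pi> s \<partial>M)"

definition sigV :: "'a measure \<Rightarrow> ('a \<Rightarrow> 'z) \<Rightarrow> (nat \<Rightarrow> 'a \<Rightarrow> real) \<Rightarrow> nat \<Rightarrow> nat \<Rightarrow> real" where
  "sigV M Z Y t s = pvar M (\<lambda>\<omega>. cexp M Z (Z \<omega>) (\<lambda>\<omega>'. Y t \<omega>' - Y s \<omega>'))"

definition sigA :: "'a measure \<Rightarrow> ('a \<Rightarrow> 'z) \<Rightarrow> ('a \<Rightarrow> real^'p) \<Rightarrow> (nat \<Rightarrow> 'a \<Rightarrow> real) \<Rightarrow> (nat \<Rightarrow> real) \<Rightarrow> nat \<Rightarrow> nat \<Rightarrow> real" where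
  "sigA M Z X Y \<pi> t s =
     (\<integral>\<omega>. cvar M Z (Z \<omega>) (\<lambda>\<omega>'. Y t \<omega>' - X \<omega>' \<bullet> beta_pop M Z X (Y t) (Z \<omega>)) / \<pi> t
        + cvar M Z (Z \<omega>) (\<lambda>\<omega>'. Y s \<omega>' - X \<omega>' \<bullet> beta_pop M Z X (Y s) (Z \<omega>)) / \<pi> s \<partial>M)
   + (\<integral>\<omega>. (beta_pop M Z X (Y t) (Z \<omega>) - beta_pop M Z X (Y s) (Z \<omega>)) \<bullet>
          (cvar_vec M Z (Z \<omega>) X *v (beta_pop M Z X (Y t) (Z \<omega>) - beta_pop M Z X (Y s) (Z \<omega>))) \<partial>M)"

definition beta_bar :: "'a measure \<Rightarrow> ('a \<Rightarrow> 'z) \<Rightarrow> ('a \<Rightarrow> real^'p) \<Rightarrow> (nat \<Rightarrow> 'a \<Rightarrow> real) \<Rightarrow> (nat \<Rightarrow> real) \<Rightarrow> nat \<Rightarrow> 'z \<Rightarrow> real^'p" where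
  "beta_bar M Z X Y \<pi> k z = (\<Sum>l<k. \<pi> l *\<^sub>R beta_pop M Z X (Y l) z)"

definition sigB :: "'a measure \<Rightarrow> ('a \<Rightarrow> 'z) \<Rightarrow> ('a \<Rightarrow> real^'p) \<Rightarrow> (nat \<Rightarrow> 'a \<Rightarrow> real) \<Rightarrow> (nat \<Rightarrow> real) \<Rightarrow> nat \<Rightarrow> nat \<Rightarrow> nat \<Rightarrow> real" where
  "sigB M Z X Y \<pi> k t s =
     (\<integral>\<omega>. cvar M Z (Z \<omega>) (\<lambda>\<omega>'. Y t \<omega>' - X \<omega>' \<bullet> beta_bar M Z X Y \<pi> k (Z \<omega>)) / \<pi> t
        + cvar M Z (Z \<omega>) (\<lambda>\<omega>'. Y s \<omega>' - X \<omega>' \<bullet> beta_bar M Z X Y \<pi> k (Z \<omega>)) / \<pi> s \<partial>M)"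

end

theory Submission
  imports Defs
begin

definition small :: "'a measure \<Rightarrow> (nat \<Rightarrow> 'a set) \<Rightarrow> bool" where
  "small M B \<longleftrightarrow> (\<forall>d>0. eventually (\<lambda>n. \<exists>A\<in>sets M. B n \<subseteq> A \<and> measure M A < d) sequentially)"

definition cipo :: "'a measure \<Rightarrow> (nat \<Rightarrow> 'a \<Rightarrow> 'b::metric_space) \<Rightarrow> 'b \<Rightarrow> bool" where
  "cipo M X c \<longleftrightarrow> (\<forall>e>0. small M (\<lambda>n. {\<omega>\<in>space M. e < dist (X n \<omega>) c}))"

lemma small_mono:
  assumes "small M B" "\<And>n. B' n \<subseteq> B n"
  shows "small M B'"
  unfolding small_def
proof (intro allI impI)
  fix d :: real assume "d > 0"
  with assms(1) have "eventually (\<lambda>n. \<exists>A\<in>sets M. B n \<subseteq> A \<and> measure M A < d) sequentially"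
    unfolding small_def by auto
  then show "eventually (\<lambda>n. \<exists>A\<in>sets M. B' n \<subseteq> A \<and> measure M A < d) sequentially"
    by eventually_elim (use assms(2) in blast)
qed

lemma small_empty: "small M (\<lambda>n. {})"
  unfolding small_def by (auto intro!: bexI[of _ "{}"])

lemma small_Un:
  assumes "finite_measure M" "small M B" "small M C"
  shows "small M (\<lambda>n. B n \<union> C n)"
  unfolding small_def
proof (intro allI impI)
  fix d :: real assume d: "d > 0"
  have d2: "d/2 > 0" using d by simp
  have "eventually (\<lambda>n. \<exists>A\<in>sets M. B n \<subseteq> A \<and> measure M A < d/2) sequentially"
       "eventually (\<lambda>n. \<exists>A\<in>sets M. C n \<subseteq> A \<and> measure M A < d/2) sequentially"
    using assms(2)[unfolded small_def, rule_format, OF d2] assms(3)[unfolded small_def, rule_format, OF d2] by auto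
  then show "eventually (\<lambda>n. \<exists>A\<in>sets M. B n \<union> C n \<subseteq> A \<and> measure M A < d) sequentially"
  proof eventually_elim
    case (elim n)
    then obtain A1 A2 where A: "A1 \<in> sets M" "B n \<subseteq> A1" "measure M A1 < d/2"
      "A2 \<in> sets M" "C n \<subseteq> A2" "measure M A2 < d/2" by blast
    have "measure M (A1 \<union> A2) \<le> measure M A1 + measure M A2"
      using A assms(1) by (intro measure_subadditive) (auto simp: finite_measure.emeasure_finite)
    then show ?case using A by (intro bexI[of _ "A1 \<union> A2"]) auto
  qed
qed

lemma small_UN:
  assumes "finite_measure M" "finite S" "\<And>s. s \<in> S \<Longrightarrow> small M (B s)"
  shows "small M (\<lambda>n. \<Union>s\<in>S. B s n)"
  using assms(2,3)
proof (induction S rule: finite_induct)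
  case empty then show ?case by (simp add: small_empty)
next
  case (insert x F)
  then have "small M (\<lambda>n. B x n \<union> (\<Union>s\<in>F. B s n))"
    by (intro small_Un assms(1)) auto
  then show ?case by simp
qed

lemma cipoI: "(\<And>e. e > 0 \<Longrightarrow> small M (\<lambda>n. {\<omega>\<in>space M. e < dist (X n \<omega>) c})) \<Longrightarrow> cipo M X c"
  unfolding cipo_def by auto

lemma cipoD: "cipo M X c \<Longrightarrow> e > 0 \<Longrightarrow> small M (\<lambda>n. {\<omega>\<in>space M. e < dist (X n \<omega>) c})"
  unfolding cipo_def by auto

lemma cipo_const: "cipo M (\<lambda>n \<omega>. c) c"
  by (auto intro!: cipoI simp: small_empty)

lemma cipo_det:
  assumes "x \<longlonglongrightarrow> c"
  shows "cipo M (\<lambda>n \<omega>. x n) c"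
proof (rule cipoI)
  fix e :: real assume e: "e > 0"
  have ev: "eventually (\<lambda>n. dist (x n) c < e) sequentially"
    using assms e by (rule tendstoD)
  show "small M (\<lambda>n. {\<omega>\<in>space M. e < dist (x n) c})"
    unfolding small_def
  proof (intro allI impI)
    fix d :: real assume "d > 0"
    from ev show "eventually (\<lambda>n. \<exists>A\<in>sets M. {\<omega>\<in>space M. e < dist (x n) c} \<subseteq> A \<and> measure M A < d) sequentially"
      by eventually_elim (use \<open>d > 0\<close> in \<open>auto intro!: bexI[of _ "{}"]\<close>)
  qed
qed

lemma cipo_pair:
  assumes "finite_measure M" "cipo M X a" "cipo M Y b"
  shows "cipo M (\<lambda>n \<omega>. (X n \<omega>, Y n \<omega>)) (a, b)"
proof (rule cipoI)
  fix e :: real assume e: "e > 0"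
  have "small M (\<lambda>n. {\<omega>\<in>space M. e/2 < dist (X n \<omega>) a} \<union> {\<omega>\<in>space M. e/2 < dist (Y n \<omega>) b})"
    using assms e by (intro small_Un cipoD) auto
  moreover have "{\<omega>\<in>space M. e < dist (X n \<omega>, Y n \<omega>) (a, b)} \<subseteq>
      {\<omega>\<in>space M. e/2 < dist (X n \<omega>) a} \<union> {\<omega>\<in>space M. e/2 < dist (Y n \<omega>) b}" for n
  proof safe
    fix \<omega> assume "\<omega> \<in> space M" "e < dist (X n \<omega>, Y n \<omega>) (a, b)" "\<not> e / 2 < dist (Y n \<omega>) b"
    moreover have "dist (X n \<omega>, Y n \<omega>) (a, b) \<le> dist (X n \<omega>) a + dist (Y n \<omega>) b"
      unfolding dist_Pair_Pair by (rule sqrt_sum_squares_le_sum) auto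
    ultimately show "e / 2 < dist (X n \<omega>) a" by linarith
  qed
  ultimately show "small M (\<lambda>n. {\<omega>\<in>space M. e < dist (X n \<omega>, Y n \<omega>) (a, b)})"
    by (rule small_mono)
qed

lemma cipo_cont:
  assumes "cipo M X a" "isCont g a"
  shows "cipo M (\<lambda>n \<omega>. g (X n \<omega>)) (g a)"
proof (rule cipoI)
  fix e :: real assume e: "e > 0"
  obtain r where r: "r > 0" "\<And>x. dist x a < r \<Longrightarrow> dist (g x) (g a) < e"
    using assms(2) e unfolding continuous_at_eps_delta by blast
  have "small M (\<lambda>n. {\<omega>\<in>space M. r/2 < dist (X n \<omega>) a})"
    using assms r by (intro cipoD) auto
  moreover have "{\<omega>\<in>space M. e < dist (g (X n \<omega>)) (g a)} \<subseteq> {\<omega>\<in>space M. r/2 < dist (X n \<omega>) a}" for n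
  proof safe
    fix \<omega> assume w: "\<omega> \<in> space M" "e < dist (g (X n \<omega>)) (g a)"
    show "r/2 < dist (X n \<omega>) a"
    proof (rule ccontr)
      assume "\<not> r/2 < dist (X n \<omega>) a"
      then have "dist (X n \<omega>) a < r" using r by simp
      then show False using r(2)[of "X n \<omega>"] w by simp
    qed
  qed
  ultimately show "small M (\<lambda>n. {\<omega>\<in>space M. e < dist (g (X n \<omega>)) (g a)})"
    by (rule small_mono)
qed

lemma cipo_near:
  assumes "finite_measure M" "cipo M X a" "cipo M V v" "open U" "v \<in> U"
    and eq: "\<And>n \<omega>. \<omega> \<in> space M \<Longrightarrow> V n \<omega> \<in> U \<Longrightarrow> X' n \<omega> = X n \<omega>"
  shows "cipo M X' a"
proof (rule cipoI)
  fix e :: real assume e: "e > 0"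
  obtain r where r: "r > 0" "ball v r \<subseteq> U"
    using assms(4,5) open_contains_ball by blast
  have "small M (\<lambda>n. {\<omega>\<in>space M. e < dist (X n \<omega>) a} \<union> {\<omega>\<in>space M. r/2 < dist (V n \<omega>) v})"
    using assms e r by (intro small_Un cipoD) auto
  moreover have "{\<omega>\<in>space M. e < dist (X' n \<omega>) a} \<subseteq>
     {\<omega>\<in>space M. e < dist (X n \<omega>) a} \<union> {\<omega>\<in>space M. r/2 < dist (V n \<omega>) v}" for n
  proof safe
    fix \<omega> assume "\<omega> \<in> space M" "e < dist (X' n \<omega>) a" "\<not> r / 2 < dist (V n \<omega>) v"
    then have "V n \<omega> \<in> U" using r by (auto simp: dist_commute)
    with eq \<open>\<omega> \<in> space M\<close> \<open>e < dist (X' n \<omega>) a\<close> show "e < dist (X n \<omega>) a" by auto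
  qed
  ultimately show "small M (\<lambda>n. {\<omega>\<in>space M. e < dist (X' n \<omega>) a})"
    by (rule small_mono)
qed

lemma cipo_cong:
  assumes "cipo M X a" "\<And>n \<omega>. \<omega> \<in> space M \<Longrightarrow> X' n \<omega> = X n \<omega>" "a = a'"
  shows "cipo M X' a'"
  using assms unfolding cipo_def by (simp cong: conj_cong)

lemma norm_le_sum_norm_vec: "norm (x :: 'b::real_normed_vector^'n) \<le> (\<Sum>i\<in>UNIV. norm (x $ i))"
  unfolding norm_vec_def by (rule L2_set_le_sum) auto

lemma cipo_vec:
  fixes X :: "nat \<Rightarrow> 'a \<Rightarrow> 'b::real_normed_vector^'n"
  assumes "finite_measure M" "\<And>i. cipo M (\<lambda>n \<omega>. X n \<omega> $ i) (c $ i)"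
  shows "cipo M X c"
proof (rule cipoI)
  fix e :: real assume e: "e > 0"
  define K where "K = real (card (UNIV :: 'n set))"
  have K: "K > 0" unfolding K_def by auto
  have "small M (\<lambda>n. \<Union>i\<in>UNIV. {\<omega>\<in>space M. e/K < dist (X n \<omega> $ i) (c $ i)})"
    using assms e K by (intro small_UN cipoD) auto
  moreover have "{\<omega>\<in>space M. e < dist (X n \<omega>) c} \<subseteq> (\<Union>i\<in>UNIV. {\<omega>\<in>space M. e/K < dist (X n \<omega> $ i) (c $ i)})" for n
  proof safe
    fix \<omega> assume w: "\<omega> \<in> space M" "e < dist (X n \<omega>) c"
    show "\<omega> \<in> (\<Union>i\<in>UNIV. {\<omega>\<in>space M. e/K < dist (X n \<omega> $ i) (c $ i)})"
    proof (rule ccontr)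
      assume "\<omega> \<notin> (\<Union>i\<in>UNIV. {\<omega>\<in>space M. e/K < dist (X n \<omega> $ i) (c $ i)})"
      then have le: "\<And>i. norm ((X n \<omega> - c) $ i) \<le> e/K" using w by (auto simp: dist_norm not_less)
      have "dist (X n \<omega>) c \<le> (\<Sum>i\<in>UNIV. norm ((X n \<omega> - c) $ i))"
        unfolding dist_norm by (rule norm_le_sum_norm_vec)
      also have "\<dots> \<le> (\<Sum>i\<in>(UNIV::'n set). e/K)" by (rule sum_mono) (rule le)
      also have "\<dots> = e" using K unfolding K_def by simp
      finally show False using w by simp
    qed
  qed
  ultimately show "small M (\<lambda>n. {\<omega>\<in>space M. e < dist (X n \<omega>) c})"
    by (rule small_mono)
qed

lemma cipo_comp:
  assumes "cipo M X c"
  shows "cipo M (\<lambda>n \<omega>. X n \<omega> $ i) (c $ i)"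
  using assms by (rule cipo_cont) (intro continuous_intros)

lemma cipo_conv:
  fixes X :: "nat \<Rightarrow> 'a \<Rightarrow> real"
  assumes fm: "finite_measure M" and "cipo M X c"
  shows "conv_in_prob M X c"
  unfolding conv_in_prob_def
proof (intro allI impI)
  fix e :: real assume e: "e > 0"
  show "(\<lambda>n. measure M {\<omega> \<in> space M. e < \<bar>X n \<omega> - c\<bar>}) \<longlonglongrightarrow> 0"
  proof (rule tendstoI)
    fix d :: real assume d: "d > 0"
    have "eventually (\<lambda>n. \<exists>A\<in>sets M. {\<omega> \<in> space M. e < dist (X n \<omega>) c} \<subseteq> A \<and> measure M A < d) sequentially"
      using cipoD[OF assms(2) e] d unfolding small_def by auto
    then show "eventually (\<lambda>n. dist (measure M {\<omega> \<in> space M. e < \<bar>X n \<omega> - c\<bar>}) 0 < d) sequentially"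
    proof eventually_elim
      case (elim n)
      then obtain A where A: "A \<in> sets M" "{\<omega> \<in> space M. e < \<bar>X n \<omega> - c\<bar>} \<subseteq> A" "measure M A < d"
        by (auto simp: dist_real_def)
      show ?case
      proof (cases "{\<omega> \<in> space M. e < \<bar>X n \<omega> - c\<bar>} \<in> sets M")
        case True
        have "measure M {\<omega> \<in> space M. e < \<bar>X n \<omega> - c\<bar>} \<le> measure M A"
          using A True fm by (intro finite_measure.finite_measure_mono) auto
        then show ?thesis using A by simp
      next
        case False
        then show ?thesis using d by (simp add: measure_notin_sets)
      qed
    qed
  qed
qed


lemma cipo_binop:
  assumes "finite_measure M" "cipo M X a" "cipo M Y b" "isCont (\<lambda>p. f (fst p) (snd p)) (a, b)"
  shows "cipo M (\<lambda>n \<omega>. f (X n \<omega>) (Y n \<omega>)) (f a b)"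
  using cipo_cont[OF cipo_pair[OF assms(1-3)] assms(4)] by simp

lemma cipo_add:
  fixes X :: "nat \<Rightarrow> 'a \<Rightarrow> 'b::real_normed_vector"
  assumes "finite_measure M" "cipo M X a" "cipo M Y b"
  shows "cipo M (\<lambda>n \<omega>. X n \<omega> + Y n \<omega>) (a + b)"
  by (rule cipo_binop[OF assms]) (intro continuous_intros)

lemma cipo_diff:
  fixes X :: "nat \<Rightarrow> 'a \<Rightarrow> 'b::real_normed_vector"
  assumes "finite_measure M" "cipo M X a" "cipo M Y b"
  shows "cipo M (\<lambda>n \<omega>. X n \<omega> - Y n \<omega>) (a - b)"
  by (rule cipo_binop[OF assms]) (intro continuous_intros)

lemma cipo_mult:
  fixes X :: "nat \<Rightarrow> 'a \<Rightarrow> real"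
  assumes "finite_measure M" "cipo M X a" "cipo M Y b"
  shows "cipo M (\<lambda>n \<omega>. X n \<omega> * Y n \<omega>) (a * b)"
  by (rule cipo_binop[OF assms]) (intro continuous_intros)

lemma cipo_scaleR:
  fixes Y :: "nat \<Rightarrow> 'a \<Rightarrow> 'b::real_normed_vector"
  assumes "finite_measure M" "cipo M X a" "cipo M Y b"
  shows "cipo M (\<lambda>n \<omega>. X n \<omega> *\<^sub>R Y n \<omega>) (a *\<^sub>R b)"
  by (rule cipo_binop[OF assms]) (intro continuous_intros)

lemma cipo_inner:
  fixes Y :: "nat \<Rightarrow> 'a \<Rightarrow> 'b::real_inner"
  assumes "finite_measure M" "cipo M X a" "cipo M Y b"
  shows "cipo M (\<lambda>n \<omega>. X n \<omega> \<bullet> Y n \<omega>) (a \<bullet> b)"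
  by (rule cipo_binop[OF assms]) (intro continuous_intros)

lemma cipo_divide:
  fixes X :: "nat \<Rightarrow> 'a \<Rightarrow> real"
  assumes "finite_measure M" "cipo M X a" "cipo M Y b" "b \<noteq> 0"
  shows "cipo M (\<lambda>n \<omega>. X n \<omega> / Y n \<omega>) (a / b)"
  by (rule cipo_binop[OF assms(1-3)]) (use assms(4) in \<open>intro continuous_intros; simp\<close>)

lemma cipo_sum:
  fixes X :: "'i \<Rightarrow> nat \<Rightarrow> 'a \<Rightarrow> 'b::real_normed_vector"
  assumes "finite_measure M" "finite S" "\<And>s. s \<in> S \<Longrightarrow> cipo M (X s) (a s)"
  shows "cipo M (\<lambda>n \<omega>. \<Sum>s\<in>S. X s n \<omega>) (\<Sum>s\<in>S. a s)"
  using assms(2,3)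
proof (induction S rule: finite_induct)
  case empty then show ?case by (simp add: cipo_const)
next
  case (insert x F)
  then show ?case by (simp add: cipo_add[OF assms(1)])
qed

lemma isCont_mvmult: "isCont (\<lambda>p. fst p *v snd p) (x :: (real^'n^'m) \<times> (real^'n))"
  unfolding isCont_def matrix_vector_mult_def
  by (intro tendsto_intros tendsto_vec_lambda)

lemma cipo_mvmult:
  fixes X :: "nat \<Rightarrow> 'a \<Rightarrow> real^'n^'m"
  assumes "finite_measure M" "cipo M X a" "cipo M Y b"
  shows "cipo M (\<lambda>n \<omega>. X n \<omega> *v Y n \<omega>) (a *v b)"
  by (rule cipo_binop[OF assms]) (rule isCont_mvmult)

lemma isCont_outer: "isCont (\<lambda>p. outer (fst p) (snd p)) (x :: (real^'n) \<times> (real^'n))"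
  unfolding isCont_def outer_def
  by (intro tendsto_intros tendsto_vec_lambda)

lemma cipo_outer:
  fixes X :: "nat \<Rightarrow> 'a \<Rightarrow> real^'n"
  assumes "finite_measure M" "cipo M X a" "cipo M Y b"
  shows "cipo M (\<lambda>n \<omega>. outer (X n \<omega>) (Y n \<omega>)) (outer a b)"
  by (rule cipo_binop[OF assms]) (rule isCont_outer)

lemma isCont_det: "isCont (det :: real^'n^'n \<Rightarrow> real) A"
  unfolding isCont_def det_def
  by (intro tendsto_intros)

definition cramer_sol :: "real^'n^'n \<Rightarrow> real^'n \<Rightarrow> real^'n" where
  "cramer_sol A b = (\<chi> k. det (\<chi> i j. if j = k then b $ i else A $ i $ j) / det A)"

lemma matrix_inv_right:
  assumes "invertible (A :: 'a::semiring_1^'n^'m)"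
  shows "A ** matrix_inv A = mat 1"
proof -
  have "\<exists>A'. A ** A' = mat 1 \<and> A' ** A = mat 1" using assms unfolding invertible_def by blast
  then show ?thesis unfolding matrix_inv_def by (rule someI2_ex) auto
qed

lemma matrix_inv_mult_cramer:
  fixes A :: "real^'n^'n"
  assumes "det A \<noteq> 0"
  shows "matrix_inv A *v b = cramer_sol A b"
proof -
  have "A *v (matrix_inv A *v b) = b"
    using matrix_inv_right[of A] assms
    by (simp add: invertible_det_nz matrix_vector_mul_assoc)
  then show ?thesis unfolding cramer_sol_def using cramer[OF assms] by blast
qed

lemma isCont_minv_mult:
  fixes A :: "real^'n^'n"
  assumes "det A \<noteq> 0"
  shows "isCont (\<lambda>p. matrix_inv (fst p) *v snd p) (A, b)"
proof -
  have "isCont (\<lambda>p. det (fst p)) (A, b)"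
    by (rule continuous_at_compose[OF _ isCont_det, unfolded o_def]) (intro continuous_intros)
  then have "eventually (\<lambda>p. det (fst p) \<noteq> 0) (at (A, b))"
    using assms unfolding isCont_def by (intro tendsto_imp_eventually_ne) auto
  then have "eventually (\<lambda>p. det (fst p) \<noteq> 0) (nhds (A, b))"
    using assms by (simp add: eventually_nhds_conv_at)
  then have ev: "eventually (\<lambda>p. matrix_inv (fst p) *v snd p = cramer_sol (fst p) (snd p)) (nhds (A, b))"
    by eventually_elim (rule matrix_inv_mult_cramer)
  have t1: "(fst \<longlongrightarrow> A) (at (A, b))" "(snd \<longlongrightarrow> b) (at (A, b))"
    using tendsto_fst[OF tendsto_ident_at, of "(A,b)" UNIV] tendsto_snd[OF tendsto_ident_at, of "(A,b)" UNIV]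
    by (simp_all add: eta_contract_eq)
  moreover have "isCont (\<lambda>p. cramer_sol (fst p) (snd p)) (A, b)"
    unfolding isCont_def cramer_sol_def det_def
    using assms unfolding det_def
    by (intro tendsto_intros tendsto_vec_lambda) (auto intro!: tendsto_vec_nth tendsto_intros t1)
  ultimately show ?thesis using ev by (subst isCont_cong) auto
qed

lemma cipo_minv_mult:
  fixes X :: "nat \<Rightarrow> 'a \<Rightarrow> real^'n^'n"
  assumes "finite_measure M" "cipo M X a" "cipo M Y b" "det a \<noteq> 0"
  shows "cipo M (\<lambda>n \<omega>. matrix_inv (X n \<omega>) *v Y n \<omega>) (matrix_inv a *v b)"
  by (rule cipo_binop[OF assms(1-3)]) (rule isCont_minv_mult[OF assms(4)])


lemma cond_fun_eq:
  fixes \<psi> :: "'b \<Rightarrow> real" and Dv :: "'a \<Rightarrow> 'b"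
  assumes fmM: "finite_measure M" and [measurable]: "Dv \<in> measurable M N" "S1 \<in> sets M" "S2 \<in> sets M"
    and c: "c1 \<ge> 0" "c2 \<ge> 0"
    and eq: "\<And>B. B \<in> sets N \<Longrightarrow> c1 * measure M (S1 \<inter> (Dv -` B \<inter> space M)) = c2 * measure M (S2 \<inter> (Dv -` B \<inter> space M))"
    and [measurable]: "\<psi> \<in> borel_measurable N"
  shows "c1 * (\<integral>\<omega>. indicator S1 \<omega> * \<psi> (Dv \<omega>) \<partial>M) = c2 * (\<integral>\<omega>. indicator S2 \<omega> * \<psi> (Dv \<omega>) \<partial>M)"
proof -
  interpret finite_measure M by (rule fmM)
  define N1 where "N1 = density (distr (density M (\<lambda>x. ennreal (indicator S1 x))) N Dv) (\<lambda>_. ennreal c1)"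
  define N2 where "N2 = density (distr (density M (\<lambda>x. ennreal (indicator S2 x))) N Dv) (\<lambda>_. ennreal c2)"
  have em: "emeasure (density (distr (density M (\<lambda>x. ennreal (indicator S x))) N Dv) (\<lambda>_. ennreal c)) B
      = ennreal (c * measure M (S \<inter> (Dv -` B \<inter> space M)))"
    if "B \<in> sets N" "S \<in> sets M" "c \<ge> 0" for B S c
  proof -
    have "emeasure (density (distr (density M (\<lambda>x. ennreal (indicator S x))) N Dv) (\<lambda>_. ennreal c)) B
        = ennreal c * emeasure (distr (density M (\<lambda>x. ennreal (indicator S x))) N Dv) B"
      using that by (subst emeasure_density_const) auto
    also have "\<dots> = ennreal c * emeasure (density M (\<lambda>x. ennreal (indicator S x))) (Dv -` B \<inter> space M)"
      using that by (subst emeasure_distr) auto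
    also have "\<dots> = ennreal c * emeasure M (S \<inter> (Dv -` B \<inter> space M))"
      using that by (subst ennreal_indicator, subst emeasure_restricted) auto
    also have "\<dots> = ennreal (c * measure M (S \<inter> (Dv -` B \<inter> space M)))"
      using that by (simp add: emeasure_eq_measure ennreal_mult)
    finally show ?thesis .
  qed
  have "N1 = N2"
  proof (rule measure_eqI)
    show "sets N1 = sets N2" unfolding N1_def N2_def by simp
    fix B assume "B \<in> sets N1"
    then have B: "B \<in> sets N" unfolding N1_def by simp
    show "emeasure N1 B = emeasure N2 B"
      unfolding N1_def N2_def using em[OF B] eq[OF B] c by simp
  qed
  have int: "(\<integral>x. \<psi> x \<partial>density (distr (density M (\<lambda>x. ennreal (indicator S x))) N Dv) (\<lambda>_. ennreal c))
      = c * (\<integral>\<omega>. indicator S \<omega> * \<psi> (Dv \<omega>) \<partial>M)" if "S \<in> sets M" "c \<ge> 0" for S c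
  proof -
    have "(\<integral>x. \<psi> x \<partial>density (distr (density M (\<lambda>x. ennreal (indicator S x))) N Dv) (\<lambda>_. ennreal c))
        = (\<integral>x. c *\<^sub>R \<psi> x \<partial>distr (density M (\<lambda>x. ennreal (indicator S x))) N Dv)"
      using that by (subst integral_density) auto
    also have "\<dots> = c * (\<integral>x. \<psi> x \<partial>distr (density M (\<lambda>x. ennreal (indicator S x))) N Dv)"
      by simp
    also have "(\<integral>x. \<psi> x \<partial>distr (density M (\<lambda>x. ennreal (indicator S x))) N Dv)
        = (\<integral>\<omega>. \<psi> (Dv \<omega>) \<partial>density M (\<lambda>x. ennreal (indicator S x)))"
      by (subst integral_distr) auto
    also have "\<dots> = (\<integral>\<omega>. indicator S \<omega> * \<psi> (Dv \<omega>) \<partial>M)"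
      using that by (subst integral_density) auto
    finally show ?thesis .
  qed
  have "(\<integral>x. \<psi> x \<partial>N1) = (\<integral>x. \<psi> x \<partial>N2)" using \<open>N1 = N2\<close> by simp
  then show ?thesis unfolding N1_def N2_def using int c by simp
qed

locale trial =
  fixes M :: "'a measure" and Wsp :: "'w measure"
    and k :: nat and \<pi> :: "nat \<Rightarrow> real"
    and Y :: "nat \<Rightarrow> nat \<Rightarrow> 'a \<Rightarrow> real"
    and W :: "nat \<Rightarrow> 'a \<Rightarrow> 'w"
    and gZ :: "'w \<Rightarrow> 'z" and Zs :: "'z set"
    and gX :: "'w \<Rightarrow> real^'p"
    and I :: "nat \<Rightarrow> nat \<Rightarrow> 'a \<Rightarrow> nat"
  assumes P: "prob_space M"
    and pi_range: "\<forall>l<k. 0 < \<pi> l \<and> \<pi> l < 1"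
    and pi_sum: "(\<Sum>l<k. \<pi> l) = 1"
    and meas_Y: "\<forall>i l. l < k \<longrightarrow> Y i l \<in> borel_measurable M"
    and meas_W: "\<forall>i. W i \<in> measurable M Wsp"
    and meas_gZ: "gZ \<in> measurable Wsp (count_space UNIV)"
    and meas_gX: "gX \<in> borel_measurable Wsp"
    and meas_I: "\<forall>n i. I n i \<in> measurable M (count_space UNIV)"
    and I_range: "\<forall>n i. \<forall>\<omega>\<in>space M. i < n \<longrightarrow> I n i \<omega> < k"
    and C1_indep: "prob_space.indep_vars M (\<lambda>_. pspace k Wsp) (pvec k Y W) UNIV"
    and C1_ident: "\<forall>i. distr M (pspace k Wsp) (pvec k Y W i) = distr M (pspace k Wsp) (pvec k Y W 0)"
    and C1_mom: "\<forall>l<k. integrable M (\<lambda>\<omega>. (Y 0 l \<omega>)\<^sup>2)"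
    and C2: "\<forall>n (a :: nat \<Rightarrow> nat) (zs :: nat \<Rightarrow> 'z) B.
       B \<in> sets (\<Pi>\<^sub>M i\<in>{..<n}. pspace k Wsp) \<longrightarrow>
       (let EI = {\<omega> \<in> space M. \<forall>i<n. I n i \<omega> = a i};
            ED = {\<omega> \<in> space M. (\<lambda>i\<in>{..<n}. pvec k Y W i \<omega>) \<in> B};
            EZ = {\<omega> \<in> space M. \<forall>i<n. gZ (W i \<omega>) = zs i}
        in measure M (EI \<inter> ED \<inter> EZ) * measure M EZ = measure M (EI \<inter> EZ) * measure M (ED \<inter> EZ))"
    and C3_fin: "finite Zs"
    and C3_vals: "gZ ` space Wsp \<subseteq> Zs"
    and C3_pos: "\<forall>z\<in>Zs. measure M {\<omega> \<in> space M. gZ (W 0 \<omega>) = z} > 0"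
    and C3_bal: "\<forall>z\<in>Zs. \<forall>l<k. conv_in_prob M
       (\<lambda>n \<omega>. (real (card (cell n (\<lambda>i. I n i \<omega>) (\<lambda>i. gZ (W i \<omega>)) l z))
                 - \<pi> l * real (card (stratum n (\<lambda>i. gZ (W i \<omega>)) z)))
                / real (card (stratum n (\<lambda>i. gZ (W i \<omega>)) z))) 0"
    and mom_X: "integrable M (\<lambda>\<omega>. (norm (gX (W 0 \<omega>)))\<^sup>2)"
begin

abbreviation "PS \<equiv> pspace k Wsp"
abbreviation "D \<equiv> pvec k Y W"
abbreviation "Zf i \<omega> \<equiv> gZ (W i \<omega>)"

sublocale prob_space M by (rule P)

lemma fm: "finite_measure M" by unfold_locales

lemma meas_I'[measurable]: "I n i \<in> measurable M (count_space UNIV)"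
  using meas_I by auto
lemma meas_W'[measurable]: "W i \<in> measurable M Wsp"
  using meas_W by auto
lemma meas_gZ'[measurable]: "gZ \<in> measurable Wsp (count_space UNIV)"
  using meas_gZ by auto
lemma meas_gX'[measurable]: "gX \<in> borel_measurable Wsp"
  using meas_gX by auto

lemma meas_D[measurable]: "D i \<in> measurable M PS"
  unfolding pvec_def pspace_def
  using meas_Y by (intro measurable_Pair measurable_restrict) auto

lemma meas_zz[measurable]: "(\<lambda>d. gZ (snd d)) \<in> measurable PS (count_space UNIV)"
  unfolding pspace_def by measurable

lemma meas_xx[measurable]: "(\<lambda>d. gX (snd d)) \<in> borel_measurable PS"
  unfolding pspace_def by measurable

lemma meas_yy[measurable]: "l < k \<Longrightarrow> (\<lambda>d. fst d l) \<in> borel_measurable PS"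
  unfolding pspace_def by measurable

lemma D_Z: "gZ (snd (D i \<omega>)) = Zf i \<omega>"
  by (simp add: pvec_def)
lemma D_X: "gX (snd (D i \<omega>)) = gX (W i \<omega>)"
  by (simp add: pvec_def)
lemma D_Y: "l < k \<Longrightarrow> fst (D i \<omega>) l = Y i l \<omega>"
  by (simp add: pvec_def)

lemma meas_Zf[measurable]: "Zf i \<in> measurable M (count_space UNIV)"
  by measurable

lemma Zf_in: "\<omega> \<in> space M \<Longrightarrow> Zf i \<omega> \<in> Zs"
  using C3_vals measurable_space[OF meas_W'] by blast

lemma ident_integral:
  fixes g :: "(nat \<Rightarrow> real) \<times> 'w \<Rightarrow> real"
  assumes [measurable]: "g \<in> borel_measurable PS"
  shows "(\<integral>\<omega>. g (D i \<omega>) \<partial>M) = (\<integral>\<omega>. g (D 0 \<omega>) \<partial>M)"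
proof -
  have "(\<integral>\<omega>. g (D i \<omega>) \<partial>M) = (\<integral>x. g x \<partial>distr M PS (D i))"
    by (subst integral_distr) auto
  also have "\<dots> = (\<integral>x. g x \<partial>distr M PS (D 0))"
    using C1_ident by metis
  also have "\<dots> = (\<integral>\<omega>. g (D 0 \<omega>) \<partial>M)"
    by (subst integral_distr) auto
  finally show ?thesis .
qed

lemma ident_integrable:
  fixes g :: "(nat \<Rightarrow> real) \<times> 'w \<Rightarrow> real"
  assumes [measurable]: "g \<in> borel_measurable PS"
  shows "integrable M (\<lambda>\<omega>. g (D i \<omega>)) \<longleftrightarrow> integrable M (\<lambda>\<omega>. g (D 0 \<omega>))"
proof -
  have "integrable M (\<lambda>\<omega>. g (D i \<omega>)) \<longleftrightarrow> integrable (distr M PS (D i)) g"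
    by (subst integrable_distr_eq) auto
  also have "\<dots> \<longleftrightarrow> integrable (distr M PS (D 0)) g"
    using C1_ident by metis
  also have "\<dots> \<longleftrightarrow> integrable M (\<lambda>\<omega>. g (D 0 \<omega>))"
    by (subst integrable_distr_eq) auto
  finally show ?thesis .
qed

lemma indep_block_integral:
  fixes F1 :: "(nat \<Rightarrow> real) \<times> 'w \<Rightarrow> real" and F2 :: "(nat \<Rightarrow> (nat \<Rightarrow> real) \<times> 'w) \<Rightarrow> real"
  assumes "i \<notin> B"
    and [measurable]: "F1 \<in> borel_measurable PS" "F2 \<in> borel_measurable (PiM B (\<lambda>_. PS))"
    and b1: "\<And>d. \<bar>F1 d\<bar> \<le> c1" and b2: "\<And>v. \<bar>F2 v\<bar> \<le> c2"
  shows "(\<integral>\<omega>. F1 (D i \<omega>) * F2 (restrict (\<lambda>m. D m \<omega>) B) \<partial>M)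
       = (\<integral>\<omega>. F1 (D i \<omega>) \<partial>M) * (\<integral>\<omega>. F2 (restrict (\<lambda>m. D m \<omega>) B) \<partial>M)"
proof -
  have "indep_var (PiM {i} (\<lambda>_. PS)) (\<lambda>\<omega>. restrict (\<lambda>m. D m \<omega>) {i})
         (PiM B (\<lambda>_. PS)) (\<lambda>\<omega>. restrict (\<lambda>m. D m \<omega>) B)"
    using assms by (intro indep_var_restrict[OF C1_indep]) auto
  then have "indep_var borel ((\<lambda>v. F1 (v i)) \<circ> (\<lambda>\<omega>. restrict (\<lambda>m. D m \<omega>) {i}))
         borel (F2 \<circ> (\<lambda>\<omega>. restrict (\<lambda>m. D m \<omega>) B))"
    by (rule indep_var_compose) auto
  then have "indep_var borel (F1 \<circ> D i) borel (F2 \<circ> (\<lambda>\<omega>. restrict (\<lambda>m. D m \<omega>) B))"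
    by (simp add: o_def)
  moreover have "integrable M (F1 \<circ> D i)"
    using b1 by (intro integrable_const_bound[where B=c1]) auto
  moreover have "integrable M (F2 \<circ> (\<lambda>\<omega>. restrict (\<lambda>m. D m \<omega>) B))"
    using b2 by (intro integrable_const_bound[where B=c2]) auto
  ultimately show ?thesis
    by (subst (asm) (1 2) o_def, simp add: o_def indep_var_lebesgue_integral)
qed


definition "Dv n \<omega> = (\<lambda>i\<in>{..<n}. D i \<omega>)"
definition "EZ n zs = {\<omega> \<in> space M. \<forall>i<n. Zf i \<omega> = zs i}"
definition "EI n a = {\<omega> \<in> space M. \<forall>i<n. I n i \<omega> = a i}"

lemma meas_Dv[measurable]: "Dv n \<in> measurable M (PiM {..<n} (\<lambda>_. PS))"
  unfolding Dv_def by (intro measurable_restrict) auto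

lemma EZ_sets[measurable]: "EZ n zs \<in> sets M"
proof -
  have "EZ n zs = {\<omega>\<in>space M. \<forall>i\<in>{..<n}. Zf i \<omega> = zs i}"
    unfolding EZ_def by auto
  also have "\<dots> \<in> sets M" by measurable
  finally show ?thesis .
qed

lemma EI_sets[measurable]: "EI n a \<in> sets M"
proof -
  have "EI n a = {\<omega>\<in>space M. \<forall>i\<in>{..<n}. I n i \<omega> = a i}"
    unfolding EI_def by auto
  also have "\<dots> \<in> sets M" by measurable
  finally show ?thesis .
qed

lemma C2_basic:
  assumes "B \<in> sets (PiM {..<n} (\<lambda>_. PS))"
  shows "measure M (EI n a \<inter> (Dv n -` B \<inter> space M) \<inter> EZ n zs) * measure M (EZ n zs)
       = measure M (EI n a \<inter> EZ n zs) * measure M ((Dv n -` B \<inter> space M) \<inter> EZ n zs)"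
proof -
  have "(Dv n -` B \<inter> space M) = {\<omega> \<in> space M. (\<lambda>i\<in>{..<n}. pvec k Y W i \<omega>) \<in> B}"
    unfolding Dv_def by auto
  then show ?thesis
    using C2[rule_format, OF assms, of a zs] unfolding EI_def EZ_def Let_def by simp
qed

lemma C2_fun:
  fixes \<psi> :: "(nat \<Rightarrow> (nat \<Rightarrow> real) \<times> 'w) \<Rightarrow> real"
  assumes A: "finite A" "A \<subseteq> extensional {..<n}"
    and [measurable]: "\<psi> \<in> borel_measurable (PiM {..<n} (\<lambda>_. PS))"
  shows "measure M (EZ n zs) * (\<integral>\<omega>. indicator ((\<Union>a\<in>A. EI n a) \<inter> EZ n zs) \<omega> * \<psi> (Dv n \<omega>) \<partial>M)
       = measure M ((\<Union>a\<in>A. EI n a) \<inter> EZ n zs) * (\<integral>\<omega>. indicator (EZ n zs) \<omega> * \<psi> (Dv n \<omega>) \<partial>M)"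
proof (rule cond_fun_eq[OF fm meas_Dv])
  have disj: "disjoint_family_on (\<lambda>a. EI n a \<inter> X) A" for X
    unfolding disjoint_family_on_def
  proof (intro ballI impI)
    fix a b assume ab: "a \<in> A" "b \<in> A" "a \<noteq> b"
    then obtain i where "i < n" "a i \<noteq> b i"
      using A(2) by (metis PiE_restrict extensional_restrict lessThan_iff restrict_ext subsetD)
    then show "(EI n a \<inter> X) \<inter> (EI n b \<inter> X) = {}" unfolding EI_def by fastforce
  qed
  have U: "measure M ((\<Union>a\<in>A. EI n a) \<inter> X) = (\<Sum>a\<in>A. measure M (EI n a \<inter> X))" if "X \<in> sets M" for X
  proof -
    have eq: "(\<Union>a\<in>A. EI n a) \<inter> X = (\<Union>a\<in>A. EI n a \<inter> X)" by auto
    have "measure M (\<Union>a\<in>A. EI n a \<inter> X) = (\<Sum>a\<in>A. measure M (EI n a \<inter> X))"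
      by (rule finite_measure_finite_Union) (use that A(1) disj in auto)
    then show ?thesis by (simp only: eq)
  qed
  fix B assume B: "B \<in> sets (PiM {..<n} (\<lambda>_. PS))"
  have Bs: "Dv n -` B \<inter> space M \<in> sets M" using B by measurable
  have "measure M (EZ n zs) * measure M ((\<Union>a\<in>A. EI n a) \<inter> EZ n zs \<inter> (Dv n -` B \<inter> space M))
      = measure M (EZ n zs) * (\<Sum>a\<in>A. measure M (EI n a \<inter> (Dv n -` B \<inter> space M) \<inter> EZ n zs))"
  proof -
    have "(\<Union>a\<in>A. EI n a) \<inter> EZ n zs \<inter> (Dv n -` B \<inter> space M) = (\<Union>a\<in>A. EI n a) \<inter> ((Dv n -` B \<inter> space M) \<inter> EZ n zs)"
      by auto
    moreover have "EI n a \<inter> (Dv n -` B \<inter> space M) \<inter> EZ n zs = EI n a \<inter> ((Dv n -` B \<inter> space M) \<inter> EZ n zs)" for a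
      by auto
    ultimately show ?thesis using U[of "(Dv n -` B \<inter> space M) \<inter> EZ n zs"] Bs by simp
  qed
  also have "\<dots> = (\<Sum>a\<in>A. measure M (EI n a \<inter> EZ n zs)) * measure M ((Dv n -` B \<inter> space M) \<inter> EZ n zs)"
    using C2_basic[OF B] by (simp add: sum_distrib_left sum_distrib_right mult.commute)
  also have "\<dots> = measure M ((\<Union>a\<in>A. EI n a) \<inter> EZ n zs) * measure M (EZ n zs \<inter> (Dv n -` B \<inter> space M))"
    by (subst U) (auto simp: Int_ac)
  finally show "measure M (EZ n zs) * measure M ((\<Union>a\<in>A. EI n a) \<inter> EZ n zs \<inter> (Dv n -` B \<inter> space M)) =
         measure M ((\<Union>a\<in>A. EI n a) \<inter> EZ n zs) * measure M (EZ n zs \<inter> (Dv n -` B \<inter> space M))" .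
qed (use A in \<open>auto intro!: sets.Int sets.finite_UN\<close>)

end


context trial
begin

definition "pz z = prob {\<omega>\<in>space M. Zf 0 \<omega> = z}"
definition "hh g z = (\<integral>\<omega>. indicator {\<omega>\<in>space M. Zf 0 \<omega> = z} \<omega> * g (D 0 \<omega>) \<partial>M) / pz z"
definition "ee g d = g d - hh g (gZ (snd d))"

lemma Zf_sets[measurable]: "{\<omega>\<in>space M. Zf i \<omega> = z} \<in> sets M"
  by measurable

lemma int_ind_bound:
  fixes f :: "'a \<Rightarrow> real"
  assumes [measurable]: "S \<in> sets M" "f \<in> borel_measurable M" and b: "\<And>\<omega>. \<bar>f \<omega>\<bar> \<le> c"
  shows "\<bar>\<integral>\<omega>. indicator S \<omega> * f \<omega> \<partial>M\<bar> \<le> c * prob S"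
proof -
  have c: "c \<ge> 0" using b[of undefined] by simp
  have "\<bar>\<integral>\<omega>. indicator S \<omega> * f \<omega> \<partial>M\<bar> \<le> (\<integral>\<omega>. \<bar>indicator S \<omega> * f \<omega>\<bar> \<partial>M)"
    by (rule integral_abs_bound)
  also have "\<dots> \<le> (\<integral>\<omega>. c * indicator S \<omega> \<partial>M)"
    using b c by (intro integral_mono integrable_const_bound[where B=c])
                 (auto simp: indicator_def abs_mult)
  also have "\<dots> = c * prob S" by simp
  finally show ?thesis .
qed

lemma int_null:
  fixes f :: "'a \<Rightarrow> real"
  assumes [measurable]: "S \<in> sets M" and "prob S = 0"
  shows "(\<integral>\<omega>. indicator S \<omega> * f \<omega> \<partial>M) = 0"
proof -
  have "S \<in> null_sets M" using assms by (simp add: emeasure_eq_measure null_sets_def)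
  then have "AE \<omega> in M. \<omega> \<notin> S" by (rule AE_not_in)
  then have "AE \<omega> in M. indicator S \<omega> * f \<omega> = 0" by eventually_elim simp
  then show ?thesis by (rule integral_eq_zero_AE)
qed

context
  fixes g :: "(nat \<Rightarrow> real) \<times> 'w \<Rightarrow> real" and c :: real
  assumes g_meas[measurable]: "g \<in> borel_measurable PS" and g_bd: "\<And>d. \<bar>g d\<bar> \<le> c"
begin

lemma c_nonneg: "c \<ge> 0" using g_bd[of undefined] by simp

lemma hh_bd: "\<bar>hh g z\<bar> \<le> c"
proof (cases "pz z = 0")
  case True then show ?thesis by (simp add: hh_def c_nonneg)
next
  case False
  then have pos: "pz z > 0" unfolding pz_def using measure_nonneg[of M] by (metis less_eq_real_def)
  have "\<bar>\<integral>\<omega>. indicator {\<omega>\<in>space M. Zf 0 \<omega> = z} \<omega> * g (D 0 \<omega>) \<partial>M\<bar> \<le> c * pz z"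
    unfolding pz_def by (rule int_ind_bound) (auto intro: g_bd)
  moreover have "\<bar>hh g z\<bar> = \<bar>\<integral>\<omega>. indicator {\<omega>\<in>space M. Zf 0 \<omega> = z} \<omega> * g (D 0 \<omega>) \<partial>M\<bar> / pz z"
    using pos unfolding hh_def by (simp add: abs_divide)
  ultimately show ?thesis using pos by (simp add: pos_divide_le_eq)
qed

lemma ee_bd: "\<bar>ee g d\<bar> \<le> 2 * c"
  using g_bd[of d] hh_bd[of "gZ (snd d)"] unfolding ee_def by linarith

lemma ee_meas[measurable]: "ee g \<in> borel_measurable PS"
proof -
  have "(\<lambda>d. hh g (gZ (snd d))) \<in> borel_measurable PS"
    by (rule measurable_compose[OF meas_zz]) simp
  then show ?thesis unfolding ee_def by measurable
qed

lemma ee_centered: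
  "(\<integral>\<omega>. (if Zf i \<omega> = z then 1 else 0) * ee g (D i \<omega>) \<partial>M) = 0"
proof -
  let ?F = "\<lambda>d. (if gZ (snd d) = z then 1 else 0) * ee g d"
  have [measurable]: "?F \<in> borel_measurable PS" by measurable
  have "(\<integral>\<omega>. (if Zf i \<omega> = z then 1 else 0) * ee g (D i \<omega>) \<partial>M) = (\<integral>\<omega>. ?F (D i \<omega>) \<partial>M)"
    by (simp add: D_Z)
  also have "\<dots> = (\<integral>\<omega>. ?F (D 0 \<omega>) \<partial>M)" by (rule ident_integral) simp
  also have "\<dots> = (\<integral>\<omega>. indicator {\<omega>\<in>space M. Zf 0 \<omega> = z} \<omega> * g (D 0 \<omega>) - hh g z * indicator {\<omega>\<in>space M. Zf 0 \<omega> = z} \<omega> \<partial>M)"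
    by (rule Bochner_Integration.integral_cong[OF refl]) (auto simp: ee_def D_Z indicator_def)
  also have "\<dots> = (\<integral>\<omega>. indicator {\<omega>\<in>space M. Zf 0 \<omega> = z} \<omega> * g (D 0 \<omega>) \<partial>M) - hh g z * pz z"
  proof -
    have i1: "integrable M (\<lambda>\<omega>. indicator {\<omega>\<in>space M. Zf 0 \<omega> = z} \<omega> * g (D 0 \<omega>))"
      by (rule integrable_const_bound[where B=c]) (auto simp: indicator_def g_bd c_nonneg)
    have i2: "integrable M (\<lambda>\<omega>. hh g z * indicator {\<omega>\<in>space M. Zf 0 \<omega> = z} \<omega>)"
      by (intro integrable_mult_right integrable_real_indicator) (auto simp: emeasure_eq_measure)
    show ?thesis unfolding pz_def
      by (subst Bochner_Integration.integral_diff[OF i1 i2]) simp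
  qed
  also have "\<dots> = 0"
  proof (cases "pz z = 0")
    case True
    then show ?thesis unfolding pz_def by (simp add: int_null)
  next
    case False
    then show ?thesis unfolding hh_def by simp
  qed
  finally show ?thesis .
qed


lemma prod_if01: "finite S \<Longrightarrow> (\<Prod>m\<in>S. if P m then 1 else (0::real)) = (if \<forall>m\<in>S. P m then 1 else 0)"
  by (induction S rule: finite_induct) auto

lemma prod01_bd: "\<bar>\<Prod>m\<in>B. (if P m then 1 else 0 :: real)\<bar> \<le> 1"
  by (induction B rule: infinite_finite_induct) (auto simp: abs_mult)

lemma core:
  assumes ij: "i \<noteq> j" "i < n" "j < n"
  shows "(\<integral>\<omega>. indicator (EZ n zs) \<omega> * (ee g (D i \<omega>) * ee g (D j \<omega>)) \<partial>M) = 0"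
proof -
  define B where "B = {..<n} - {i}"
  have iB: "i \<notin> B" "j \<in> B" "finite B" using ij unfolding B_def by auto
  define F1 where "F1 d = (if gZ (snd d) = zs i then 1 else 0) * ee g d" for d
  define F2 where "F2 v = (\<Prod>m\<in>B. if gZ (snd (v m)) = zs m then 1 else 0) * ee g (v j)" for v :: "nat \<Rightarrow> (nat \<Rightarrow> real) \<times> 'w"
  have mF1[measurable]: "F1 \<in> borel_measurable PS" unfolding F1_def by measurable
  have mF2[measurable]: "F2 \<in> borel_measurable (PiM B (\<lambda>_. PS))"
  proof -
    have "(\<lambda>v. \<Prod>m\<in>B. if gZ (snd (v m)) = zs m then 1 else (0::real)) \<in> borel_measurable (PiM B (\<lambda>_. PS))"
    proof (rule borel_measurable_prod)
      fix m assume "m \<in> B"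
      then have [measurable]: "(\<lambda>v. v m) \<in> measurable (PiM B (\<lambda>_. PS)) PS" by simp
      show "(\<lambda>v. if gZ (snd (v m)) = zs m then 1 else (0::real)) \<in> borel_measurable (PiM B (\<lambda>_. PS))"
        by measurable
    qed
    moreover have "(\<lambda>v. v j) \<in> measurable (PiM B (\<lambda>_. PS)) PS" using iB by simp
    ultimately show ?thesis unfolding F2_def by measurable
  qed
  have bF1: "\<bar>F1 d\<bar> \<le> 2 * c" for d using ee_bd[of d] c_nonneg unfolding F1_def by auto
  have bF2: "\<bar>F2 v\<bar> \<le> 2 * c" for v
  proof -
    have "\<bar>F2 v\<bar> = \<bar>\<Prod>m\<in>B. if gZ (snd (v m)) = zs m then 1 else (0::real)\<bar> * \<bar>ee g (v j)\<bar>"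
      unfolding F2_def by (simp add: abs_mult)
    also have "\<dots> \<le> 1 * (2 * c)"
      by (intro mult_mono prod01_bd ee_bd) auto
    finally show ?thesis by simp
  qed
  have eq: "indicator (EZ n zs) \<omega> * (ee g (D i \<omega>) * ee g (D j \<omega>)) = F1 (D i \<omega>) * F2 (restrict (\<lambda>m. D m \<omega>) B)"
    if w: "\<omega> \<in> space M" for \<omega>
  proof -
    have "indicator (EZ n zs) \<omega> = (\<Prod>m\<in>{..<n}. if Zf m \<omega> = zs m then 1 else (0::real))"
      using w unfolding EZ_def by (subst prod_if01) (auto simp: indicator_def)
    also have "\<dots> = (if Zf i \<omega> = zs i then 1 else 0) * (\<Prod>m\<in>B. if Zf m \<omega> = zs m then 1 else (0::real))"
      unfolding B_def using ij by (subst prod.remove[of _ i]) auto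
    finally show ?thesis
      unfolding F1_def F2_def using iB by (simp add: D_Z)
  qed
  have "(\<integral>\<omega>. indicator (EZ n zs) \<omega> * (ee g (D i \<omega>) * ee g (D j \<omega>)) \<partial>M)
      = (\<integral>\<omega>. F1 (D i \<omega>) * F2 (restrict (\<lambda>m. D m \<omega>) B) \<partial>M)"
    by (rule Bochner_Integration.integral_cong[OF refl]) (rule eq)
  also have "\<dots> = (\<integral>\<omega>. F1 (D i \<omega>) \<partial>M) * (\<integral>\<omega>. F2 (restrict (\<lambda>m. D m \<omega>) B) \<partial>M)"
    by (rule indep_block_integral[OF iB(1) mF1 mF2 bF1 bF2])
  also have "(\<integral>\<omega>. F1 (D i \<omega>) \<partial>M) = 0"
    using ee_centered[of i "zs i"] unfolding F1_def by (simp add: D_Z)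
  finally show ?thesis by simp
qed


lemma cross:
  assumes ij: "i \<noteq> j" "i < n" "j < n"
  shows "(\<integral>\<omega>. (if I n i \<omega> = l then 1 else 0) * (if I n j \<omega> = l' then 1 else 0) * (ee g (D i \<omega>) * ee g (D j \<omega>)) \<partial>M) = 0"
proof -
  define A where "A = {a \<in> PiE {..<n} (\<lambda>_. {..<k}). a i = l \<and> a j = l'}"
  have A: "finite A" "A \<subseteq> extensional {..<n}"
    unfolding A_def by (rule finite_subset[OF _ finite_PiE[of "{..<n}" "\<lambda>_. {..<k}"]]; auto) (auto simp: PiE_iff)
  define SA where "SA = (\<Union>a\<in>A. EI n a)"
  have SA_sets[measurable]: "SA \<in> sets M" unfolding SA_def using A by (intro sets.finite_UN) auto
  have SA_iff: "\<omega> \<in> SA \<longleftrightarrow> I n i \<omega> = l \<and> I n j \<omega> = l'" if w: "\<omega> \<in> space M" for \<omega>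
  proof
    assume "\<omega> \<in> SA"
    then obtain a where "a \<in> A" "\<omega> \<in> EI n a" unfolding SA_def by auto
    then show "I n i \<omega> = l \<and> I n j \<omega> = l'" using ij unfolding A_def EI_def by auto
  next
    assume h: "I n i \<omega> = l \<and> I n j \<omega> = l'"
    have "restrict (\<lambda>m. I n m \<omega>) {..<n} \<in> A"
      unfolding A_def using h ij I_range w by (auto simp: PiE_iff)
    moreover have "\<omega> \<in> EI n (restrict (\<lambda>m. I n m \<omega>) {..<n})"
      unfolding EI_def using w by auto
    ultimately show "\<omega> \<in> SA" unfolding SA_def by auto
  qed
  define ZS where "ZS = PiE {..<n} (\<lambda>_. Zs)"
  have ZS: "finite ZS" unfolding ZS_def using C3_fin by (auto simp: finite_PiE)
  have sum1: "(\<Sum>zs\<in>ZS. indicator (EZ n zs) \<omega>) = (1::real)" if w: "\<omega> \<in> space M" for \<omega>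
  proof -
    define z0 where "z0 = restrict (\<lambda>m. Zf m \<omega>) {..<n}"
    have z0: "z0 \<in> ZS" unfolding z0_def ZS_def using Zf_in[OF w] by auto
    have "indicator (EZ n zs) \<omega> = (if zs = z0 then 1 else (0::real))" if "zs \<in> ZS" for zs
    proof -
      have "\<omega> \<in> EZ n zs \<longleftrightarrow> zs = z0"
        using that w unfolding EZ_def z0_def ZS_def by (auto simp: PiE_iff extensional_def fun_eq_iff)
      then show ?thesis by (simp add: indicator_def)
    qed
    then have "(\<Sum>zs\<in>ZS. indicator (EZ n zs) \<omega>) = (\<Sum>zs\<in>ZS. if zs = z0 then 1 else (0::real))"
      by (intro sum.cong) auto
    also have "\<dots> = 1" using ZS z0 by simp
    finally show ?thesis .
  qed
  define \<psi> where "\<psi> v = ee g (v i) * ee g (v j)" for v :: "nat \<Rightarrow> (nat \<Rightarrow> real) \<times> 'w"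
  have m\<psi>[measurable]: "\<psi> \<in> borel_measurable (PiM {..<n} (\<lambda>_. PS))"
  proof -
    have [measurable]: "(\<lambda>v. v i) \<in> measurable (PiM {..<n} (\<lambda>_. PS)) PS" "(\<lambda>v. v j) \<in> measurable (PiM {..<n} (\<lambda>_. PS)) PS"
      using ij by auto
    show ?thesis unfolding \<psi>_def by measurable
  qed
  have \<psi>D: "\<psi> (Dv n \<omega>) = ee g (D i \<omega>) * ee g (D j \<omega>)" for \<omega>
    unfolding \<psi>_def Dv_def using ij by simp
  have b\<psi>: "\<bar>\<psi> v\<bar> \<le> 2 * c * (2 * c)" for v
    unfolding \<psi>_def abs_mult by (intro mult_mono ee_bd) (auto simp: c_nonneg)
  have int: "integrable M (\<lambda>\<omega>. indicator S \<omega> * \<psi> (Dv n \<omega>))" if [measurable]: "S \<in> sets M" for S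
    by (rule integrable_const_bound[where B="2 * c * (2 * c)"])
       (use b\<psi> in \<open>auto simp: indicator_def abs_mult\<close>)
  have "(\<integral>\<omega>. (if I n i \<omega> = l then 1 else 0) * (if I n j \<omega> = l' then 1 else 0) * (ee g (D i \<omega>) * ee g (D j \<omega>)) \<partial>M)
      = (\<integral>\<omega>. (\<Sum>zs\<in>ZS. indicator (SA \<inter> EZ n zs) \<omega> * \<psi> (Dv n \<omega>)) \<partial>M)"
  proof (rule Bochner_Integration.integral_cong[OF refl])
    fix \<omega> assume w: "\<omega> \<in> space M"
    have "(\<Sum>zs\<in>ZS. indicator (SA \<inter> EZ n zs) \<omega> * \<psi> (Dv n \<omega>))
        = indicator SA \<omega> * (\<Sum>zs\<in>ZS. indicator (EZ n zs) \<omega>) * \<psi> (Dv n \<omega>)"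
      by (simp add: sum_distrib_left sum_distrib_right indicator_inter_arith mult.assoc)
    also have "\<dots> = indicator SA \<omega> * \<psi> (Dv n \<omega>)" using sum1[OF w] by simp
    finally show "(if I n i \<omega> = l then 1 else 0) * (if I n j \<omega> = l' then 1 else 0) * (ee g (D i \<omega>) * ee g (D j \<omega>))
        = (\<Sum>zs\<in>ZS. indicator (SA \<inter> EZ n zs) \<omega> * \<psi> (Dv n \<omega>))"
      using SA_iff[OF w] by (simp add: \<psi>D indicator_def)
  qed
  also have "\<dots> = (\<Sum>zs\<in>ZS. (\<integral>\<omega>. indicator (SA \<inter> EZ n zs) \<omega> * \<psi> (Dv n \<omega>) \<partial>M))"
    by (rule Bochner_Integration.integral_sum) (auto intro: int)
  also have "\<dots> = 0"
  proof (intro sum.neutral ballI)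
    fix zs assume "zs \<in> ZS"
    show "(\<integral>\<omega>. indicator (SA \<inter> EZ n zs) \<omega> * \<psi> (Dv n \<omega>) \<partial>M) = 0"
    proof (cases "prob (EZ n zs) = 0")
      case True
      then have "prob (SA \<inter> EZ n zs) = 0"
        using finite_measure_mono[of "SA \<inter> EZ n zs" "EZ n zs"] measure_nonneg[of M "SA \<inter> EZ n zs"] by auto
      then show ?thesis by (intro int_null) auto
    next
      case False
      have c0: "(\<integral>\<omega>. indicator (EZ n zs) \<omega> * \<psi> (Dv n \<omega>) \<partial>M) = 0"
        using core[OF ij, of zs] by (simp add: \<psi>D)
      have "prob (EZ n zs) * (\<integral>\<omega>. indicator (SA \<inter> EZ n zs) \<omega> * \<psi> (Dv n \<omega>) \<partial>M)
          = prob (SA \<inter> EZ n zs) * (\<integral>\<omega>. indicator (EZ n zs) \<omega> * \<psi> (Dv n \<omega>) \<partial>M)"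
        unfolding SA_def by (rule C2_fun[OF A m\<psi>])
      then show ?thesis using False c0 by simp
    qed
  qed
  finally show ?thesis .
qed

end

end


lemma cipo_cong_ev:
  assumes "cipo M X a" "\<And>n \<omega>. n \<ge> N \<Longrightarrow> \<omega> \<in> space M \<Longrightarrow> X' n \<omega> = X n \<omega>"
  shows "cipo M X' a"
proof (rule cipoI)
  fix e :: real assume e: "e > 0"
  show "small M (\<lambda>n. {\<omega> \<in> space M. e < dist (X' n \<omega>) a})"
    unfolding small_def
  proof (intro allI impI)
    fix d :: real assume d: "d > 0"
    have "eventually (\<lambda>n. \<exists>A\<in>sets M. {\<omega> \<in> space M. e < dist (X n \<omega>) a} \<subseteq> A \<and> measure M A < d) sequentially"
      using cipoD[OF assms(1) e] d unfolding small_def by auto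
    moreover have "eventually (\<lambda>n. n \<ge> N) sequentially" by (rule eventually_ge_at_top)
    ultimately show "eventually (\<lambda>n. \<exists>A\<in>sets M. {\<omega> \<in> space M. e < dist (X' n \<omega>) a} \<subseteq> A \<and> measure M A < d) sequentially"
    proof eventually_elim
      case (elim n)
      then have "{\<omega> \<in> space M. e < dist (X' n \<omega>) a} = {\<omega> \<in> space M. e < dist (X n \<omega>) a}"
        using assms(2) by auto
      then show ?case using elim by simp
    qed
  qed
qed

lemma conv_to_cipo:
  fixes X :: "nat \<Rightarrow> 'a \<Rightarrow> real"
  assumes "conv_in_prob M X c" "\<And>n. X n \<in> borel_measurable M"
  shows "cipo M X c"
proof (rule cipoI)
  fix e :: real assume e: "e > 0"
  have lim: "(\<lambda>n. measure M {\<omega> \<in> space M. e < \<bar>X n \<omega> - c\<bar>}) \<longlonglongrightarrow> 0"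
    using assms(1) e unfolding conv_in_prob_def by auto
  show "small M (\<lambda>n. {\<omega> \<in> space M. e < dist (X n \<omega>) c})"
    unfolding small_def
  proof (intro allI impI)
    fix d :: real assume d: "d > 0"
    have "eventually (\<lambda>n. dist (measure M {\<omega> \<in> space M. e < \<bar>X n \<omega> - c\<bar>}) 0 < d) sequentially"
      using lim d by (rule tendstoD)
    then show "eventually (\<lambda>n. \<exists>A\<in>sets M. {\<omega> \<in> space M. e < dist (X n \<omega>) c} \<subseteq> A \<and> measure M A < d) sequentially"
    proof eventually_elim
      case (elim n)
      have [measurable]: "X n \<in> borel_measurable M" by (rule assms(2))
      have "{\<omega> \<in> space M. e < \<bar>X n \<omega> - c\<bar>} \<in> sets M" by measurable
      then show ?case using elim by (intro bexI[of _ "{\<omega> \<in> space M. e < \<bar>X n \<omega> - c\<bar>}"]) (auto simp: dist_real_def)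
    qed
  qed
qed

lemma cipo_orth:
  fixes \<phi> :: "nat \<Rightarrow> nat \<Rightarrow> 'a \<Rightarrow> real"
  assumes P: "prob_space M"
    and meas[measurable]: "\<And>n i. \<phi> n i \<in> borel_measurable M"
    and bd: "\<And>n i \<omega>. \<bar>\<phi> n i \<omega>\<bar> \<le> c"
    and orth: "\<And>n i j. i < n \<Longrightarrow> j < n \<Longrightarrow> i \<noteq> j \<Longrightarrow> (\<integral>\<omega>. \<phi> n i \<omega> * \<phi> n j \<omega> \<partial>M) = 0"
  shows "cipo M (\<lambda>n \<omega>. (\<Sum>i<n. \<phi> n i \<omega>) / real n) 0"
proof (rule cipoI)
  interpret prob_space M by (rule P)
  have c: "c \<ge> 0" using bd[of 0 0 undefined] by simp
  fix e :: real assume e: "e > 0"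
  define S where "S n \<omega> = (\<Sum>i<n. \<phi> n i \<omega>)" for n \<omega>
  have [measurable]: "S n \<in> borel_measurable M" for n unfolding S_def by measurable
  have intpp: "integrable M (\<lambda>\<omega>. \<phi> n i \<omega> * \<phi> n j \<omega>)" for n i j
    by (rule integrable_const_bound[where B="c * c"]) (auto simp: abs_mult intro!: mult_mono bd c)
  have ES: "(\<integral>\<omega>. (S n \<omega>)\<^sup>2 \<partial>M) \<le> real n * c\<^sup>2" for n
  proof -
    have "(\<integral>\<omega>. (S n \<omega>)\<^sup>2 \<partial>M) = (\<integral>\<omega>. (\<Sum>i<n. \<Sum>j<n. \<phi> n i \<omega> * \<phi> n j \<omega>) \<partial>M)"
      unfolding S_def power2_eq_square by (simp add: sum_product)
    also have "\<dots> = (\<Sum>i<n. \<Sum>j<n. (\<integral>\<omega>. \<phi> n i \<omega> * \<phi> n j \<omega> \<partial>M))"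
      by (simp add: Bochner_Integration.integral_sum intpp integrable_sum)
    also have "\<dots> = (\<Sum>i<n. (\<integral>\<omega>. \<phi> n i \<omega> * \<phi> n i \<omega> \<partial>M))"
    proof (rule sum.cong[OF refl])
      fix i assume i: "i \<in> {..<n}"
      have "(\<Sum>j<n. (\<integral>\<omega>. \<phi> n i \<omega> * \<phi> n j \<omega> \<partial>M)) = (\<Sum>j<n. if j = i then (\<integral>\<omega>. \<phi> n i \<omega> * \<phi> n i \<omega> \<partial>M) else 0)"
        using i orth by (intro sum.cong) auto
      also have "\<dots> = (\<integral>\<omega>. \<phi> n i \<omega> * \<phi> n i \<omega> \<partial>M)" using i by simp
      finally show "(\<Sum>j<n. (\<integral>\<omega>. \<phi> n i \<omega> * \<phi> n j \<omega> \<partial>M)) = (\<integral>\<omega>. \<phi> n i \<omega> * \<phi> n i \<omega> \<partial>M)" .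
    qed
    also have "\<dots> \<le> (\<Sum>i<n. c\<^sup>2)"
    proof (rule sum_mono)
      fix i
      have pp: "\<phi> n i \<omega> * \<phi> n i \<omega> \<le> c\<^sup>2" for \<omega>
      proof -
        have "\<phi> n i \<omega> * \<phi> n i \<omega> = \<bar>\<phi> n i \<omega>\<bar> * \<bar>\<phi> n i \<omega>\<bar>" by (simp add: abs_mult_self_eq)
        also have "\<dots> \<le> c * c" by (intro mult_mono bd) (auto simp: c)
        finally show ?thesis by (simp add: power2_eq_square)
      qed
      have "(\<integral>\<omega>. \<phi> n i \<omega> * \<phi> n i \<omega> \<partial>M) \<le> (\<integral>\<omega>. c\<^sup>2 \<partial>M)"
        using intpp by (intro integral_mono pp) auto
      then show "(\<integral>\<omega>. \<phi> n i \<omega> * \<phi> n i \<omega> \<partial>M) \<le> c\<^sup>2" by (simp add: prob_space)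
    qed
    finally show ?thesis by simp
  qed
  show "small M (\<lambda>n. {\<omega> \<in> space M. e < dist ((\<Sum>i<n. \<phi> n i \<omega>) / real n) 0})"
    unfolding small_def
  proof (intro allI impI)
    fix d :: real assume d: "d > 0"
    obtain N :: nat where N: "N > c\<^sup>2 / (d * e\<^sup>2)" using reals_Archimedean2 by blast
    have "eventually (\<lambda>n. n \<ge> max N 1) sequentially" by (rule eventually_ge_at_top)
    then show "eventually (\<lambda>n. \<exists>A\<in>sets M. {\<omega> \<in> space M. e < dist ((\<Sum>i<n. \<phi> n i \<omega>) / real n) 0} \<subseteq> A \<and> measure M A < d) sequentially"
    proof eventually_elim
      case (elim n)
      then have n: "n \<ge> N" "n \<ge> 1" by auto
      define A where "A = {\<omega> \<in> space M. e\<^sup>2 \<le> (S n \<omega> / real n)\<^sup>2}"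
      have A[measurable]: "A \<in> sets M" unfolding A_def by measurable
      have sub: "{\<omega> \<in> space M. e < dist ((\<Sum>i<n. \<phi> n i \<omega>) / real n) 0} \<subseteq> A"
      proof
        fix \<omega> assume "\<omega> \<in> {\<omega> \<in> space M. e < dist ((\<Sum>i<n. \<phi> n i \<omega>) / real n) 0}"
        then have "\<omega> \<in> space M" "e < \<bar>S n \<omega> / real n\<bar>" unfolding S_def by (auto simp: dist_real_def)
        then have "\<omega> \<in> space M" "e\<^sup>2 \<le> \<bar>S n \<omega> / real n\<bar>\<^sup>2"
          using e by (auto intro!: power_mono less_imp_le)
        moreover have "\<bar>S n \<omega> / real n\<bar>\<^sup>2 = (S n \<omega> / real n)\<^sup>2" by (rule power2_abs)
        ultimately show "\<omega> \<in> A" unfolding A_def by simp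
      qed
      have intS: "integrable M (\<lambda>\<omega>. (S n \<omega> / real n)\<^sup>2)"
        unfolding S_def power2_eq_square
        by (simp add: sum_product sum_divide_distrib intpp integrable_sum)
      have "measure M A \<le> (\<integral>\<omega>. (S n \<omega> / real n)\<^sup>2 \<partial>M) / e\<^sup>2"
        unfolding A_def using e by (intro integral_Markov_inequality_measure[OF intS, of "space M"]) auto
      also have "(\<integral>\<omega>. (S n \<omega> / real n)\<^sup>2 \<partial>M) = (\<integral>\<omega>. (S n \<omega>)\<^sup>2 \<partial>M) / (real n)\<^sup>2"
        by (simp add: power_divide)
      also have "\<dots> \<le> real n * c\<^sup>2 / (real n)\<^sup>2"
        by (intro divide_right_mono ES) auto
      also have "\<dots> = c\<^sup>2 / real n" using n by (simp add: power2_eq_square)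
      finally have "measure M A \<le> c\<^sup>2 / real n / e\<^sup>2" using e by (simp add: divide_right_mono)
      also have "\<dots> < d"
      proof -
        have "c\<^sup>2 / (d * e\<^sup>2) < real n" using N n by linarith
        then have "c\<^sup>2 < real n * (d * e\<^sup>2)" using d e by (simp add: divide_less_eq)
        then show ?thesis using n e d by (simp add: divide_less_eq field_simps)
      qed
      finally show ?case using sub A by blast
    qed
  qed
qed


lemma card_filter_sum: fixes n :: nat shows "real (card {i. i < n \<and> P i}) = (\<Sum>i<n. if P i then 1 else 0)"
proof -
  have "{i. i < n \<and> P i} = {i\<in>{..<n}. P i}" by auto
  moreover have "real (card {i\<in>{..<n}. P i}) = (\<Sum>i\<in>{i\<in>{..<n}. P i}. 1)"
    by (rule real_of_card)
  moreover have "(\<Sum>i\<in>{i\<in>{..<n}. P i}. 1::real) = (\<Sum>i<n. if P i then 1 else 0)"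
    by (rule sum.inter_filter) (rule finite_lessThan)
  ultimately show ?thesis by simp
qed

lemma card_cell_sum: "real (card (cell n Iv Zo l z)) = (\<Sum>i<n. if Iv i = l \<and> Zo i = z then 1 else 0)"
  unfolding cell_def by (rule card_filter_sum)

lemma card_stratum_sum: "real (card (stratum n Zo z)) = (\<Sum>i<n. if Zo i = z then 1 else 0)"
  unfolding stratum_def by (rule card_filter_sum)

context trial
begin

lemma meas_card_cell[measurable]: "(\<lambda>\<omega>. real (card (cell n (\<lambda>i. I n i \<omega>) (\<lambda>i. Zf i \<omega>) l z))) \<in> borel_measurable M"
  unfolding card_cell_sum by measurable

lemma meas_card_stratum[measurable]: "(\<lambda>\<omega>. real (card (stratum n (\<lambda>i. Zf i \<omega>) z))) \<in> borel_measurable M"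
  unfolding card_stratum_sum by measurable

lemma pz_bounds: "0 \<le> pz z" "pz z \<le> 1"
  unfolding pz_def by auto

lemma wlln_stratum: "cipo M (\<lambda>n \<omega>. real (card (stratum n (\<lambda>i. Zf i \<omega>) z)) / real n) (pz z)"
proof -
  define F1 where "F1 d = (if gZ (snd d) = z then 1 else 0) - pz z" for d :: "(nat \<Rightarrow> real) \<times> 'w"
  have [measurable]: "F1 \<in> borel_measurable PS" unfolding F1_def by measurable
  have bF1: "\<bar>F1 d\<bar> \<le> 1" for d unfolding F1_def using pz_bounds[of z] by auto
  have EF1: "(\<integral>\<omega>. F1 (D i \<omega>) \<partial>M) = 0" for i
  proof -
    have "(\<integral>\<omega>. F1 (D i \<omega>) \<partial>M) = (\<integral>\<omega>. F1 (D 0 \<omega>) \<partial>M)" by (rule ident_integral) simp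
    also have "\<dots> = (\<integral>\<omega>. indicator {\<omega>\<in>space M. Zf 0 \<omega> = z} \<omega> - pz z \<partial>M)"
      by (rule Bochner_Integration.integral_cong[OF refl]) (auto simp: F1_def D_Z indicator_def)
    also have "\<dots> = 0"
      by (subst Bochner_Integration.integral_diff) (auto simp: pz_def emeasure_eq_measure prob_space intro!: integrable_real_indicator)
    finally show ?thesis .
  qed
  define \<phi> where "\<phi> n i \<omega> = F1 (D i \<omega>)" for n i :: nat and \<omega>
  have "cipo M (\<lambda>n \<omega>. (\<Sum>i<n. \<phi> n i \<omega>) / real n) 0"
  proof (rule cipo_orth[OF P])
    show "\<phi> n i \<in> borel_measurable M" for n i unfolding \<phi>_def by measurable
    show "\<bar>\<phi> n i \<omega>\<bar> \<le> 1" for n i \<omega> unfolding \<phi>_def by (rule bF1)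
    fix n i j :: nat assume ij: "i < n" "j < n" "i \<noteq> j"
    define F2 where "F2 v = F1 (v j)" for v :: "nat \<Rightarrow> (nat \<Rightarrow> real) \<times> 'w"
    have [measurable]: "F2 \<in> borel_measurable (PiM {j} (\<lambda>_. PS))"
    proof -
      have [measurable]: "(\<lambda>v. v j) \<in> measurable (PiM {j} (\<lambda>_. PS)) PS" by simp
      show ?thesis unfolding F2_def by measurable
    qed
    have "(\<integral>\<omega>. F1 (D i \<omega>) * F2 (restrict (\<lambda>m. D m \<omega>) {j}) \<partial>M)
        = (\<integral>\<omega>. F1 (D i \<omega>) \<partial>M) * (\<integral>\<omega>. F2 (restrict (\<lambda>m. D m \<omega>) {j}) \<partial>M)"
    proof (rule indep_block_integral)
      show "\<bar>F2 v\<bar> \<le> 1" for v unfolding F2_def by (rule bF1)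
    qed (use ij bF1 in auto)
    then show "(\<integral>\<omega>. \<phi> n i \<omega> * \<phi> n j \<omega> \<partial>M) = 0"
      unfolding \<phi>_def using EF1[of i] by (simp add: F2_def)
  qed
  then have "cipo M (\<lambda>n \<omega>. (\<Sum>i<n. \<phi> n i \<omega>) / real n + pz z) (0 + pz z)"
    by (intro cipo_add[OF fm] cipo_const)
  then have h: "cipo M (\<lambda>n \<omega>. (\<Sum>i<n. \<phi> n i \<omega>) / real n + pz z) (pz z)" by simp
  show ?thesis
  proof (rule cipo_cong_ev[where N=1, OF h])
    fix n :: nat and \<omega> assume n: "n \<ge> 1"
    have "(\<Sum>i<n. \<phi> n i \<omega>) = real (card (stratum n (\<lambda>i. Zf i \<omega>) z)) - real n * pz z"
      unfolding \<phi>_def F1_def card_stratum_sum by (simp add: sum_subtractf D_Z)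
    then show "real (card (stratum n (\<lambda>i. Zf i \<omega>) z)) / real n = (\<Sum>i<n. \<phi> n i \<omega>) / real n + pz z"
      using n by (simp add: field_simps)
  qed
qed

end


context trial
begin

lemma cell_sub_stratum: "cell n Iv Zo l z \<subseteq> stratum n Zo z"
  unfolding cell_def stratum_def by auto

lemma card_cell_le: "card (cell n Iv Zo l z) \<le> card (stratum n Zo z)"
  by (rule card_mono[OF _ cell_sub_stratum]) (simp add: stratum_def)

lemma NL_lim:
  assumes z: "z \<in> Zs" and l: "l < k"
  shows "cipo M (\<lambda>n \<omega>. real (card (cell n (\<lambda>i. I n i \<omega>) (\<lambda>i. Zf i \<omega>) l z)) / real n) (\<pi> l * pz z)"
proof -
  define cc where "cc n \<omega> = real (card (cell n (\<lambda>i. I n i \<omega>) (\<lambda>i. Zf i \<omega>) l z))" for n \<omega>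
  define cs where "cs n \<omega> = real (card (stratum n (\<lambda>i. Zf i \<omega>) z))" for n \<omega>
  have bal: "cipo M (\<lambda>n \<omega>. (cc n \<omega> - \<pi> l * cs n \<omega>) / cs n \<omega>) 0"
    unfolding cc_def cs_def
    by (rule conv_to_cipo) (use C3_bal z l in auto)
  have "cipo M (\<lambda>n \<omega>. (cc n \<omega> - \<pi> l * cs n \<omega>) / cs n \<omega> * (cs n \<omega> / real n) + \<pi> l * (cs n \<omega> / real n))
            (0 * pz z + \<pi> l * pz z)"
    unfolding cs_def
    by (intro cipo_add[OF fm] cipo_mult[OF fm] bal[unfolded cs_def] wlln_stratum cipo_const)
  then show ?thesis
  proof (rule cipo_cong)
    fix n \<omega>
    have le: "cc n \<omega> \<le> cs n \<omega>" unfolding cc_def cs_def using card_cell_le by simp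
    show "real (card (cell n (\<lambda>i. I n i \<omega>) (\<lambda>i. Zf i \<omega>) l z)) / real n =
        (cc n \<omega> - \<pi> l * cs n \<omega>) / cs n \<omega> * (cs n \<omega> / real n) + \<pi> l * (cs n \<omega> / real n)"
    proof (cases "cs n \<omega> = 0")
      case True
      then have "cc n \<omega> = 0" using le unfolding cc_def by simp
      then show ?thesis using True unfolding cc_def by simp
    next
      case False
      have "(cc n \<omega> - \<pi> l * cs n \<omega>) / cs n \<omega> * (cs n \<omega> / real n) = (cc n \<omega> - \<pi> l * cs n \<omega>) / real n"
        using False by simp
      then show ?thesis unfolding cc_def[symmetric] by (simp add: diff_divide_distrib)
    qed
  qed simp
qed

context
  fixes g :: "(nat \<Rightarrow> real) \<times> 'w \<Rightarrow> real" and c :: real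
  assumes g_meas[measurable]: "g \<in> borel_measurable PS" and g_bd: "\<And>d. \<bar>g d\<bar> \<le> c"
begin

lemma master_bdd:
  assumes l: "l < k"
  shows "cipo M (\<lambda>n \<omega>. (\<Sum>i<n. if I n i \<omega> = l then g (D i \<omega>) else 0) / real n) (\<pi> l * (\<integral>\<omega>. g (D 0 \<omega>) \<partial>M))"
proof -
  define \<phi> where "\<phi> n i \<omega> = (if I n i \<omega> = l then 1 else 0) * ee g (D i \<omega>)" for n i :: nat and \<omega>
  have A: "cipo M (\<lambda>n \<omega>. (\<Sum>i<n. \<phi> n i \<omega>) / real n) 0"
  proof (rule cipo_orth[OF P])
    show "\<phi> n i \<in> borel_measurable M" for n i
      using ee_meas[OF g_meas g_bd] unfolding \<phi>_def by measurable
    show "\<bar>\<phi> n i \<omega>\<bar> \<le> 2 * c" for n i \<omega>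
      unfolding \<phi>_def using ee_bd[OF g_meas g_bd] c_nonneg[OF g_meas g_bd] by auto
    fix n i j :: nat assume ij: "i < n" "j < n" "i \<noteq> j"
    have "(\<integral>\<omega>. \<phi> n i \<omega> * \<phi> n j \<omega> \<partial>M) = (\<integral>\<omega>. (if I n i \<omega> = l then 1 else 0) * (if I n j \<omega> = l then 1 else 0) * (ee g (D i \<omega>) * ee g (D j \<omega>)) \<partial>M)"
      unfolding \<phi>_def by (simp add: mult_ac)
    also have "\<dots> = 0" using ij by (intro cross[OF g_meas g_bd]) auto
    finally show "(\<integral>\<omega>. \<phi> n i \<omega> * \<phi> n j \<omega> \<partial>M) = 0" .
  qed
  have B: "cipo M (\<lambda>n \<omega>. \<Sum>z\<in>Zs. hh g z * (real (card (cell n (\<lambda>i. I n i \<omega>) (\<lambda>i. Zf i \<omega>) l z)) / real n))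
             (\<Sum>z\<in>Zs. hh g z * (\<pi> l * pz z))"
    by (intro cipo_sum[OF fm C3_fin] cipo_mult[OF fm] cipo_const NL_lim l)
  have "cipo M (\<lambda>n \<omega>. (\<Sum>i<n. \<phi> n i \<omega>) / real n + (\<Sum>z\<in>Zs. hh g z * (real (card (cell n (\<lambda>i. I n i \<omega>) (\<lambda>i. Zf i \<omega>) l z)) / real n)))
             (0 + (\<Sum>z\<in>Zs. hh g z * (\<pi> l * pz z)))"
    by (rule cipo_add[OF fm A B])
  then show ?thesis
  proof (rule cipo_cong)
    fix n \<omega> assume w: "\<omega> \<in> space M"
    have hsplit: "hh g (Zf i \<omega>) = (\<Sum>z\<in>Zs. if Zf i \<omega> = z then hh g z else 0)" for i
      using Zf_in[OF w, of i] C3_fin by (simp add: sum.delta)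
    have "(\<Sum>i<n. if I n i \<omega> = l then g (D i \<omega>) else 0)
        = (\<Sum>i<n. \<phi> n i \<omega>) + (\<Sum>i<n. if I n i \<omega> = l then hh g (Zf i \<omega>) else 0)"
      unfolding \<phi>_def ee_def sum.distrib[symmetric] by (intro sum.cong) (auto simp: D_Z)
    also have "(\<Sum>i<n. if I n i \<omega> = l then hh g (Zf i \<omega>) else 0)
        = (\<Sum>i<n. \<Sum>z\<in>Zs. hh g z * (if I n i \<omega> = l \<and> Zf i \<omega> = z then 1 else 0))"
      by (intro sum.cong refl) (auto simp: hsplit intro!: sum.cong)
    also have "\<dots> = (\<Sum>z\<in>Zs. hh g z * real (card (cell n (\<lambda>i. I n i \<omega>) (\<lambda>i. Zf i \<omega>) l z)))"
      by (subst sum.swap) (simp add: card_cell_sum sum_distrib_left)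
    finally show "(\<Sum>i<n. if I n i \<omega> = l then g (D i \<omega>) else 0) / real n =
        (\<Sum>i<n. \<phi> n i \<omega>) / real n + (\<Sum>z\<in>Zs. hh g z * (real (card (cell n (\<lambda>i. I n i \<omega>) (\<lambda>i. Zf i \<omega>) l z)) / real n))"
      by (simp add: add_divide_distrib sum_divide_distrib)
  next
    have "(\<Sum>z\<in>Zs. hh g z * (\<pi> l * pz z)) = \<pi> l * (\<Sum>z\<in>Zs. hh g z * pz z)"
      by (simp add: sum_distrib_left mult_ac)
    also have "(\<Sum>z\<in>Zs. hh g z * pz z) = (\<Sum>z\<in>Zs. (\<integral>\<omega>. indicator {\<omega>\<in>space M. Zf 0 \<omega> = z} \<omega> * g (D 0 \<omega>) \<partial>M))"
      using C3_pos unfolding hh_def pz_def by (intro sum.cong) auto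
    also have "\<dots> = (\<integral>\<omega>. (\<Sum>z\<in>Zs. indicator {\<omega>\<in>space M. Zf 0 \<omega> = z} \<omega> * g (D 0 \<omega>)) \<partial>M)"
      by (rule Bochner_Integration.integral_sum[symmetric])
         (auto intro!: integrable_const_bound[where B=c] simp: indicator_def g_bd c_nonneg[OF g_meas g_bd])
    also have "\<dots> = (\<integral>\<omega>. g (D 0 \<omega>) \<partial>M)"
    proof (rule Bochner_Integration.integral_cong[OF refl])
      fix \<omega> assume w: "\<omega> \<in> space M"
      have "(\<Sum>z\<in>Zs. indicator {\<omega>\<in>space M. Zf 0 \<omega> = z} \<omega> * g (D 0 \<omega>)) = (\<Sum>z\<in>Zs. if Zf 0 \<omega> = z then g (D 0 \<omega>) else 0)"
        using w by (intro sum.cong) (auto simp: indicator_def)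
      also have "\<dots> = g (D 0 \<omega>)" using Zf_in[OF w, of 0] C3_fin by (simp add: sum.delta)
      finally show "(\<Sum>z\<in>Zs. indicator {\<omega>\<in>space M. Zf 0 \<omega> = z} \<omega> * g (D 0 \<omega>)) = g (D 0 \<omega>)" .
    qed
    finally show "0 + (\<Sum>z\<in>Zs. hh g z * (\<pi> l * pz z)) = \<pi> l * (\<integral>\<omega>. g (D 0 \<omega>) \<partial>M)" by simp
  qed
qed

end

end


definition clip :: "real \<Rightarrow> real \<Rightarrow> real" where "clip m x = max (- m) (min m x)"

lemma clip_bd: "m \<ge> 0 \<Longrightarrow> \<bar>clip m x\<bar> \<le> m" unfolding clip_def by auto
lemma clip_rest_bd: "m \<ge> 0 \<Longrightarrow> \<bar>x - clip m x\<bar> \<le> \<bar>x\<bar>" unfolding clip_def by auto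
lemma clip_rest_lim: "(\<lambda>m::nat. x - clip (real m) x) \<longlonglongrightarrow> 0"
proof -
  obtain N :: nat where "real N \<ge> \<bar>x\<bar>" using real_arch_simple by blast
  then have "eventually (\<lambda>m::nat. x - clip (real m) x = 0) sequentially"
    unfolding eventually_sequentially clip_def
    by (intro exI[of _ N]) (auto simp: max_def min_def)
  then show ?thesis by (rule tendsto_eventually)
qed

lemma borel_clip[measurable]: "f \<in> borel_measurable N \<Longrightarrow> (\<lambda>x. clip m (f x)) \<in> borel_measurable N"
  unfolding clip_def by (intro borel_measurable_max borel_measurable_min measurable_const borel_measurable_uminus) auto

context trial
begin

lemma master:
  assumes [measurable]: "g \<in> borel_measurable PS" and gi: "integrable M (\<lambda>\<omega>. g (D 0 \<omega>))" and l: "l < k"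
  shows "cipo M (\<lambda>n \<omega>. (\<Sum>i<n. if I n i \<omega> = l then g (D i \<omega>) else 0) / real n) (\<pi> l * (\<integral>\<omega>. g (D 0 \<omega>) \<partial>M))"
proof (rule cipoI)
  fix e :: real assume e: "e > 0"
  define r where "r m d = \<bar>g d - clip (real m) (g d)\<bar>" for m :: nat and d
  have [measurable]: "r m \<in> borel_measurable PS" for m unfolding r_def by measurable
  have gi': "integrable M (\<lambda>\<omega>. g (D i \<omega>))" for i using gi ident_integrable[of g i] by simp
  have ri: "integrable M (\<lambda>\<omega>. r m (D i \<omega>))" for m i
    by (rule Bochner_Integration.integrable_bound[OF integrable_abs[OF gi'[of i]]])
       (auto simp: r_def clip_rest_bd)
  have "(\<lambda>m. \<integral>\<omega>. r m (D 0 \<omega>) \<partial>M) \<longlonglongrightarrow> (\<integral>\<omega>. 0 \<partial>M)"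
  proof (rule integral_dominated_convergence[where w="\<lambda>\<omega>. \<bar>g (D 0 \<omega>)\<bar>"])
    show "AE \<omega> in M. (\<lambda>m. r m (D 0 \<omega>)) \<longlonglongrightarrow> 0"
      unfolding r_def using clip_rest_lim by (intro AE_I2) (metis tendsto_rabs_zero)
    show "AE \<omega> in M. norm (r m (D 0 \<omega>)) \<le> \<bar>g (D 0 \<omega>)\<bar>" for m
      unfolding r_def by (intro AE_I2) (simp add: clip_rest_bd)
  qed (use gi in auto)
  then have rlim: "(\<lambda>m. \<integral>\<omega>. r m (D 0 \<omega>) \<partial>M) \<longlonglongrightarrow> 0" by simp
  show "small M (\<lambda>n. {\<omega> \<in> space M. e < dist ((\<Sum>i<n. if I n i \<omega> = l then g (D i \<omega>) else 0) / real n) (\<pi> l * (\<integral>\<omega>. g (D 0 \<omega>) \<partial>M))})"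
    unfolding small_def
  proof (intro allI impI)
    fix d :: real assume d: "d > 0"
    define \<eta> where "\<eta> = min (e/4) (e * d / 8)"
    have \<eta>: "\<eta> > 0" unfolding \<eta>_def using e d by auto
    obtain N where N: "\<forall>n\<ge>N. \<bar>(\<integral>\<omega>. r n (D 0 \<omega>) \<partial>M)\<bar> < \<eta>"
      using tendstoD[OF rlim \<eta>] by (auto simp: eventually_sequentially dist_real_def)
    define m where "m = N"
    have m: "(\<integral>\<omega>. r m (D 0 \<omega>) \<partial>M) < \<eta>" using N unfolding m_def by fastforce
    define gm where "gm d = clip (real m) (g d)" for d
    have [measurable]: "gm \<in> borel_measurable PS" unfolding gm_def by measurable
    have gm_bd: "\<bar>gm d\<bar> \<le> real m" for d unfolding gm_def by (rule clip_bd) simp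
    have gmi: "integrable M (\<lambda>\<omega>. gm (D 0 \<omega>))"
      by (rule integrable_const_bound[where B="real m"]) (auto simp: gm_bd)
    have E1: "eventually (\<lambda>n. \<exists>A\<in>sets M. {\<omega> \<in> space M. e/2 < dist ((\<Sum>i<n. if I n i \<omega> = l then gm (D i \<omega>) else 0) / real n) (\<pi> l * (\<integral>\<omega>. gm (D 0 \<omega>) \<partial>M))} \<subseteq> A \<and> measure M A < d/2) sequentially"
    proof -
      have "small M (\<lambda>n. {\<omega> \<in> space M. e/2 < dist ((\<Sum>i<n. if I n i \<omega> = l then gm (D i \<omega>) else 0) / real n) (\<pi> l * (\<integral>\<omega>. gm (D 0 \<omega>) \<partial>M))})"
        using cipoD[OF master_bdd[of gm "real m", OF _ gm_bd l], of "e/2"] e by auto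
      moreover have "d/2 > 0" using d by simp
      ultimately show ?thesis unfolding small_def by blast
    qed
    have E2: "eventually (\<lambda>n::nat. n \<ge> 1) sequentially" by (rule eventually_ge_at_top)
    from E1 E2 show "eventually (\<lambda>n. \<exists>A\<in>sets M. {\<omega> \<in> space M. e < dist ((\<Sum>i<n. if I n i \<omega> = l then g (D i \<omega>) else 0) / real n) (\<pi> l * (\<integral>\<omega>. g (D 0 \<omega>) \<partial>M))} \<subseteq> A \<and> measure M A < d) sequentially"
    proof eventually_elim
      case (elim n)
      then obtain A1 where A1: "A1 \<in> sets M" "{\<omega> \<in> space M. e/2 < dist ((\<Sum>i<n. if I n i \<omega> = l then gm (D i \<omega>) else 0) / real n) (\<pi> l * (\<integral>\<omega>. gm (D 0 \<omega>) \<partial>M))} \<subseteq> A1" "measure M A1 < d/2"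
        by blast
      have n: "n \<ge> 1" using elim by simp
      define R where "R \<omega> = (\<Sum>i<n. r m (D i \<omega>)) / real n" for \<omega>
      have [measurable]: "R \<in> borel_measurable M" unfolding R_def by measurable
      define A2 where "A2 = {\<omega> \<in> space M. e/4 \<le> R \<omega>}"
      have A2s[measurable]: "A2 \<in> sets M" unfolding A2_def by measurable
      have Ri: "integrable M R" unfolding R_def by (intro integrable_divide Bochner_Integration.integrable_sum ri)
      have ER: "(\<integral>\<omega>. R \<omega> \<partial>M) = (\<integral>\<omega>. r m (D 0 \<omega>) \<partial>M)"
      proof -
        have "(\<integral>\<omega>. R \<omega> \<partial>M) = (\<Sum>i<n. (\<integral>\<omega>. r m (D i \<omega>) \<partial>M)) / real n"
          unfolding R_def by (simp add: Bochner_Integration.integral_sum ri)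
        also have "\<dots> = (\<Sum>i<n. (\<integral>\<omega>. r m (D 0 \<omega>) \<partial>M)) / real n"
          by (rule arg_cong[where f="\<lambda>x. x / real n"], rule sum.cong[OF refl], rule ident_integral) simp
        also have "\<dots> = (\<integral>\<omega>. r m (D 0 \<omega>) \<partial>M)" using n by simp
        finally show ?thesis .
      qed
      have "measure M A2 \<le> (\<integral>\<omega>. R \<omega> \<partial>M) / (e/4)"
        unfolding A2_def using e by (intro integral_Markov_inequality_measure[OF Ri, of "space M"])
          (auto simp: R_def r_def intro!: divide_nonneg_nonneg sum_nonneg)
      also have "\<dots> < d/2"
      proof -
        have "(\<integral>\<omega>. R \<omega> \<partial>M) < e * d / 8" using ER m unfolding \<eta>_def by simp
        then show ?thesis using e by (simp add: field_simps)
      qed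
      finally have mA2: "measure M A2 < d/2" .
      have sub: "{\<omega> \<in> space M. e < dist ((\<Sum>i<n. if I n i \<omega> = l then g (D i \<omega>) else 0) / real n) (\<pi> l * (\<integral>\<omega>. g (D 0 \<omega>) \<partial>M))} \<subseteq> A1 \<union> A2"
      proof safe
        fix \<omega> assume w: "\<omega> \<in> space M"
          and big: "e < dist ((\<Sum>i<n. if I n i \<omega> = l then g (D i \<omega>) else 0) / real n) (\<pi> l * (\<integral>\<omega>. g (D 0 \<omega>) \<partial>M))"
          and nA2: "\<omega> \<notin> A2"
        have R: "R \<omega> < e/4" using nA2 w unfolding A2_def by auto
        have pil: "0 \<le> \<pi> l" "\<pi> l \<le> 1" using pi_range l by auto
        define Tg where "Tg = (\<Sum>i<n. if I n i \<omega> = l then g (D i \<omega>) else 0) / real n"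
        define Tm where "Tm = (\<Sum>i<n. if I n i \<omega> = l then gm (D i \<omega>) else 0) / real n"
        have "\<bar>Tg - Tm\<bar> \<le> R \<omega>"
        proof -
          have "\<bar>Tg - Tm\<bar> = \<bar>\<Sum>i<n. if I n i \<omega> = l then g (D i \<omega>) - gm (D i \<omega>) else 0\<bar> / real n"
            unfolding Tg_def Tm_def by (simp add: diff_divide_distrib[symmetric] sum_subtractf[symmetric] if_distrib cong: if_cong)
          also have "\<dots> \<le> (\<Sum>i<n. r m (D i \<omega>)) / real n"
            by (intro divide_right_mono order_trans[OF sum_abs] sum_mono) (auto simp: r_def gm_def)
          finally show ?thesis unfolding R_def .
        qed
        moreover have "\<bar>\<pi> l * (\<integral>\<omega>. g (D 0 \<omega>) \<partial>M) - \<pi> l * (\<integral>\<omega>. gm (D 0 \<omega>) \<partial>M)\<bar> < e/4"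
        proof -
          have "\<bar>(\<integral>\<omega>. g (D 0 \<omega>) \<partial>M) - (\<integral>\<omega>. gm (D 0 \<omega>) \<partial>M)\<bar> = \<bar>\<integral>\<omega>. g (D 0 \<omega>) - gm (D 0 \<omega>) \<partial>M\<bar>"
            using gi gmi by simp
          also have "\<dots> \<le> (\<integral>\<omega>. r m (D 0 \<omega>) \<partial>M)"
            unfolding r_def gm_def by (rule integral_abs_bound)
          also have "\<dots> < e/4" using m unfolding \<eta>_def by simp
          finally have "\<bar>(\<integral>\<omega>. g (D 0 \<omega>) \<partial>M) - (\<integral>\<omega>. gm (D 0 \<omega>) \<partial>M)\<bar> < e/4" .
          moreover have "\<bar>\<pi> l * (\<integral>\<omega>. g (D 0 \<omega>) \<partial>M) - \<pi> l * (\<integral>\<omega>. gm (D 0 \<omega>) \<partial>M)\<bar>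
              = \<pi> l * \<bar>(\<integral>\<omega>. g (D 0 \<omega>) \<partial>M) - (\<integral>\<omega>. gm (D 0 \<omega>) \<partial>M)\<bar>"
            using pil by (simp add: right_diff_distrib[symmetric] abs_mult)
          moreover have "\<pi> l * \<bar>(\<integral>\<omega>. g (D 0 \<omega>) \<partial>M) - (\<integral>\<omega>. gm (D 0 \<omega>) \<partial>M)\<bar> \<le> \<bar>(\<integral>\<omega>. g (D 0 \<omega>) \<partial>M) - (\<integral>\<omega>. gm (D 0 \<omega>) \<partial>M)\<bar>"
            using pil by (intro mult_left_le_one_le) auto
          ultimately show ?thesis by linarith
        qed
        ultimately have "e/2 < dist Tm (\<pi> l * (\<integral>\<omega>. gm (D 0 \<omega>) \<partial>M))"
          using big R unfolding Tg_def[symmetric] dist_real_def by linarith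
        then show "\<omega> \<in> A1" using A1 w unfolding Tm_def by blast
      qed
      have "measure M (A1 \<union> A2) \<le> measure M A1 + measure M A2"
        using A1 A2s by (intro measure_subadditive) (auto simp: emeasure_eq_measure)
      then show ?case using sub A1 A2s mA2 by (intro bexI[of _ "A1 \<union> A2"]) auto
    qed
  qed
qed

end


lemma sum_shift_prod:
  fixes f g :: "nat \<Rightarrow> real"
  assumes "finite A"
  shows "(\<Sum>i\<in>A. (f i - a) * (g i - b)) = (\<Sum>i\<in>A. f i * g i) - b * (\<Sum>i\<in>A. f i) - a * (\<Sum>i\<in>A. g i) + real (card A) * a * b"
  using assms by (induction A rule: finite_induct) (auto simp: algebra_simps)

lemma sum_centered_prod:
  fixes f g :: "nat \<Rightarrow> real"
  assumes "finite A"
  shows "(\<Sum>i\<in>A. (f i - (\<Sum>j\<in>A. f j) / real (card A)) * (g i - (\<Sum>j\<in>A. g j) / real (card A)))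
       = (\<Sum>i\<in>A. f i * g i) - (\<Sum>i\<in>A. f i) * (\<Sum>i\<in>A. g i) / real (card A)"
proof (cases "A = {}")
  case True then show ?thesis by simp
next
  case False
  then have m: "real (card A) > 0" using assms by (simp add: card_gt_0_iff)
  show ?thesis unfolding sum_shift_prod[OF assms] using m by (simp add: field_simps)
qed

lemma smean_vec_comp: "smean_vec A x $ a = (\<Sum>i\<in>A. x i $ a) / real (card A)"
  unfolding smean_vec_def by (simp add: sum_component)

lemma scp_eq:
  fixes x :: "nat \<Rightarrow> real^'p"
  assumes "finite A"
  shows "scp A x = (\<Sum>i\<in>A. outer (x i) (x i)) - (1 / real (card A)) *\<^sub>R outer (\<Sum>i\<in>A. x i) (\<Sum>i\<in>A. x i)"
proof -
  have "(scp A x) $ a $ b = ((\<Sum>i\<in>A. outer (x i) (x i)) - (1 / real (card A)) *\<^sub>R outer (\<Sum>i\<in>A. x i) (\<Sum>i\<in>A. x i)) $ a $ b" for a b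
  proof -
    have "(scp A x) $ a $ b = (\<Sum>i\<in>A. (x i $ a - (\<Sum>j\<in>A. x j $ a) / real (card A)) * (x i $ b - (\<Sum>j\<in>A. x j $ b) / real (card A)))"
      unfolding scp_def outer_def by (simp add: sum_component smean_vec_comp)
    also have "\<dots> = (\<Sum>i\<in>A. x i $ a * x i $ b) - (\<Sum>i\<in>A. x i $ a) * (\<Sum>i\<in>A. x i $ b) / real (card A)"
      by (rule sum_centered_prod[OF assms])
    finally show ?thesis unfolding outer_def by (simp add: sum_component)
  qed
  then show ?thesis by (simp add: vec_eq_iff)
qed

lemma scross_eq:
  fixes x :: "nat \<Rightarrow> real^'p"
  shows "scross A x y = (\<Sum>i\<in>A. y i *\<^sub>R x i) - ((\<Sum>i\<in>A. y i) / real (card A)) *\<^sub>R (\<Sum>i\<in>A. x i)"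
  unfolding scross_def smean_vec_def
  by (simp add: scaleR_diff_right sum_subtractf scaleR_sum_left[symmetric] sum_divide_distrib)

lemma svar_eq:
  fixes f :: "nat \<Rightarrow> real"
  assumes "finite A"
  shows "svar A f = ((\<Sum>i\<in>A. (f i)\<^sup>2) - (\<Sum>i\<in>A. f i)\<^sup>2 / real (card A)) / (real (card A) - 1)"
  unfolding svar_def smean_def power2_eq_square
  using sum_centered_prod[OF assms, of f f] by simp

definition fsvar :: "real \<Rightarrow> real \<Rightarrow> real \<Rightarrow> real \<Rightarrow> real" where
  "fsvar N ninv s1 s2 = (s2 - s1\<^sup>2 / N) / (N - ninv)"

lemma svar_fsvar:
  fixes f :: "nat \<Rightarrow> real"
  assumes "finite A" "n > 0"
  shows "svar A f = fsvar (real (card A) / real n) (1 / real n) ((\<Sum>i\<in>A. f i) / real n) ((\<Sum>i\<in>A. (f i)\<^sup>2) / real n)"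
proof (cases "card A = 0")
  case True
  then have "A = {}" using assms by simp
  then show ?thesis by (simp add: svar_def fsvar_def)
next
  case False
  define m where "m = real (card A)"
  define S1 where "S1 = (\<Sum>i\<in>A. f i)"
  define S2 where "S2 = (\<Sum>i\<in>A. (f i)\<^sup>2)"
  have m: "m > 0" using False unfolding m_def by simp
  have nn: "real n > 0" using assms by simp
  have num: "S2 / real n - (S1 / real n)\<^sup>2 / (m / real n) = (S2 - S1\<^sup>2 / m) / real n"
    using m nn by (simp add: field_simps power2_eq_square)
  have den: "m / real n - 1 / real n = (m - 1) / real n"
    by (simp add: diff_divide_distrib)
  show ?thesis unfolding svar_eq[OF assms(1)] fsvar_def m_def[symmetric] S1_def[symmetric] S2_def[symmetric] num den
    using nn by simp
qed

lemma inner_outer: "b \<bullet> (outer x x *v b) = (x \<bullet> b)\<^sup>2" for x b :: "real^'p"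
  unfolding outer_def matrix_vector_mult_def inner_vec_def power2_eq_square
  by (simp add: sum_distrib_left sum_distrib_right mult_ac)

lemma inner_sum_outer: "b \<bullet> ((\<Sum>i\<in>A. outer (x i) (x i)) *v b) = (\<Sum>i\<in>A. (x i \<bullet> b)\<^sup>2)" for x :: "nat \<Rightarrow> real^'p"
proof -
  have "(\<Sum>i\<in>A. outer (x i) (x i)) *v b = (\<Sum>i\<in>A. outer (x i) (x i) *v b)"
    by (simp add: matrix_vector_mult_def vec_eq_iff sum_component sum_distrib_right)
       (subst sum.swap, simp)
  then show ?thesis by (simp add: inner_sum_right inner_outer)
qed

lemma resid_sums:
  fixes x :: "nat \<Rightarrow> real^'p"
  shows "(\<Sum>i\<in>A. y i - x i \<bullet> b) = (\<Sum>i\<in>A. y i) - b \<bullet> (\<Sum>i\<in>A. x i)"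
    and "(\<Sum>i\<in>A. (y i - x i \<bullet> b)\<^sup>2) = (\<Sum>i\<in>A. (y i)\<^sup>2) - 2 * (b \<bullet> (\<Sum>i\<in>A. y i *\<^sub>R x i)) + b \<bullet> ((\<Sum>i\<in>A. outer (x i) (x i)) *v b)"
proof -
  show "(\<Sum>i\<in>A. y i - x i \<bullet> b) = (\<Sum>i\<in>A. y i) - b \<bullet> (\<Sum>i\<in>A. x i)"
    by (simp add: sum_subtractf inner_sum_right inner_commute)
  have "(\<Sum>i\<in>A. (y i - x i \<bullet> b)\<^sup>2) = (\<Sum>i\<in>A. (y i)\<^sup>2 - 2 * (y i * (x i \<bullet> b)) + (x i \<bullet> b)\<^sup>2)"
    by (intro sum.cong) (auto simp: power2_eq_square algebra_simps)
  also have "\<dots> = (\<Sum>i\<in>A. (y i)\<^sup>2) - 2 * (b \<bullet> (\<Sum>i\<in>A. y i *\<^sub>R x i)) + (\<Sum>i\<in>A. (x i \<bullet> b)\<^sup>2)"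
    by (simp add: sum.distrib sum_subtractf sum_distrib_left inner_sum_right inner_commute)
  finally show "(\<Sum>i\<in>A. (y i - x i \<bullet> b)\<^sup>2) = (\<Sum>i\<in>A. (y i)\<^sup>2) - 2 * (b \<bullet> (\<Sum>i\<in>A. y i *\<^sub>R x i)) + b \<bullet> ((\<Sum>i\<in>A. outer (x i) (x i)) *v b)"
    by (simp add: inner_sum_outer)
qed

lemma minv_scale:
  fixes A :: "real^'n^'n"
  assumes "det A \<noteq> 0" "c \<noteq> 0"
  shows "matrix_inv (c *\<^sub>R A) *v (c *\<^sub>R b) = matrix_inv A *v b"
proof -
  have dA: "det (c *\<^sub>R A) \<noteq> 0"
    using assms scalar_invertible[of c A] by (simp add: invertible_det_nz)
  have "A *v cramer_sol A b = b"
    using cramer[OF assms(1), of "cramer_sol A b" b] unfolding cramer_sol_def by simp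
  then have "A *v (matrix_inv A *v b) = b" using matrix_inv_mult_cramer[OF assms(1)] by simp
  then have "(c *\<^sub>R A) *v (matrix_inv A *v b) = c *\<^sub>R b"
    by (simp add: scaleR_matrix_vector_assoc[symmetric])
  then have "matrix_inv A *v b = cramer_sol (c *\<^sub>R A) (c *\<^sub>R b)"
    using cramer[OF dA, of "matrix_inv A *v b" "c *\<^sub>R b"] unfolding cramer_sol_def by blast
  then show ?thesis using matrix_inv_mult_cramer[OF dA] by simp
qed


context trial
begin

definition "CL n l z \<omega> = cell n (\<lambda>i. I n i \<omega>) (\<lambda>i. Zf i \<omega>) l z"

definition Sc :: "nat \<Rightarrow> nat \<Rightarrow> 'z \<Rightarrow> ((nat \<Rightarrow> real) \<times> 'w \<Rightarrow> 'b::real_normed_vector) \<Rightarrow> 'a \<Rightarrow> 'b" where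
  "Sc n l z F \<omega> = (1 / real n) *\<^sub>R (\<Sum>i\<in>CL n l z \<omega>. F (D i \<omega>))"

abbreviation "ce z f \<equiv> cexp M (Zf 0) z f"

lemma finite_CL[simp]: "finite (CL n l z \<omega>)"
  unfolding CL_def cell_def by auto

lemma CL_iff: "i \<in> CL n l z \<omega> \<longleftrightarrow> i < n \<and> I n i \<omega> = l \<and> Zf i \<omega> = z"
  unfolding CL_def cell_def by auto

lemma sum_CL: "(\<Sum>i\<in>CL n l z \<omega>. f i) = (\<Sum>i<n. if I n i \<omega> = l \<and> Zf i \<omega> = z then f i else 0)"
proof -
  have "CL n l z \<omega> = {i\<in>{..<n}. I n i \<omega> = l \<and> Zf i \<omega> = z}" unfolding CL_def cell_def by auto
  moreover have "(\<Sum>i\<in>{i\<in>{..<n}. I n i \<omega> = l \<and> Zf i \<omega> = z}. f i) = (\<Sum>i<n. if I n i \<omega> = l \<and> Zf i \<omega> = z then f i else 0)"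
    by (rule sum.inter_filter) simp
  ultimately show ?thesis by simp
qed

lemma Sc_comp: "Sc n l z F \<omega> $ a = Sc n l z (\<lambda>d. F d $ a) \<omega>"
  unfolding Sc_def by (simp add: sum_component)

lemma pz_pos: "z \<in> Zs \<Longrightarrow> pz z > 0"
  using C3_pos unfolding pz_def by auto

lemma Sc_lim:
  fixes F :: "(nat \<Rightarrow> real) \<times> 'w \<Rightarrow> real"
  assumes [measurable]: "F \<in> borel_measurable PS" and Fi: "integrable M (\<lambda>\<omega>. F (D 0 \<omega>))"
    and z: "z \<in> Zs" and l: "l < k"
  shows "cipo M (\<lambda>n. Sc n l z F) (\<pi> l * pz z * ce z (\<lambda>\<omega>. F (D 0 \<omega>)))"
proof -
  define g where "g d = (if gZ (snd d) = z then F d else 0)" for d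
  have [measurable]: "g \<in> borel_measurable PS" unfolding g_def by measurable
  have gi: "integrable M (\<lambda>\<omega>. g (D 0 \<omega>))"
    by (rule Bochner_Integration.integrable_bound[OF Fi]) (auto simp: g_def)
  have "cipo M (\<lambda>n \<omega>. (\<Sum>i<n. if I n i \<omega> = l then g (D i \<omega>) else 0) / real n) (\<pi> l * (\<integral>\<omega>. g (D 0 \<omega>) \<partial>M))"
    by (rule master[OF _ gi l]) simp
  then show ?thesis
  proof (rule cipo_cong)
    fix n \<omega>
    show "Sc n l z F \<omega> = (\<Sum>i<n. if I n i \<omega> = l then g (D i \<omega>) else 0) / real n"
      unfolding Sc_def sum_CL g_def
      by (simp add: D_Z divide_inverse mult.commute, intro disjI2 sum.cong) (auto simp: D_Z)
  next
    have "(\<integral>\<omega>. g (D 0 \<omega>) \<partial>M) = (\<integral>\<omega>. indicator {\<omega>\<in>space M. Zf 0 \<omega> = z} \<omega> * F (D 0 \<omega>) \<partial>M)"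
      by (rule Bochner_Integration.integral_cong[OF refl]) (auto simp: g_def D_Z indicator_def)
    also have "\<dots> = pz z * ce z (\<lambda>\<omega>. F (D 0 \<omega>))"
      unfolding cexp_def pz_def using pz_pos[OF z] unfolding pz_def by simp
    finally show "\<pi> l * (\<integral>\<omega>. g (D 0 \<omega>) \<partial>M) = \<pi> l * pz z * ce z (\<lambda>\<omega>. F (D 0 \<omega>))" by simp
  qed
qed


definition "qq l z = \<pi> l * pz z"
definition "mY l z = ce z (Y 0 l)"
definition "mYY l z = ce z (\<lambda>\<omega>. (Y 0 l \<omega>)\<^sup>2)"
definition "mX z = (\<chi> a. ce z (\<lambda>\<omega>. gX (W 0 \<omega>) $ a))"
definition "mXY l z = (\<chi> a. ce z (\<lambda>\<omega>. Y 0 l \<omega> * gX (W 0 \<omega>) $ a))"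
definition "mXX z = (\<chi> a b. ce z (\<lambda>\<omega>. gX (W 0 \<omega>) $ a * gX (W 0 \<omega>) $ b))"

lemma meas_Y0[measurable]: "l < k \<Longrightarrow> Y 0 l \<in> borel_measurable M"
  using meas_Y by auto

lemma meas_X0[measurable]: "(\<lambda>\<omega>. gX (W 0 \<omega>)) \<in> borel_measurable M"
  by measurable

lemma borel_vec_nth[measurable]: "f \<in> borel_measurable N \<Longrightarrow> (\<lambda>x. (f x :: real^'n) $ a) \<in> borel_measurable N"
  by (erule measurable_compose[OF _ borel_measurable_continuous_onI]) (intro continuous_intros)

lemma abs_prod_le: "\<bar>u * v\<bar> \<le> u\<^sup>2 + v\<^sup>2" for u v :: real
proof -
  have "0 \<le> (\<bar>u\<bar> - \<bar>v\<bar>)\<^sup>2" by simp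
  then have "2 * \<bar>u\<bar> * \<bar>v\<bar> \<le> u\<^sup>2 + v\<^sup>2" by (simp add: power2_eq_square algebra_simps)
  moreover have "\<bar>u\<bar> * \<bar>v\<bar> \<ge> 0" by simp
  ultimately have "\<bar>u\<bar> * \<bar>v\<bar> \<le> u\<^sup>2 + v\<^sup>2" by linarith
  then show ?thesis by (simp add: abs_mult)
qed

lemma iY2: "l < k \<Longrightarrow> integrable M (\<lambda>\<omega>. (Y 0 l \<omega>)\<^sup>2)"
  using C1_mom by auto

lemma iY: "l < k \<Longrightarrow> integrable M (Y 0 l)"
  by (rule square_integrable_imp_integrable) (auto intro: iY2)

lemma iX2: "integrable M (\<lambda>\<omega>. (gX (W 0 \<omega>) $ a)\<^sup>2)"
proof (rule Bochner_Integration.integrable_bound[OF mom_X])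
  have "(gX (W 0 \<omega>) $ a)\<^sup>2 \<le> (norm (gX (W 0 \<omega>)))\<^sup>2" for \<omega>
  proof -
    have "\<bar>gX (W 0 \<omega>) $ a\<bar>\<^sup>2 \<le> (norm (gX (W 0 \<omega>)))\<^sup>2"
      by (rule power_mono[OF component_le_norm_cart]) simp
    then show ?thesis by simp
  qed
  then show "AE \<omega> in M. norm ((gX (W 0 \<omega>) $ a)\<^sup>2) \<le> norm ((norm (gX (W 0 \<omega>)))\<^sup>2)"
    by (intro AE_I2) simp
qed simp

lemma iX: "integrable M (\<lambda>\<omega>. gX (W 0 \<omega>) $ a)"
  by (rule square_integrable_imp_integrable) (auto intro: iX2)

lemma iprod:
  fixes u v :: "'a \<Rightarrow> real"
  assumes [measurable]: "u \<in> borel_measurable M" "v \<in> borel_measurable M"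
    and "integrable M (\<lambda>\<omega>. (u \<omega>)\<^sup>2)" "integrable M (\<lambda>\<omega>. (v \<omega>)\<^sup>2)"
  shows "integrable M (\<lambda>\<omega>. u \<omega> * v \<omega>)"
proof -
  have i: "integrable M (\<lambda>\<omega>. (u \<omega>)\<^sup>2 + (v \<omega>)\<^sup>2)" using assms(3,4) by simp
  show ?thesis
    by (rule Bochner_Integration.integrable_bound[OF i]) (auto simp: abs_prod_le)
qed

lemma iYX: "l < k \<Longrightarrow> integrable M (\<lambda>\<omega>. Y 0 l \<omega> * gX (W 0 \<omega>) $ a)"
  by (rule iprod) (auto intro: iY2 iX2)

lemma iXX: "integrable M (\<lambda>\<omega>. gX (W 0 \<omega>) $ a * gX (W 0 \<omega>) $ b)"
  by (rule iprod) (auto intro: iX2)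

lemma ce_const1: "z \<in> Zs \<Longrightarrow> ce z (\<lambda>\<omega>. 1) = 1"
proof -
  assume "z \<in> Zs"
  then have "pz z > 0" by (rule pz_pos)
  then show ?thesis unfolding cexp_def pz_def by simp
qed

context
  fixes l z assumes l: "l < k" and z: "z \<in> Zs"
begin

lemma lim_N: "cipo M (\<lambda>n. Sc n l z (\<lambda>_. 1::real)) (qq l z)"
proof -
  have "cipo M (\<lambda>n. Sc n l z (\<lambda>_. 1::real)) (\<pi> l * pz z * ce z (\<lambda>\<omega>. 1))"
    by (rule Sc_lim[OF _ _ z l]) auto
  then show ?thesis unfolding ce_const1[OF z] qq_def by simp
qed

lemma lim_Y: "cipo M (\<lambda>n. Sc n l z (\<lambda>d. fst d l)) (qq l z * mY l z)"
proof -
  have "cipo M (\<lambda>n. Sc n l z (\<lambda>d. fst d l)) (\<pi> l * pz z * ce z (\<lambda>\<omega>. fst (D 0 \<omega>) l))"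
    by (rule Sc_lim[OF _ _ z l]) (use iY[OF l] l in \<open>simp_all add: D_Y\<close>)
  then show ?thesis unfolding qq_def mY_def using l by (simp add: D_Y)
qed

lemma lim_YY: "cipo M (\<lambda>n. Sc n l z (\<lambda>d. (fst d l)\<^sup>2)) (qq l z * mYY l z)"
proof -
  have "cipo M (\<lambda>n. Sc n l z (\<lambda>d. (fst d l)\<^sup>2)) (\<pi> l * pz z * ce z (\<lambda>\<omega>. (fst (D 0 \<omega>) l)\<^sup>2))"
    by (rule Sc_lim[OF _ _ z l]) (use iY2[OF l] l in \<open>simp_all add: D_Y\<close>)
  then show ?thesis unfolding qq_def mYY_def using l by (simp add: D_Y)
qed

lemma lim_X: "cipo M (\<lambda>n. Sc n l z (\<lambda>d. gX (snd d))) (qq l z *\<^sub>R mX z)"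
proof (rule cipo_vec[OF fm])
  fix a
  show "cipo M (\<lambda>n \<omega>. Sc n l z (\<lambda>d. gX (snd d)) \<omega> $ a) ((qq l z *\<^sub>R mX z) $ a)"
  proof -
    have "cipo M (\<lambda>n. Sc n l z (\<lambda>d. gX (snd d) $ a)) (\<pi> l * pz z * ce z (\<lambda>\<omega>. gX (snd (D 0 \<omega>)) $ a))"
      by (rule Sc_lim[OF _ _ z l]) (use iX[of a] in \<open>simp_all add: D_X\<close>)
    then show ?thesis unfolding Sc_comp qq_def mX_def by (simp add: D_X)
  qed
qed

lemma lim_XY: "cipo M (\<lambda>n. Sc n l z (\<lambda>d. fst d l *\<^sub>R gX (snd d))) (qq l z *\<^sub>R mXY l z)"
proof (rule cipo_vec[OF fm])
  fix a
  show "cipo M (\<lambda>n \<omega>. Sc n l z (\<lambda>d. fst d l *\<^sub>R gX (snd d)) \<omega> $ a) ((qq l z *\<^sub>R mXY l z) $ a)"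
  proof -
    have "cipo M (\<lambda>n. Sc n l z (\<lambda>d. fst d l * gX (snd d) $ a)) (\<pi> l * pz z * ce z (\<lambda>\<omega>. fst (D 0 \<omega>) l * gX (snd (D 0 \<omega>)) $ a))"
      by (rule Sc_lim[OF _ _ z l]) (use iYX[OF l, of a] l in \<open>simp_all add: D_X D_Y\<close>)
    then show ?thesis unfolding Sc_comp qq_def mXY_def using l by (simp add: D_X D_Y)
  qed
qed

lemma lim_XX: "cipo M (\<lambda>n. Sc n l z (\<lambda>d. outer (gX (snd d)) (gX (snd d)))) (qq l z *\<^sub>R mXX z)"
proof (rule cipo_vec[OF fm])
  fix a
  show "cipo M (\<lambda>n \<omega>. Sc n l z (\<lambda>d. outer (gX (snd d)) (gX (snd d))) \<omega> $ a) ((qq l z *\<^sub>R mXX z) $ a)"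
  proof (rule cipo_vec[OF fm])
    fix b
    show "cipo M (\<lambda>n \<omega>. Sc n l z (\<lambda>d. outer (gX (snd d)) (gX (snd d))) \<omega> $ a $ b) ((qq l z *\<^sub>R mXX z) $ a $ b)"
    proof -
      have "cipo M (\<lambda>n. Sc n l z (\<lambda>d. gX (snd d) $ a * gX (snd d) $ b)) (\<pi> l * pz z * ce z (\<lambda>\<omega>. gX (snd (D 0 \<omega>)) $ a * gX (snd (D 0 \<omega>)) $ b))"
        by (rule Sc_lim[OF _ _ z l]) (use iXX[of a b] in \<open>simp_all add: D_X\<close>)
      then show ?thesis unfolding Sc_comp qq_def mXX_def outer_def by (simp add: D_X)
    qed
  qed
qed

end

end


context trial
begin

lemma Zset[measurable]: "{\<omega> \<in> space M. Zf 0 \<omega> = z} \<in> sets M" by measurable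

lemma ce_alt: "ce z f = (\<integral>\<omega>. f \<omega> * indicator {\<omega> \<in> space M. Zf 0 \<omega> = z} \<omega> \<partial>M) / pz z"
  unfolding cexp_def pz_def by (simp add: mult.commute)

lemma iind: "integrable M f \<Longrightarrow> integrable M (\<lambda>\<omega>. f \<omega> * indicator {\<omega> \<in> space M. Zf 0 \<omega> = z} \<omega>)"
  for f :: "'a \<Rightarrow> real"
  by (rule integrable_real_mult_indicator) auto

lemma ce_add: "integrable M f \<Longrightarrow> integrable M g \<Longrightarrow> ce z (\<lambda>\<omega>. f \<omega> + g \<omega>) = ce z f + ce z g"
  for f g :: "'a \<Rightarrow> real"
  unfolding ce_alt by (simp add: distrib_right iind add_divide_distrib)

lemma ce_diff: "integrable M f \<Longrightarrow> integrable M g \<Longrightarrow> ce z (\<lambda>\<omega>. f \<omega> - g \<omega>) = ce z f - ce z g"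
  for f g :: "'a \<Rightarrow> real"
  unfolding ce_alt by (simp add: left_diff_distrib iind diff_divide_distrib)

lemma ce_cmult: "ce z (\<lambda>\<omega>. c * f \<omega>) = c * ce z f"
  for f :: "'a \<Rightarrow> real"
  unfolding ce_alt by (simp add: mult.assoc)

lemma ce_sum: "finite S \<Longrightarrow> (\<And>s. s \<in> S \<Longrightarrow> integrable M (f s)) \<Longrightarrow> ce z (\<lambda>\<omega>. \<Sum>s\<in>S. f s \<omega>) = (\<Sum>s\<in>S. ce z (f s))"
  for f :: "'i \<Rightarrow> 'a \<Rightarrow> real"
proof -
  assume S: "finite S" and fi: "\<And>s. s \<in> S \<Longrightarrow> integrable M (f s)"
  have "(\<lambda>\<omega>. (\<Sum>s\<in>S. f s \<omega>) * indicator {\<omega> \<in> space M. Zf 0 \<omega> = z} \<omega>)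
      = (\<lambda>\<omega>. \<Sum>s\<in>S. f s \<omega> * indicator {\<omega> \<in> space M. Zf 0 \<omega> = z} \<omega>)"
    by (rule ext) (rule sum_distrib_right)
  then show ?thesis unfolding ce_alt
    by (simp only: Bochner_Integration.integral_sum[OF iind[OF fi]] sum_divide_distrib)
qed

lemma ce_cong: "(\<And>\<omega>. \<omega> \<in> space M \<Longrightarrow> f \<omega> = g \<omega>) \<Longrightarrow> ce z f = ce z g"
  unfolding ce_alt by (metis (no_types, lifting) Bochner_Integration.integral_cong)

lemma ce_const: "z \<in> Zs \<Longrightarrow> ce z (\<lambda>\<omega>. c) = c"
  using ce_cmult[of z c "\<lambda>_. 1"] ce_const1 by simp

lemma ccov_eq:
  fixes f g :: "'a \<Rightarrow> real"
  assumes z: "z \<in> Zs" and [measurable]: "f \<in> borel_measurable M" "g \<in> borel_measurable M"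
    and f2: "integrable M (\<lambda>\<omega>. (f \<omega>)\<^sup>2)" and g2: "integrable M (\<lambda>\<omega>. (g \<omega>)\<^sup>2)"
  shows "ccov M (Zf 0) z f g = ce z (\<lambda>\<omega>. f \<omega> * g \<omega>) - ce z f * ce z g"
proof -
  have fi: "integrable M f" by (rule square_integrable_imp_integrable) (auto intro: f2)
  have gi: "integrable M g" by (rule square_integrable_imp_integrable) (auto intro: g2)
  have fgi: "integrable M (\<lambda>\<omega>. f \<omega> * g \<omega>)" by (rule iprod) (auto intro: f2 g2)
  define a where "a = ce z f"
  define b where "b = ce z g"
  have "ccov M (Zf 0) z f g = ce z (\<lambda>\<omega>. (f \<omega> * g \<omega> - b * f \<omega>) - (a * g \<omega> - a * b))"
    unfolding ccov_def a_def[symmetric] b_def[symmetric]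
    by (rule ce_cong) (simp add: algebra_simps)
  also have "\<dots> = (ce z (\<lambda>\<omega>. f \<omega> * g \<omega>) - b * a) - (a * b - a * b)"
    using fi gi fgi z
    by (simp add: ce_diff ce_cmult ce_const a_def[symmetric] b_def[symmetric])
  finally show ?thesis unfolding a_def b_def by simp
qed

lemma cvar_ccov: "cvar M Z z f = ccov M Z z f f"
  unfolding cvar_def ccov_def by (simp add: power2_eq_square)

lemma iXa2: "integrable M (\<lambda>\<omega>. (gX (W 0 \<omega>) $ a)\<^sup>2)" by (rule iX2)

lemma VV_eq:
  assumes z: "z \<in> Zs"
  shows "cvar_vec M (Zf 0) z (\<lambda>\<omega>. gX (W 0 \<omega>)) = mXX z - outer (mX z) (mX z)"
  unfolding cvar_vec_def mXX_def mX_def outer_def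
  by (simp add: vec_eq_iff ccov_eq[OF z] iX2)

lemma CC_eq:
  assumes z: "z \<in> Zs" and l: "l < k"
  shows "ccov_vec M (Zf 0) z (\<lambda>\<omega>. gX (W 0 \<omega>)) (Y 0 l) = mXY l z - mY l z *\<^sub>R mX z"
  unfolding ccov_vec_def mXY_def mX_def mY_def
  using l by (simp add: vec_eq_iff ccov_eq[OF z] iX2 iY2 mult.commute)

lemma cvar_resid:
  assumes z: "z \<in> Zs" and l: "l < k"
  shows "cvar M (Zf 0) z (\<lambda>\<omega>. Y 0 l \<omega> - gX (W 0 \<omega>) \<bullet> b)
       = mYY l z - 2 * (b \<bullet> mXY l z) + b \<bullet> (mXX z *v b) - (mY l z - b \<bullet> mX z)\<^sup>2"
proof -
  define h where "h \<omega> = Y 0 l \<omega> - gX (W 0 \<omega>) \<bullet> b" for \<omega>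
  have [measurable]: "h \<in> borel_measurable M" unfolding h_def using l by measurable
  have hX: "gX (W 0 \<omega>) \<bullet> b = (\<Sum>a\<in>UNIV. b $ a * gX (W 0 \<omega>) $ a)" for \<omega>
    by (simp add: inner_vec_def mult.commute)
  have iXs: "integrable M (\<lambda>\<omega>. gX (W 0 \<omega>) \<bullet> b)"
    unfolding hX by (intro Bochner_Integration.integrable_sum integrable_mult_right iX)
  have h2: "integrable M (\<lambda>\<omega>. (h \<omega>)\<^sup>2)"
  proof -
    have "integrable M (\<lambda>\<omega>. (Y 0 l \<omega>)\<^sup>2 - 2 * (\<Sum>a\<in>UNIV. b $ a * (Y 0 l \<omega> * gX (W 0 \<omega>) $ a))
        + (\<Sum>a\<in>UNIV. \<Sum>c\<in>UNIV. b $ a * b $ c * (gX (W 0 \<omega>) $ a * gX (W 0 \<omega>) $ c)))"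
      using l by (intro Bochner_Integration.integrable_add Bochner_Integration.integrable_diff
          integrable_mult_right Bochner_Integration.integrable_sum iY2 iYX iXX)
    moreover have "(h \<omega>)\<^sup>2 = (Y 0 l \<omega>)\<^sup>2 - 2 * (\<Sum>a\<in>UNIV. b $ a * (Y 0 l \<omega> * gX (W 0 \<omega>) $ a))
        + (\<Sum>a\<in>UNIV. \<Sum>c\<in>UNIV. b $ a * b $ c * (gX (W 0 \<omega>) $ a * gX (W 0 \<omega>) $ c))" for \<omega>
      unfolding h_def hX power2_eq_square
      by (simp add: algebra_simps sum_distrib_left sum_distrib_right sum.distrib)
    ultimately show ?thesis by simp
  qed
  have "cvar M (Zf 0) z h = ce z (\<lambda>\<omega>. h \<omega> * h \<omega>) - ce z h * ce z h"
    unfolding cvar_ccov by (rule ccov_eq[OF z _ _ h2 h2]) auto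
  also have "ce z (\<lambda>\<omega>. h \<omega> * h \<omega>) = mYY l z - 2 * (\<Sum>a\<in>UNIV. b $ a * mXY l z $ a)
        + (\<Sum>a\<in>UNIV. \<Sum>c\<in>UNIV. b $ a * b $ c * mXX z $ a $ c)"
  proof -
    have "ce z (\<lambda>\<omega>. h \<omega> * h \<omega>) = ce z (\<lambda>\<omega>. ((Y 0 l \<omega>)\<^sup>2 - 2 * (\<Sum>a\<in>UNIV. b $ a * (Y 0 l \<omega> * gX (W 0 \<omega>) $ a)))
        + (\<Sum>a\<in>UNIV. \<Sum>c\<in>UNIV. b $ a * b $ c * (gX (W 0 \<omega>) $ a * gX (W 0 \<omega>) $ c)))"
      unfolding h_def hX
      by (rule ce_cong) (simp add: algebra_simps sum_distrib_left sum_distrib_right sum.distrib power2_eq_square)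
    also have "\<dots> = (ce z (\<lambda>\<omega>. (Y 0 l \<omega>)\<^sup>2) - 2 * (\<Sum>a\<in>UNIV. b $ a * ce z (\<lambda>\<omega>. Y 0 l \<omega> * gX (W 0 \<omega>) $ a)))
        + (\<Sum>a\<in>UNIV. \<Sum>c\<in>UNIV. b $ a * b $ c * ce z (\<lambda>\<omega>. gX (W 0 \<omega>) $ a * gX (W 0 \<omega>) $ c))"
      using l
      by (simp add: ce_add ce_diff ce_cmult ce_sum iY2 iYX iXX Bochner_Integration.integrable_sum
            Bochner_Integration.integrable_diff Bochner_Integration.integrable_add integrable_mult_right)
    finally show ?thesis unfolding mYY_def mXY_def mXX_def by simp
  qed
  also have "ce z h = mY l z - (\<Sum>a\<in>UNIV. b $ a * mX z $ a)"
  proof -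
    have "ce z h = ce z (\<lambda>\<omega>. Y 0 l \<omega> - (\<Sum>a\<in>UNIV. b $ a * gX (W 0 \<omega>) $ a))"
      unfolding h_def hX ..
    also have "\<dots> = ce z (Y 0 l) - (\<Sum>a\<in>UNIV. b $ a * ce z (\<lambda>\<omega>. gX (W 0 \<omega>) $ a))"
      using l iY[OF l]
      by (simp add: ce_diff ce_cmult ce_sum iX Bochner_Integration.integrable_sum integrable_mult_right)
    finally show ?thesis unfolding mY_def mX_def by simp
  qed
  finally show ?thesis unfolding h_def[symmetric]
    by (simp add: inner_vec_def matrix_vector_mult_def sum_distrib_left power2_eq_square mult_ac)
qed


lemma posdef_det:
  fixes A :: "real^'n^'n"
  assumes "pos_def A"
  shows "det A \<noteq> 0"
proof -
  have "inj ((*v) A)"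
  proof (rule injI)
    fix x y assume "A *v x = A *v y"
    then have e: "A *v (x - y) = 0" by (simp add: matrix_vector_mult_diff_distrib)
    show "x = y"
    proof (rule ccontr)
      assume "x \<noteq> y"
      then have "(x - y) \<bullet> (A *v (x - y)) > 0" using assms unfolding pos_def_def by auto
      then show False using e by simp
    qed
  qed
  then have "det (matrix ((*v) A)) \<noteq> 0"
    by (subst det_nz_iff_inj) (auto simp: matrix_vector_mul_linear)
  then show ?thesis by simp
qed

lemma int_Z:
  fixes \<phi> :: "'z \<Rightarrow> real"
  shows "(\<integral>\<omega>. \<phi> (Zf 0 \<omega>) \<partial>M) = (\<Sum>z\<in>Zs. pz z * \<phi> z)"
proof -
  have "(\<integral>\<omega>. \<phi> (Zf 0 \<omega>) \<partial>M) = (\<integral>\<omega>. (\<Sum>z\<in>Zs. \<phi> z * indicator {\<omega> \<in> space M. Zf 0 \<omega> = z} \<omega>) \<partial>M)"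
  proof (rule Bochner_Integration.integral_cong[OF refl])
    fix \<omega> assume w: "\<omega> \<in> space M"
    have "(\<Sum>z\<in>Zs. \<phi> z * indicator {\<omega> \<in> space M. Zf 0 \<omega> = z} \<omega>) = (\<Sum>z\<in>Zs. if Zf 0 \<omega> = z then \<phi> z else 0)"
      using w by (intro sum.cong) (auto simp: indicator_def)
    also have "\<dots> = \<phi> (Zf 0 \<omega>)" using Zf_in[OF w, of 0] C3_fin by (simp add: sum.delta)
    finally show "\<phi> (Zf 0 \<omega>) = (\<Sum>z\<in>Zs. \<phi> z * indicator {\<omega> \<in> space M. Zf 0 \<omega> = z} \<omega>)" by simp
  qed
  also have "\<dots> = (\<Sum>z\<in>Zs. \<phi> z * pz z)"
    by (subst Bochner_Integration.integral_sum)
       (auto simp: pz_def emeasure_eq_measure intro!: integrable_mult_right integrable_real_indicator)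
  finally show ?thesis by (simp add: mult.commute)
qed

lemma sum_pz: "(\<Sum>z\<in>Zs. pz z) = 1"
  using int_Z[of "\<lambda>_. 1"] by (simp add: prob_space)

lemma pvar_Z:
  fixes \<psi> :: "'z \<Rightarrow> real"
  shows "pvar M (\<lambda>\<omega>. \<psi> (Zf 0 \<omega>)) = (\<Sum>z\<in>Zs. pz z * (\<psi> z)\<^sup>2) - (\<Sum>z\<in>Zs. pz z * \<psi> z)\<^sup>2"
proof -
  define c where "c = (\<Sum>z\<in>Zs. pz z * \<psi> z)"
  have "pvar M (\<lambda>\<omega>. \<psi> (Zf 0 \<omega>)) = (\<integral>\<omega>. (\<psi> (Zf 0 \<omega>) - c)\<^sup>2 \<partial>M)"
    unfolding pvar_def int_Z c_def ..
  also have "\<dots> = (\<Sum>z\<in>Zs. pz z * (\<psi> z - c)\<^sup>2)"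
    by (rule int_Z[of "\<lambda>z. (\<psi> z - c)\<^sup>2"])
  also have "\<dots> = (\<Sum>z\<in>Zs. pz z * (\<psi> z)\<^sup>2) - 2 * c * (\<Sum>z\<in>Zs. pz z * \<psi> z) + c\<^sup>2 * (\<Sum>z\<in>Zs. pz z)"
    by (simp add: power2_eq_square algebra_simps sum.distrib sum_subtractf sum_distrib_left sum_distrib_right)
  also have "\<dots> = (\<Sum>z\<in>Zs. pz z * (\<psi> z)\<^sup>2) - c\<^sup>2"
    unfolding sum_pz c_def[symmetric] by (simp add: power2_eq_square)
  finally show ?thesis unfolding c_def .
qed

end


lemma outer_scale: "outer (c *\<^sub>R u) (c *\<^sub>R v) = (c * c) *\<^sub>R outer u v"
  unfolding outer_def by (simp add: vec_eq_iff)

lemma outer_sum_scale: "(\<Sum>i\<in>A. outer (x i) (x i)) = (\<Sum>i\<in>A. outer (x i) (x i))" ..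

definition PAf :: "real \<Rightarrow> real^'p \<Rightarrow> real^'p^'p \<Rightarrow> real^'p^'p" where
  "PAf N sx sxx = sxx - (1 / N) *\<^sub>R outer sx sx"

definition PBf :: "real \<Rightarrow> real \<Rightarrow> real^'p \<Rightarrow> real^'p \<Rightarrow> real^'p" where
  "PBf N sy sx sxy = sxy - (sy / N) *\<^sub>R sx"

context trial
begin

definition "sN l z n \<omega> = Sc n l z (\<lambda>_. 1::real) \<omega>"
definition "sY l z n \<omega> = Sc n l z (\<lambda>d. fst d l) \<omega>"
definition "sYY l z n \<omega> = Sc n l z (\<lambda>d. (fst d l)\<^sup>2) \<omega>"
definition "sX l z n \<omega> = Sc n l z (\<lambda>d. gX (snd d)) \<omega>"
definition "sXY l z n \<omega> = Sc n l z (\<lambda>d. fst d l *\<^sub>R gX (snd d)) \<omega>"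
definition "sXX l z n \<omega> = Sc n l z (\<lambda>d. outer (gX (snd d)) (gX (snd d))) \<omega>"

lemma sum_Sc: "n > 0 \<Longrightarrow> (\<Sum>i\<in>CL n l z \<omega>. F (D i \<omega>)) = real n *\<^sub>R Sc n l z F \<omega>"
  unfolding Sc_def by simp

lemma card_Sc: "n > 0 \<Longrightarrow> real (card (CL n l z \<omega>)) = real n * sN l z n \<omega>"
  unfolding sN_def Sc_def by simp

lemma Yo_CL: "l < k \<Longrightarrow> i \<in> CL n l z \<omega> \<Longrightarrow> Y i (I n i \<omega>) \<omega> = fst (D i \<omega>) l"
  by (simp add: CL_iff D_Y)

lemma Xo_D: "gX (W i \<omega>) = gX (snd (D i \<omega>))"
  by (simp add: D_X)

context
  fixes n l :: nat and z :: 'z and \<omega> :: 'a assumes n: "n > 0" and l: "l < k"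
begin

lemma sYo: "(\<Sum>i\<in>CL n l z \<omega>. Y i (I n i \<omega>) \<omega>) = real n * sY l z n \<omega>"
proof -
  have "(\<Sum>i\<in>CL n l z \<omega>. Y i (I n i \<omega>) \<omega>) = (\<Sum>i\<in>CL n l z \<omega>. fst (D i \<omega>) l)"
    using l by (intro sum.cong) (auto simp: Yo_CL)
  then show ?thesis unfolding sY_def using sum_Sc[where F="\<lambda>d. fst d l" and l=l and z=z and \<omega>=\<omega>, OF n] by simp
qed

lemma sYo2: "(\<Sum>i\<in>CL n l z \<omega>. (Y i (I n i \<omega>) \<omega>)\<^sup>2) = real n * sYY l z n \<omega>"
proof -
  have "(\<Sum>i\<in>CL n l z \<omega>. (Y i (I n i \<omega>) \<omega>)\<^sup>2) = (\<Sum>i\<in>CL n l z \<omega>. (fst (D i \<omega>) l)\<^sup>2)"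
    using l by (intro sum.cong) (auto simp: Yo_CL)
  then show ?thesis unfolding sYY_def using sum_Sc[where F="\<lambda>d. (fst d l)\<^sup>2" and l=l and z=z and \<omega>=\<omega>, OF n] by simp
qed

lemma sXo: "(\<Sum>i\<in>CL n l z \<omega>. gX (W i \<omega>)) = real n *\<^sub>R sX l z n \<omega>"
  unfolding sX_def Xo_D by (rule sum_Sc[OF n])

lemma sXYo: "(\<Sum>i\<in>CL n l z \<omega>. Y i (I n i \<omega>) \<omega> *\<^sub>R gX (W i \<omega>)) = real n *\<^sub>R sXY l z n \<omega>"
proof -
  have "(\<Sum>i\<in>CL n l z \<omega>. Y i (I n i \<omega>) \<omega> *\<^sub>R gX (W i \<omega>)) = (\<Sum>i\<in>CL n l z \<omega>. fst (D i \<omega>) l *\<^sub>R gX (snd (D i \<omega>)))"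
    using l by (intro sum.cong) (auto simp: Yo_CL Xo_D)
  then show ?thesis unfolding sXY_def using sum_Sc[where F="\<lambda>d. fst d l *\<^sub>R gX (snd d)" and l=l and z=z and \<omega>=\<omega>, OF n] by simp
qed

lemma sXXo: "(\<Sum>i\<in>CL n l z \<omega>. outer (gX (W i \<omega>)) (gX (W i \<omega>))) = real n *\<^sub>R sXX l z n \<omega>"
  unfolding sXX_def Xo_D by (rule sum_Sc[OF n])

lemma E_Ybar: "Ybar n (\<lambda>i. I n i \<omega>) (\<lambda>i. Zf i \<omega>) (\<lambda>i. Y i (I n i \<omega>) \<omega>) l z = sY l z n \<omega> / sN l z n \<omega>"
  unfolding Ybar_def smean_def CL_def[symmetric] sYo card_Sc[OF n] using n by simp

lemma E_svar: "svar (cell n (\<lambda>i. I n i \<omega>) (\<lambda>i. Zf i \<omega>) l z) (\<lambda>i. Y i (I n i \<omega>) \<omega>)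
    = fsvar (sN l z n \<omega>) (1 / real n) (sY l z n \<omega>) (sYY l z n \<omega>)"
  unfolding CL_def[symmetric] svar_fsvar[OF finite_CL n] sYo sYo2 card_Sc[OF n] using n by simp

lemma E_scp: "scp (cell n (\<lambda>i. I n i \<omega>) (\<lambda>i. Zf i \<omega>) l z) (\<lambda>i. gX (W i \<omega>))
    = real n *\<^sub>R PAf (sN l z n \<omega>) (sX l z n \<omega>) (sXX l z n \<omega>)"
  unfolding CL_def[symmetric] scp_eq[OF finite_CL] sXo sXXo card_Sc[OF n] PAf_def outer_scale
  using n by (simp add: scaleR_diff_right)

lemma E_scross: "scross (cell n (\<lambda>i. I n i \<omega>) (\<lambda>i. Zf i \<omega>) l z) (\<lambda>i. gX (W i \<omega>)) (\<lambda>i. Y i (I n i \<omega>) \<omega>)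
    = real n *\<^sub>R PBf (sN l z n \<omega>) (sY l z n \<omega>) (sX l z n \<omega>) (sXY l z n \<omega>)"
  unfolding CL_def[symmetric] scross_eq sXo sXYo sYo card_Sc[OF n] PBf_def
  using n by (simp add: scaleR_diff_right)

lemma E_res: "svar (cell n (\<lambda>i. I n i \<omega>) (\<lambda>i. Zf i \<omega>) l z) (\<lambda>i. Y i (I n i \<omega>) \<omega> - gX (W i \<omega>) \<bullet> b)
    = fsvar (sN l z n \<omega>) (1 / real n) (sY l z n \<omega> - b \<bullet> sX l z n \<omega>)
        (sYY l z n \<omega> - 2 * (b \<bullet> sXY l z n \<omega>) + b \<bullet> (sXX l z n \<omega> *v b))"
  unfolding CL_def[symmetric] svar_fsvar[OF finite_CL n] resid_sums sYo sYo2 sXo sXYo sXXo card_Sc[OF n]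
  using n by (simp add: scaleR_matrix_vector_assoc[symmetric] diff_divide_distrib add_divide_distrib)

end


lemma strat_eq: "\<omega> \<in> space M \<Longrightarrow> stratum n (\<lambda>i. Zf i \<omega>) z = (\<Union>l\<in>{..<k}. CL n l z \<omega>)"
  unfolding stratum_def using I_range by (auto simp: CL_iff)

lemma sum_strat:
  fixes f :: "nat \<Rightarrow> 'b::comm_monoid_add"
  assumes w: "\<omega> \<in> space M"
  shows "(\<Sum>i\<in>stratum n (\<lambda>i. Zf i \<omega>) z. f i) = (\<Sum>l<k. \<Sum>i\<in>CL n l z \<omega>. f i)"
  unfolding strat_eq[OF w]
  by (rule sum.UNION_disjoint) (auto simp: CL_iff)

lemma card_strat:
  assumes w: "\<omega> \<in> space M"
  shows "real (card (stratum n (\<lambda>i. Zf i \<omega>) z)) = (\<Sum>l<k. real (card (CL n l z \<omega>)))"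
  using sum_strat[OF w, of "\<lambda>_. 1::real" n z] by simp

lemma E_scov:
  assumes w: "\<omega> \<in> space M" and n: "n > 0"
  shows "scov (stratum n (\<lambda>i. Zf i \<omega>) z) (\<lambda>i. gX (W i \<omega>))
    = (1 / (real (card (stratum n (\<lambda>i. Zf i \<omega>) z)) / real n - 1 / real n)) *\<^sub>R
        PAf (real (card (stratum n (\<lambda>i. Zf i \<omega>) z)) / real n) (\<Sum>l<k. sX l z n \<omega>) (\<Sum>l<k. sXX l z n \<omega>)"
proof -
  define m where "m = real (card (stratum n (\<lambda>i. Zf i \<omega>) z))"
  have sx: "(\<Sum>i\<in>stratum n (\<lambda>i. Zf i \<omega>) z. gX (W i \<omega>)) = real n *\<^sub>R (\<Sum>l<k. sX l z n \<omega>)"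
    unfolding sum_strat[OF w] sX_def Xo_D scaleR_sum_right by (rule sum.cong[OF refl], rule sum_Sc[OF n])
  have sxx: "(\<Sum>i\<in>stratum n (\<lambda>i. Zf i \<omega>) z. outer (gX (W i \<omega>)) (gX (W i \<omega>))) = real n *\<^sub>R (\<Sum>l<k. sXX l z n \<omega>)"
    unfolding sum_strat[OF w] sXX_def Xo_D scaleR_sum_right by (rule sum.cong[OF refl], rule sum_Sc[OF n])
  have fin: "finite (stratum n (\<lambda>i. Zf i \<omega>) z)" unfolding stratum_def by auto
  have "scov (stratum n (\<lambda>i. Zf i \<omega>) z) (\<lambda>i. gX (W i \<omega>))
      = (1 / (m - 1)) *\<^sub>R (real n *\<^sub>R (\<Sum>l<k. sXX l z n \<omega>) - (1 / m) *\<^sub>R ((real n * real n) *\<^sub>R outer (\<Sum>l<k. sX l z n \<omega>) (\<Sum>l<k. sX l z n \<omega>)))"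
    unfolding scov_def scp_eq[OF fin] sx sxx outer_scale m_def by simp
  also have "\<dots> = (1 / (m / real n - 1 / real n)) *\<^sub>R PAf (m / real n) (\<Sum>l<k. sX l z n \<omega>) (\<Sum>l<k. sXX l z n \<omega>)"
  proof (cases "m = 0")
    case True then show ?thesis unfolding PAf_def by simp
  next
    case False
    have e1: "1 / (m / real n - 1 / real n) = real n / (m - 1)"
      using n by (simp add: field_simps diff_divide_distrib[symmetric])
    show ?thesis unfolding PAf_def e1 using n False
      by (simp add: scaleR_diff_right field_simps)
  qed
  finally show ?thesis unfolding m_def .
qed

lemma E_pool:
  assumes n: "n > 0"
  shows "beta_pool k n (\<lambda>i. I n i \<omega>) (\<lambda>i. Zf i \<omega>) (\<lambda>i. gX (W i \<omega>)) (\<lambda>i. Y i (I n i \<omega>) \<omega>) z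
    = matrix_inv (real n *\<^sub>R (\<Sum>l<k. PAf (sN l z n \<omega>) (sX l z n \<omega>) (sXX l z n \<omega>)))
        *v (real n *\<^sub>R (\<Sum>l<k. PBf (sN l z n \<omega>) (sY l z n \<omega>) (sX l z n \<omega>) (sXY l z n \<omega>)))"
  unfolding beta_pool_def scaleR_sum_right
  by (intro arg_cong2[where f="\<lambda>A b. matrix_inv A *v b"] sum.cong refl E_scp[OF n] E_scross[OF n]) auto

lemma E_bhat:
  assumes n: "n > 0" and l: "l < k"
  shows "beta_hat n (\<lambda>i. I n i \<omega>) (\<lambda>i. Zf i \<omega>) (\<lambda>i. gX (W i \<omega>)) (\<lambda>i. Y i (I n i \<omega>) \<omega>) l z
    = matrix_inv (real n *\<^sub>R PAf (sN l z n \<omega>) (sX l z n \<omega>) (sXX l z n \<omega>))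
        *v (real n *\<^sub>R PBf (sN l z n \<omega>) (sY l z n \<omega>) (sX l z n \<omega>) (sXY l z n \<omega>))"
  unfolding beta_hat_def E_scp[OF n l] E_scross[OF n l] ..

end


lemma cipo_lim_eq: "cipo M X a \<Longrightarrow> a = a' \<Longrightarrow> cipo M X a'" by simp

lemma open_det_nz: "open {A :: real^'n^'n. det A \<noteq> 0}"
  by (rule open_Collect_neq) (auto intro!: continuous_at_imp_continuous_on isCont_det)

locale trial2 = trial +
  assumes posdef: "\<forall>z\<in>Zs. pos_def (cvar_vec M (\<lambda>\<omega>. gZ (W 0 \<omega>)) z (\<lambda>\<omega>. gX (W 0 \<omega>)))"
begin

definition "VV z = mXX z - outer (mX z) (mX z)"
definition "CC l z = mXY l z - mY l z *\<^sub>R mX z"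
definition "BB l z = matrix_inv (VV z) *v CC l z"
definition "RES l z b = mYY l z - 2 * (b \<bullet> mXY l z) + b \<bullet> (mXX z *v b) - (mY l z - b \<bullet> mX z)\<^sup>2"

lemma det_VV: "z \<in> Zs \<Longrightarrow> det (VV z) \<noteq> 0"
  using posdef posdef_det VV_eq unfolding VV_def by metis

lemma qq_pos: "l < k \<Longrightarrow> z \<in> Zs \<Longrightarrow> qq l z > 0"
  unfolding qq_def using pi_range pz_pos by auto

lemma cipo_fsvar:
  assumes "cipo M N q" "cipo M ninv 0" "cipo M s1 (q * a)" "cipo M s2 (q * b)" "q \<noteq> 0"
  shows "cipo M (\<lambda>n \<omega>. fsvar (N n \<omega>) (ninv n \<omega>) (s1 n \<omega>) (s2 n \<omega>)) (b - a\<^sup>2)"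
proof -
  have "cipo M (\<lambda>n \<omega>. (s2 n \<omega> - (s1 n \<omega>)\<^sup>2 / N n \<omega>) / (N n \<omega> - ninv n \<omega>)) ((q * b - (q * a)\<^sup>2 / q) / (q - 0))"
  proof (intro cipo_divide[OF fm] cipo_diff[OF fm])
    show "cipo M (\<lambda>n \<omega>. (s1 n \<omega>)\<^sup>2) ((q * a)\<^sup>2)"
      using cipo_cont[OF assms(3), of "\<lambda>x. x\<^sup>2"] by (simp add: continuous_intros)
  qed (use assms in auto)
  moreover have "(q * b - (q * a)\<^sup>2 / q) / (q - 0) = b - a\<^sup>2"
    using assms(5) by (simp add: power2_eq_square field_simps)
  ultimately show ?thesis unfolding fsvar_def by simp
qed


lemma cninv: "cipo M (\<lambda>n \<omega>. 1 / real n) 0"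
  by (rule cipo_det) (rule lim_const_over_n)

context
  fixes l :: nat and z assumes l: "l < k" and z: "z \<in> Zs"
begin

lemma qpos: "qq l z > 0" by (rule qq_pos[OF l z])

lemma cN: "cipo M (sN l z) (qq l z)"
  using lim_N[OF l z] unfolding sN_def[abs_def] by simp
lemma cY: "cipo M (sY l z) (qq l z * mY l z)"
  using lim_Y[OF l z] unfolding sY_def[abs_def] by simp
lemma cYY: "cipo M (sYY l z) (qq l z * mYY l z)"
  using lim_YY[OF l z] unfolding sYY_def[abs_def] by simp
lemma cX: "cipo M (sX l z) (qq l z *\<^sub>R mX z)"
  using lim_X[OF l z] unfolding sX_def[abs_def] by simp
lemma cXY: "cipo M (sXY l z) (qq l z *\<^sub>R mXY l z)"
  using lim_XY[OF l z] unfolding sXY_def[abs_def] by simp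
lemma cXX: "cipo M (sXX l z) (qq l z *\<^sub>R mXX z)"
  using lim_XX[OF l z] unfolding sXX_def[abs_def] by simp

lemma cPA: "cipo M (\<lambda>n \<omega>. PAf (sN l z n \<omega>) (sX l z n \<omega>) (sXX l z n \<omega>)) (qq l z *\<^sub>R VV z)"
proof -
  have "cipo M (\<lambda>n \<omega>. sXX l z n \<omega> - (1 / sN l z n \<omega>) *\<^sub>R outer (sX l z n \<omega>) (sX l z n \<omega>))
      (qq l z *\<^sub>R mXX z - (1 / qq l z) *\<^sub>R outer (qq l z *\<^sub>R mX z) (qq l z *\<^sub>R mX z))"
    using qpos by (intro cipo_diff[OF fm] cipo_scaleR[OF fm] cipo_divide[OF fm] cipo_outer[OF fm] cipo_const cN cX cXX) auto
  moreover have "qq l z *\<^sub>R mXX z - (1 / qq l z) *\<^sub>R outer (qq l z *\<^sub>R mX z) (qq l z *\<^sub>R mX z) = qq l z *\<^sub>R VV z"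
    unfolding VV_def outer_scale using qpos by (simp add: scaleR_diff_right)
  ultimately show ?thesis unfolding PAf_def by simp
qed

lemma cPB: "cipo M (\<lambda>n \<omega>. PBf (sN l z n \<omega>) (sY l z n \<omega>) (sX l z n \<omega>) (sXY l z n \<omega>)) (qq l z *\<^sub>R CC l z)"
proof -
  have "cipo M (\<lambda>n \<omega>. sXY l z n \<omega> - (sY l z n \<omega> / sN l z n \<omega>) *\<^sub>R sX l z n \<omega>)
      (qq l z *\<^sub>R mXY l z - (qq l z * mY l z / qq l z) *\<^sub>R (qq l z *\<^sub>R mX z))"
    using qpos by (intro cipo_diff[OF fm] cipo_scaleR[OF fm] cipo_divide[OF fm] cN cY cX cXY) auto
  moreover have "qq l z *\<^sub>R mXY l z - (qq l z * mY l z / qq l z) *\<^sub>R (qq l z *\<^sub>R mX z) = qq l z *\<^sub>R CC l z"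
    unfolding CC_def using qpos by (simp add: scaleR_diff_right)
  ultimately show ?thesis unfolding PBf_def by simp
qed

lemma cYbar: "cipo M (\<lambda>n \<omega>. Ybar n (\<lambda>i. I n i \<omega>) (\<lambda>i. Zf i \<omega>) (\<lambda>i. Y i (I n i \<omega>) \<omega>) l z) (mY l z)"
proof -
  have "cipo M (\<lambda>n \<omega>. sY l z n \<omega> / sN l z n \<omega>) (qq l z * mY l z / qq l z)"
    using qpos by (intro cipo_divide[OF fm] cN cY) auto
  then have h: "cipo M (\<lambda>n \<omega>. sY l z n \<omega> / sN l z n \<omega>) (mY l z)" using qpos by simp
  show ?thesis by (rule cipo_cong_ev[where N=1, OF h]) (simp add: E_Ybar l)
qed

lemma cSvar: "cipo M (\<lambda>n \<omega>. svar (cell n (\<lambda>i. I n i \<omega>) (\<lambda>i. Zf i \<omega>) l z) (\<lambda>i. Y i (I n i \<omega>) \<omega>)) (cvar M (Zf 0) z (Y 0 l))"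
proof -
  have "cipo M (\<lambda>n \<omega>. fsvar (sN l z n \<omega>) (1 / real n) (sY l z n \<omega>) (sYY l z n \<omega>)) (mYY l z - (mY l z)\<^sup>2)"
    using qpos by (intro cipo_fsvar[OF cN cninv cY cYY]) auto
  moreover have "cvar M (Zf 0) z (Y 0 l) = mYY l z - (mY l z)\<^sup>2"
  proof -
    have "cvar M (Zf 0) z (Y 0 l) = ce z (\<lambda>\<omega>. Y 0 l \<omega> * Y 0 l \<omega>) - ce z (Y 0 l) * ce z (Y 0 l)"
      unfolding cvar_ccov using l by (intro ccov_eq[OF z] iY2) auto
    then show ?thesis unfolding mYY_def mY_def by (simp add: power2_eq_square)
  qed
  ultimately have h: "cipo M (\<lambda>n \<omega>. fsvar (sN l z n \<omega>) (1 / real n) (sY l z n \<omega>) (sYY l z n \<omega>)) (cvar M (Zf 0) z (Y 0 l))"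
    by simp
  show ?thesis by (rule cipo_cong_ev[where N=1, OF h]) (simp add: E_svar l)
qed

lemma cBeta: "cipo M (\<lambda>n \<omega>. beta_hat n (\<lambda>i. I n i \<omega>) (\<lambda>i. Zf i \<omega>) (\<lambda>i. gX (W i \<omega>)) (\<lambda>i. Y i (I n i \<omega>) \<omega>) l z) (BB l z)"
proof -
  let ?PA = "\<lambda>n \<omega>. PAf (sN l z n \<omega>) (sX l z n \<omega>) (sXX l z n \<omega>)"
  let ?PB = "\<lambda>n \<omega>. PBf (sN l z n \<omega>) (sY l z n \<omega>) (sX l z n \<omega>) (sXY l z n \<omega>)"
  have dq: "det (qq l z *\<^sub>R VV z) \<noteq> 0"
    using det_VV[OF z] qpos scalar_invertible[of "qq l z" "VV z"] by (simp add: invertible_det_nz)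
  have h1: "cipo M (\<lambda>n \<omega>. matrix_inv (?PA n \<omega>) *v ?PB n \<omega>) (matrix_inv (qq l z *\<^sub>R VV z) *v (qq l z *\<^sub>R CC l z))"
    by (rule cipo_minv_mult[OF fm cPA cPB dq])
  then have h1': "cipo M (\<lambda>n \<omega>. matrix_inv (?PA n \<omega>) *v ?PB n \<omega>) (BB l z)"
    unfolding BB_def using minv_scale[OF det_VV[OF z], of "qq l z"] qpos by simp
  have h2: "cipo M (\<lambda>n \<omega>. matrix_inv (real (max n 1) *\<^sub>R ?PA n \<omega>) *v (real (max n 1) *\<^sub>R ?PB n \<omega>)) (BB l z)"
  proof (rule cipo_near[OF fm h1' cPA open_det_nz])
    show "qq l z *\<^sub>R VV z \<in> {A. det A \<noteq> 0}" using dq by simp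
    fix n \<omega> assume "?PA n \<omega> \<in> {A. det A \<noteq> 0}"
    then show "matrix_inv (real (max n 1) *\<^sub>R ?PA n \<omega>) *v (real (max n 1) *\<^sub>R ?PB n \<omega>) = matrix_inv (?PA n \<omega>) *v ?PB n \<omega>"
      by (intro minv_scale) auto
  qed
  show ?thesis
    by (rule cipo_cong_ev[where N=1, OF h2]) (simp add: E_bhat l max_def)
qed

lemma cRes:
  assumes B: "cipo M B b0"
  shows "cipo M (\<lambda>n \<omega>. svar (cell n (\<lambda>i. I n i \<omega>) (\<lambda>i. Zf i \<omega>) l z) (\<lambda>i. Y i (I n i \<omega>) \<omega> - gX (W i \<omega>) \<bullet> B n \<omega>)) (RES l z b0)"
proof -
  have s1: "cipo M (\<lambda>n \<omega>. sY l z n \<omega> - B n \<omega> \<bullet> sX l z n \<omega>) (qq l z * (mY l z - b0 \<bullet> mX z))"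
    by (rule cipo_lim_eq[OF cipo_diff[OF fm cY cipo_inner[OF fm B cX]]]) (simp add: algebra_simps)
  have s2: "cipo M (\<lambda>n \<omega>. sYY l z n \<omega> - 2 * (B n \<omega> \<bullet> sXY l z n \<omega>) + B n \<omega> \<bullet> (sXX l z n \<omega> *v B n \<omega>))
      (qq l z * (mYY l z - 2 * (b0 \<bullet> mXY l z) + b0 \<bullet> (mXX z *v b0)))"
    by (rule cipo_lim_eq[OF cipo_add[OF fm cipo_diff[OF fm cYY cipo_mult[OF fm cipo_const cipo_inner[OF fm B cXY]]]
          cipo_inner[OF fm B cipo_mvmult[OF fm cXX B]]]])
       (simp add: algebra_simps scaleR_matrix_vector_assoc[symmetric])
  have h: "cipo M (\<lambda>n \<omega>. fsvar (sN l z n \<omega>) (1 / real n) (sY l z n \<omega> - B n \<omega> \<bullet> sX l z n \<omega>)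
        (sYY l z n \<omega> - 2 * (B n \<omega> \<bullet> sXY l z n \<omega>) + B n \<omega> \<bullet> (sXX l z n \<omega> *v B n \<omega>))) (RES l z b0)"
    unfolding RES_def using qpos by (intro cipo_fsvar[OF cN cninv s1 s2]) auto
  show ?thesis by (rule cipo_cong_ev[where N=1, OF h]) (simp add: E_res l)
qed

end


lemma sum_qq: "(\<Sum>l<k. qq l z) = pz z"
  unfolding qq_def using pi_sum by (simp add: sum_distrib_right[symmetric])

context
  fixes z assumes z: "z \<in> Zs"
begin

lemma cWt: "cipo M (\<lambda>n \<omega>. wt n (\<lambda>i. Zf i \<omega>) z) (pz z)"
  using wlln_stratum[of z] unfolding wt_def by simp

lemma cTX: "cipo M (\<lambda>n \<omega>. \<Sum>l<k. sX l z n \<omega>) (pz z *\<^sub>R mX z)"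
  by (rule cipo_lim_eq[OF cipo_sum[OF fm finite_lessThan cX]]) (auto simp: z scaleR_sum_left[symmetric] sum_qq)

lemma cTXX: "cipo M (\<lambda>n \<omega>. \<Sum>l<k. sXX l z n \<omega>) (pz z *\<^sub>R mXX z)"
  by (rule cipo_lim_eq[OF cipo_sum[OF fm finite_lessThan cXX]]) (auto simp: z scaleR_sum_left[symmetric] sum_qq)

lemma cScov: "cipo M (\<lambda>n \<omega>. scov (stratum n (\<lambda>i. Zf i \<omega>) z) (\<lambda>i. gX (W i \<omega>))) (VV z)"
proof -
  define TN where "TN n \<omega> = real (card (stratum n (\<lambda>i. Zf i \<omega>) z)) / real n" for n \<omega>
  have cTN: "cipo M TN (pz z)" using wlln_stratum[of z] unfolding TN_def[abs_def] by simp
  have p: "pz z > 0" by (rule pz_pos[OF z])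
  have h: "cipo M (\<lambda>n \<omega>. (1 / (TN n \<omega> - 1 / real n)) *\<^sub>R PAf (TN n \<omega>) (\<Sum>l<k. sX l z n \<omega>) (\<Sum>l<k. sXX l z n \<omega>))
      ((1 / (pz z - 0)) *\<^sub>R (pz z *\<^sub>R mXX z - (1 / pz z) *\<^sub>R outer (pz z *\<^sub>R mX z) (pz z *\<^sub>R mX z)))"
    unfolding PAf_def using p
    by (intro cipo_scaleR[OF fm] cipo_divide[OF fm] cipo_diff[OF fm] cipo_outer[OF fm] cipo_const cTN cninv cTX cTXX) auto
  have e: "(1 / (pz z - 0)) *\<^sub>R (pz z *\<^sub>R mXX z - (1 / pz z) *\<^sub>R outer (pz z *\<^sub>R mX z) (pz z *\<^sub>R mX z)) = VV z"
    unfolding VV_def outer_scale using p by (simp add: scaleR_diff_right)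
  show ?thesis
    by (rule cipo_cong_ev[where N=1, OF h[unfolded e]]) (simp add: E_scov TN_def)
qed

lemma cPool: "cipo M (\<lambda>n \<omega>. beta_pool k n (\<lambda>i. I n i \<omega>) (\<lambda>i. Zf i \<omega>) (\<lambda>i. gX (W i \<omega>)) (\<lambda>i. Y i (I n i \<omega>) \<omega>) z)
    (\<Sum>l<k. \<pi> l *\<^sub>R BB l z)"
proof -
  let ?PA = "\<lambda>n \<omega>. \<Sum>l<k. PAf (sN l z n \<omega>) (sX l z n \<omega>) (sXX l z n \<omega>)"
  let ?PB = "\<lambda>n \<omega>. \<Sum>l<k. PBf (sN l z n \<omega>) (sY l z n \<omega>) (sX l z n \<omega>) (sXY l z n \<omega>)"
  have p: "pz z > 0" by (rule pz_pos[OF z])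
  have cA: "cipo M ?PA (pz z *\<^sub>R VV z)"
    by (rule cipo_lim_eq[OF cipo_sum[OF fm finite_lessThan cPA]]) (auto simp: z scaleR_sum_left[symmetric] sum_qq)
  have cB: "cipo M ?PB (pz z *\<^sub>R (\<Sum>l<k. \<pi> l *\<^sub>R CC l z))"
    by (rule cipo_lim_eq[OF cipo_sum[OF fm finite_lessThan cPB]])
       (auto simp: z scaleR_sum_right qq_def mult.commute)
  have dq: "det (pz z *\<^sub>R VV z) \<noteq> 0"
    using det_VV[OF z] p scalar_invertible[of "pz z" "VV z"] by (simp add: invertible_det_nz)
  have lim: "matrix_inv (pz z *\<^sub>R VV z) *v (pz z *\<^sub>R (\<Sum>l<k. \<pi> l *\<^sub>R CC l z)) = (\<Sum>l<k. \<pi> l *\<^sub>R BB l z)"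
  proof -
    have "matrix_inv (pz z *\<^sub>R VV z) *v (pz z *\<^sub>R (\<Sum>l<k. \<pi> l *\<^sub>R CC l z)) = matrix_inv (VV z) *v (\<Sum>l<k. \<pi> l *\<^sub>R CC l z)"
      using minv_scale[OF det_VV[OF z]] p by simp
    also have "\<dots> = (\<Sum>l<k. \<pi> l *\<^sub>R (matrix_inv (VV z) *v CC l z))"
      by (simp add: matrix_vector_mult_def vec_eq_iff sum_component sum_distrib_left mult_ac)
         (subst sum.swap, simp add: sum_distrib_left mult_ac)
    finally show ?thesis unfolding BB_def .
  qed
  have h1: "cipo M (\<lambda>n \<omega>. matrix_inv (?PA n \<omega>) *v ?PB n \<omega>) (\<Sum>l<k. \<pi> l *\<^sub>R BB l z)"
    using cipo_minv_mult[OF fm cA cB dq] unfolding lim .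
  have h2: "cipo M (\<lambda>n \<omega>. matrix_inv (real (max n 1) *\<^sub>R ?PA n \<omega>) *v (real (max n 1) *\<^sub>R ?PB n \<omega>)) (\<Sum>l<k. \<pi> l *\<^sub>R BB l z)"
  proof (rule cipo_near[OF fm h1 cA open_det_nz])
    show "pz z *\<^sub>R VV z \<in> {A. det A \<noteq> 0}" using dq by simp
    fix n \<omega> assume "?PA n \<omega> \<in> {A. det A \<noteq> 0}"
    then show "matrix_inv (real (max n 1) *\<^sub>R ?PA n \<omega>) *v (real (max n 1) *\<^sub>R ?PB n \<omega>) = matrix_inv (?PA n \<omega>) *v ?PB n \<omega>"
      by (intro minv_scale) auto
  qed
  show ?thesis
    by (rule cipo_cong_ev[where N=1, OF h2]) (simp add: E_pool max_def)
qed

end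

end


context trial2
begin

lemma beta_pop_BB: "z \<in> Zs \<Longrightarrow> l < k \<Longrightarrow> beta_pop M (Zf 0) (\<lambda>\<omega>. gX (W 0 \<omega>)) (Y 0 l) z = BB l z"
  unfolding beta_pop_def BB_def by (simp add: VV_eq CC_eq VV_def CC_def)

context
  fixes t s assumes t: "t < k" and s: "s < k"
begin

lemma resU: "cipo M (\<lambda>n \<omega>. sigU_hat \<pi> Zs n (\<lambda>i. I n i \<omega>) (\<lambda>i. Zf i \<omega>) (\<lambda>i. Y i (I n i \<omega>) \<omega>) t s)
    (sigU M (Zf 0) (\<lambda>l. Y 0 l) \<pi> t s)"
proof -
  have h: "cipo M (\<lambda>n \<omega>. sigU_hat \<pi> Zs n (\<lambda>i. I n i \<omega>) (\<lambda>i. Zf i \<omega>) (\<lambda>i. Y i (I n i \<omega>) \<omega>) t s)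
      (\<Sum>z\<in>Zs. pz z * (cvar M (Zf 0) z (Y 0 t) / \<pi> t + cvar M (Zf 0) z (Y 0 s) / \<pi> s))"
    unfolding sigU_hat_def
    using pi_range t s
    by (intro cipo_sum[OF fm C3_fin] cipo_mult[OF fm] cipo_add[OF fm] cipo_divide[OF fm] cWt cSvar cipo_const) auto
  have "sigU M (Zf 0) (\<lambda>l. Y 0 l) \<pi> t s = (\<Sum>z\<in>Zs. pz z * (cvar M (Zf 0) z (Y 0 t) / \<pi> t + cvar M (Zf 0) z (Y 0 s) / \<pi> s))"
    unfolding sigU_def by (rule int_Z)
  then show ?thesis using h by simp
qed

lemma resV: "cipo M (\<lambda>n \<omega>. sigV_hat Zs n (\<lambda>i. I n i \<omega>) (\<lambda>i. Zf i \<omega>) (\<lambda>i. Y i (I n i \<omega>) \<omega>) t s)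
    (sigV M (Zf 0) (\<lambda>l. Y 0 l) t s)"
proof -
  have h: "cipo M (\<lambda>n \<omega>. sigV_hat Zs n (\<lambda>i. I n i \<omega>) (\<lambda>i. Zf i \<omega>) (\<lambda>i. Y i (I n i \<omega>) \<omega>) t s)
      ((\<Sum>z\<in>Zs. pz z * (mY t z - mY s z)\<^sup>2) - (\<Sum>z\<in>Zs. pz z * (mY t z - mY s z))\<^sup>2)"
    unfolding sigV_hat_def theta_hat_def
  proof (intro cipo_diff[OF fm])
    have c1: "cipo M (\<lambda>n \<omega>. \<Sum>z\<in>Zs. wt n (\<lambda>i. Zf i \<omega>) z * (Ybar n (\<lambda>i. I n i \<omega>) (\<lambda>i. Zf i \<omega>) (\<lambda>i. Y i (I n i \<omega>) \<omega>) t z - Ybar n (\<lambda>i. I n i \<omega>) (\<lambda>i. Zf i \<omega>) (\<lambda>i. Y i (I n i \<omega>) \<omega>) s z))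
        (\<Sum>z\<in>Zs. pz z * (mY t z - mY s z))"
      using t s by (intro cipo_sum[OF fm C3_fin] cipo_mult[OF fm] cipo_diff[OF fm] cWt cYbar) auto
    show "cipo M (\<lambda>n \<omega>. (\<Sum>z\<in>Zs. wt n (\<lambda>i. Zf i \<omega>) z * (Ybar n (\<lambda>i. I n i \<omega>) (\<lambda>i. Zf i \<omega>) (\<lambda>i. Y i (I n i \<omega>) \<omega>) t z - Ybar n (\<lambda>i. I n i \<omega>) (\<lambda>i. Zf i \<omega>) (\<lambda>i. Y i (I n i \<omega>) \<omega>) s z))\<^sup>2)
        ((\<Sum>z\<in>Zs. pz z * (mY t z - mY s z))\<^sup>2)"
      using cipo_cont[OF c1, of "\<lambda>x. x\<^sup>2"] by (simp add: continuous_intros)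
    have c2: "cipo M (\<lambda>n \<omega>. \<Sum>z\<in>Zs. wt n (\<lambda>i. Zf i \<omega>) z * (Ybar n (\<lambda>i. I n i \<omega>) (\<lambda>i. Zf i \<omega>) (\<lambda>i. Y i (I n i \<omega>) \<omega>) t z - Ybar n (\<lambda>i. I n i \<omega>) (\<lambda>i. Zf i \<omega>) (\<lambda>i. Y i (I n i \<omega>) \<omega>) s z)\<^sup>2)
        (\<Sum>z\<in>Zs. pz z * (mY t z - mY s z)\<^sup>2)"
    proof (intro cipo_sum[OF fm C3_fin] cipo_mult[OF fm] cWt)
      fix z assume z: "z \<in> Zs"
      have "cipo M (\<lambda>n \<omega>. Ybar n (\<lambda>i. I n i \<omega>) (\<lambda>i. Zf i \<omega>) (\<lambda>i. Y i (I n i \<omega>) \<omega>) t z - Ybar n (\<lambda>i. I n i \<omega>) (\<lambda>i. Zf i \<omega>) (\<lambda>i. Y i (I n i \<omega>) \<omega>) s z)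
          (mY t z - mY s z)"
        using t s z by (intro cipo_diff[OF fm] cYbar) auto
      then show "cipo M (\<lambda>n \<omega>. (Ybar n (\<lambda>i. I n i \<omega>) (\<lambda>i. Zf i \<omega>) (\<lambda>i. Y i (I n i \<omega>) \<omega>) t z - Ybar n (\<lambda>i. I n i \<omega>) (\<lambda>i. Zf i \<omega>) (\<lambda>i. Y i (I n i \<omega>) \<omega>) s z)\<^sup>2)
          ((mY t z - mY s z)\<^sup>2)"
        using cipo_cont[of M _ "mY t z - mY s z" "\<lambda>x. x\<^sup>2"] by (simp add: continuous_intros)
    qed auto
    then show "cipo M (\<lambda>n \<omega>. \<Sum>z\<in>Zs. wt n (\<lambda>i. Zf i \<omega>) z * (Ybar n (\<lambda>i. I n i \<omega>) (\<lambda>i. Zf i \<omega>) (\<lambda>i. Y i (I n i \<omega>) \<omega>) t z - Ybar n (\<lambda>i. I n i \<omega>) (\<lambda>i. Zf i \<omega>) (\<lambda>i. Y i (I n i \<omega>) \<omega>) s z)\<^sup>2)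
        (\<Sum>z\<in>Zs. pz z * (mY t z - mY s z)\<^sup>2)" .
  qed
  have e: "ce z (\<lambda>\<omega>'. Y 0 t \<omega>' - Y 0 s \<omega>') = mY t z - mY s z" for z
    unfolding mY_def using iY t s by (simp add: ce_diff)
  have "sigV M (Zf 0) (\<lambda>l. Y 0 l) t s = (\<Sum>z\<in>Zs. pz z * (mY t z - mY s z)\<^sup>2) - (\<Sum>z\<in>Zs. pz z * (mY t z - mY s z))\<^sup>2"
    unfolding sigV_def e using pvar_Z[of "\<lambda>z. mY t z - mY s z"] by simp
  then show ?thesis using h by simp
qed


lemma resA: "cipo M (\<lambda>n \<omega>. sigA_hat \<pi> Zs n (\<lambda>i. I n i \<omega>) (\<lambda>i. Zf i \<omega>) (\<lambda>i. gX (W i \<omega>)) (\<lambda>i. Y i (I n i \<omega>) \<omega>) t s)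
    (sigA M (Zf 0) (\<lambda>\<omega>. gX (W 0 \<omega>)) (\<lambda>l. Y 0 l) \<pi> t s)"
proof -
  define Q where "Q z = (BB t z - BB s z) \<bullet> (VV z *v (BB t z - BB s z))" for z
  define A where "A z = RES t z (BB t z) / \<pi> t + RES s z (BB s z) / \<pi> s" for z
  have h: "cipo M (\<lambda>n \<omega>. sigA_hat \<pi> Zs n (\<lambda>i. I n i \<omega>) (\<lambda>i. Zf i \<omega>) (\<lambda>i. gX (W i \<omega>)) (\<lambda>i. Y i (I n i \<omega>) \<omega>) t s)
      (\<Sum>z\<in>Zs. pz z * (A z + Q z))"
    unfolding sigA_hat_def A_def Q_def add.assoc[symmetric]
  proof (intro cipo_sum[OF fm C3_fin] cipo_mult[OF fm] cipo_add[OF fm] cipo_divide[OF fm] cWt cipo_const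
      cipo_inner[OF fm] cipo_mvmult[OF fm] cipo_diff[OF fm] cScov)
    fix z assume z: "z \<in> Zs"
    show "cipo M (\<lambda>n \<omega>. beta_hat n (\<lambda>i. I n i \<omega>) (\<lambda>i. Zf i \<omega>) (\<lambda>i. gX (W i \<omega>)) (\<lambda>i. Y i (I n i \<omega>) \<omega>) t z) (BB t z)"
      by (rule cBeta[OF t z])
    show "cipo M (\<lambda>n \<omega>. beta_hat n (\<lambda>i. I n i \<omega>) (\<lambda>i. Zf i \<omega>) (\<lambda>i. gX (W i \<omega>)) (\<lambda>i. Y i (I n i \<omega>) \<omega>) s z) (BB s z)"
      by (rule cBeta[OF s z])
    show "cipo M (\<lambda>n \<omega>. svar (cell n (\<lambda>i. I n i \<omega>) (\<lambda>i. Zf i \<omega>) t z)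
             (\<lambda>i. Y i (I n i \<omega>) \<omega> - gX (W i \<omega>) \<bullet> beta_hat n (\<lambda>i. I n i \<omega>) (\<lambda>i. Zf i \<omega>) (\<lambda>i. gX (W i \<omega>)) (\<lambda>i. Y i (I n i \<omega>) \<omega>) t z))
          (RES t z (BB t z))"
      by (rule cRes[OF t z cBeta[OF t z]])
    show "cipo M (\<lambda>n \<omega>. svar (cell n (\<lambda>i. I n i \<omega>) (\<lambda>i. Zf i \<omega>) s z)
             (\<lambda>i. Y i (I n i \<omega>) \<omega> - gX (W i \<omega>) \<bullet> beta_hat n (\<lambda>i. I n i \<omega>) (\<lambda>i. Zf i \<omega>) (\<lambda>i. gX (W i \<omega>)) (\<lambda>i. Y i (I n i \<omega>) \<omega>) s z))
          (RES s z (BB s z))"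
      by (rule cRes[OF s z cBeta[OF s z]])
  qed (use pi_range t s in \<open>auto intro: cBeta\<close>)
  have eA: "(cvar M (Zf 0) z (\<lambda>\<omega>'. Y 0 t \<omega>' - gX (W 0 \<omega>') \<bullet> beta_pop M (Zf 0) (\<lambda>\<omega>. gX (W 0 \<omega>)) (Y 0 t) z) / \<pi> t
          + cvar M (Zf 0) z (\<lambda>\<omega>'. Y 0 s \<omega>' - gX (W 0 \<omega>') \<bullet> beta_pop M (Zf 0) (\<lambda>\<omega>. gX (W 0 \<omega>)) (Y 0 s) z) / \<pi> s) = A z"
    if z: "z \<in> Zs" for z
    unfolding A_def beta_pop_BB[OF z t] beta_pop_BB[OF z s] cvar_resid[OF z t] cvar_resid[OF z s] RES_def ..
  have eQ: "(beta_pop M (Zf 0) (\<lambda>\<omega>. gX (W 0 \<omega>)) (Y 0 t) z - beta_pop M (Zf 0) (\<lambda>\<omega>. gX (W 0 \<omega>)) (Y 0 s) z) \<bullet>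
       (cvar_vec M (Zf 0) z (\<lambda>\<omega>. gX (W 0 \<omega>)) *v (beta_pop M (Zf 0) (\<lambda>\<omega>. gX (W 0 \<omega>)) (Y 0 t) z - beta_pop M (Zf 0) (\<lambda>\<omega>. gX (W 0 \<omega>)) (Y 0 s) z))
      = Q z" if z: "z \<in> Zs" for z
    unfolding Q_def beta_pop_BB[OF z t] beta_pop_BB[OF z s] VV_eq[OF z] VV_def ..
  have "sigA M (Zf 0) (\<lambda>\<omega>. gX (W 0 \<omega>)) (\<lambda>l. Y 0 l) \<pi> t s
      = (\<Sum>z\<in>Zs. pz z * (cvar M (Zf 0) z (\<lambda>\<omega>'. Y 0 t \<omega>' - gX (W 0 \<omega>') \<bullet> beta_pop M (Zf 0) (\<lambda>\<omega>. gX (W 0 \<omega>)) (Y 0 t) z) / \<pi> t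
          + cvar M (Zf 0) z (\<lambda>\<omega>'. Y 0 s \<omega>' - gX (W 0 \<omega>') \<bullet> beta_pop M (Zf 0) (\<lambda>\<omega>. gX (W 0 \<omega>)) (Y 0 s) z) / \<pi> s))
      + (\<Sum>z\<in>Zs. pz z * ((beta_pop M (Zf 0) (\<lambda>\<omega>. gX (W 0 \<omega>)) (Y 0 t) z - beta_pop M (Zf 0) (\<lambda>\<omega>. gX (W 0 \<omega>)) (Y 0 s) z) \<bullet>
       (cvar_vec M (Zf 0) z (\<lambda>\<omega>. gX (W 0 \<omega>)) *v (beta_pop M (Zf 0) (\<lambda>\<omega>. gX (W 0 \<omega>)) (Y 0 t) z - beta_pop M (Zf 0) (\<lambda>\<omega>. gX (W 0 \<omega>)) (Y 0 s) z))))"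
    unfolding sigA_def
    by (subst int_Z[symmetric], subst int_Z[symmetric]) (rule refl)
  also have "\<dots> = (\<Sum>z\<in>Zs. pz z * A z) + (\<Sum>z\<in>Zs. pz z * Q z)"
    using eA eQ by simp
  also have "\<dots> = (\<Sum>z\<in>Zs. pz z * (A z + Q z))"
    by (simp add: sum.distrib distrib_left)
  finally show ?thesis using h by simp
qed

lemma beta_bar_BB: "z \<in> Zs \<Longrightarrow> beta_bar M (Zf 0) (\<lambda>\<omega>. gX (W 0 \<omega>)) (\<lambda>l. Y 0 l) \<pi> k z = (\<Sum>l<k. \<pi> l *\<^sub>R BB l z)"
  unfolding beta_bar_def by (intro sum.cong refl) (simp add: beta_pop_BB)

lemma resB: "cipo M (\<lambda>n \<omega>. sigB_hat k \<pi> Zs n (\<lambda>i. I n i \<omega>) (\<lambda>i. Zf i \<omega>) (\<lambda>i. gX (W i \<omega>)) (\<lambda>i. Y i (I n i \<omega>) \<omega>) t s)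
    (sigB M (Zf 0) (\<lambda>\<omega>. gX (W 0 \<omega>)) (\<lambda>l. Y 0 l) \<pi> k t s)"
proof -
  define bb where "bb z = (\<Sum>l<k. \<pi> l *\<^sub>R BB l z)" for z
  define A where "A z = RES t z (bb z) / \<pi> t + RES s z (bb z) / \<pi> s" for z
  have h: "cipo M (\<lambda>n \<omega>. sigB_hat k \<pi> Zs n (\<lambda>i. I n i \<omega>) (\<lambda>i. Zf i \<omega>) (\<lambda>i. gX (W i \<omega>)) (\<lambda>i. Y i (I n i \<omega>) \<omega>) t s)
      (\<Sum>z\<in>Zs. pz z * A z)"
    unfolding sigB_hat_def A_def
  proof (intro cipo_sum[OF fm C3_fin] cipo_mult[OF fm] cipo_add[OF fm] cipo_divide[OF fm] cWt cipo_const)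
    fix z assume z: "z \<in> Zs"
    show "cipo M (\<lambda>n \<omega>. svar (cell n (\<lambda>i. I n i \<omega>) (\<lambda>i. Zf i \<omega>) t z)
             (\<lambda>i. Y i (I n i \<omega>) \<omega> - gX (W i \<omega>) \<bullet> beta_pool k n (\<lambda>i. I n i \<omega>) (\<lambda>i. Zf i \<omega>) (\<lambda>i. gX (W i \<omega>)) (\<lambda>i. Y i (I n i \<omega>) \<omega>) z))
          (RES t z (bb z))"
      unfolding bb_def by (rule cRes[OF t z cPool[OF z]])
    show "cipo M (\<lambda>n \<omega>. svar (cell n (\<lambda>i. I n i \<omega>) (\<lambda>i. Zf i \<omega>) s z)
             (\<lambda>i. Y i (I n i \<omega>) \<omega> - gX (W i \<omega>) \<bullet> beta_pool k n (\<lambda>i. I n i \<omega>) (\<lambda>i. Zf i \<omega>) (\<lambda>i. gX (W i \<omega>)) (\<lambda>i. Y i (I n i \<omega>) \<omega>) z))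
          (RES s z (bb z))"
      unfolding bb_def by (rule cRes[OF s z cPool[OF z]])
  qed (use pi_range t s in auto)
  have eA: "(cvar M (Zf 0) z (\<lambda>\<omega>'. Y 0 t \<omega>' - gX (W 0 \<omega>') \<bullet> beta_bar M (Zf 0) (\<lambda>\<omega>. gX (W 0 \<omega>)) (\<lambda>l. Y 0 l) \<pi> k z) / \<pi> t
          + cvar M (Zf 0) z (\<lambda>\<omega>'. Y 0 s \<omega>' - gX (W 0 \<omega>') \<bullet> beta_bar M (Zf 0) (\<lambda>\<omega>. gX (W 0 \<omega>)) (\<lambda>l. Y 0 l) \<pi> k z) / \<pi> s) = A z"
    if z: "z \<in> Zs" for z
    unfolding A_def beta_bar_BB[OF z] bb_def[symmetric] cvar_resid[OF z t] cvar_resid[OF z s] RES_def ..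
  have "sigB M (Zf 0) (\<lambda>\<omega>. gX (W 0 \<omega>)) (\<lambda>l. Y 0 l) \<pi> k t s
      = (\<Sum>z\<in>Zs. pz z * (cvar M (Zf 0) z (\<lambda>\<omega>'. Y 0 t \<omega>' - gX (W 0 \<omega>') \<bullet> beta_bar M (Zf 0) (\<lambda>\<omega>. gX (W 0 \<omega>)) (\<lambda>l. Y 0 l) \<pi> k z) / \<pi> t
          + cvar M (Zf 0) z (\<lambda>\<omega>'. Y 0 s \<omega>' - gX (W 0 \<omega>') \<bullet> beta_bar M (Zf 0) (\<lambda>\<omega>. gX (W 0 \<omega>)) (\<lambda>l. Y 0 l) \<pi> k z) / \<pi> s))"
    unfolding sigB_def by (subst int_Z[symmetric]) (rule refl)
  also have "\<dots> = (\<Sum>z\<in>Zs. pz z * A z)"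
    using eA by simp
  finally show ?thesis using h by simp
qed

end

end


theorem mainTheorem4:
  fixes M :: "'a measure" and Wsp :: "'w measure"
    and k :: nat and \<pi> :: "nat \<Rightarrow> real"
    and Y :: "nat \<Rightarrow> nat \<Rightarrow> 'a \<Rightarrow> real"
    and W :: "nat \<Rightarrow> 'a \<Rightarrow> 'w"
    and gZ :: "'w \<Rightarrow> 'z" and Zs :: "'z set"
    and gX :: "'w \<Rightarrow> real^'p"
    and I :: "nat \<Rightarrow> nat \<Rightarrow> 'a \<Rightarrow> nat"
    and s t :: nat
  assumes P: "prob_space M"
    and k2: "k \<ge> 2"
    and pi_range: "\<forall>l<k. 0 < \<pi> l \<and> \<pi> l < 1"
    and pi_sum: "(\<Sum>l<k. \<pi> l) = 1"
    and st: "s < k" "t < k" "s \<noteq> t"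
    and meas_Y: "\<forall>i l. l < k \<longrightarrow> Y i l \<in> borel_measurable M"
    and meas_W: "\<forall>i. W i \<in> measurable M Wsp"
    and meas_gZ: "gZ \<in> measurable Wsp (count_space UNIV)"
    and meas_gX: "gX \<in> borel_measurable Wsp"
    and meas_I: "\<forall>n i. I n i \<in> measurable M (count_space UNIV)"
    and I_range: "\<forall>n i. \<forall>\<omega>\<in>space M. i < n \<longrightarrow> I n i \<omega> < k"
    \<comment> \<open>(C1)\<close>
    and C1_indep: "prob_space.indep_vars M (\<lambda>_. pspace k Wsp) (pvec k Y W) UNIV"
    and C1_ident: "\<forall>i. distr M (pspace k Wsp) (pvec k Y W i) = distr M (pspace k Wsp) (pvec k Y W 0)"
    and C1_mom: "\<forall>l<k. integrable M (\<lambda>\<omega>. (Y 0 l \<omega>)\<^sup>2)"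
    \<comment> \<open>(C2): conditional independence given the discrete vector (Z_1,...,Z_n)\<close>
    and C2: "\<forall>n (a :: nat \<Rightarrow> nat) (zs :: nat \<Rightarrow> 'z) B.
       B \<in> sets (\<Pi>\<^sub>M i\<in>{..<n}. pspace k Wsp) \<longrightarrow>
       (let EI = {\<omega> \<in> space M. \<forall>i<n. I n i \<omega> = a i};
            ED = {\<omega> \<in> space M. (\<lambda>i\<in>{..<n}. pvec k Y W i \<omega>) \<in> B};
            EZ = {\<omega> \<in> space M. \<forall>i<n. gZ (W i \<omega>) = zs i}
        in measure M (EI \<inter> ED \<inter> EZ) * measure M EZ = measure M (EI \<inter> EZ) * measure M (ED \<inter> EZ))"
    \<comment> \<open>(C3)\<close>
    and C3_fin: "finite Zs"
    and C3_vals: "gZ ` space Wsp \<subseteq> Zs"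
    and C3_pos: "\<forall>z\<in>Zs. measure M {\<omega> \<in> space M. gZ (W 0 \<omega>) = z} > 0"
    and C3_prob: "\<forall>n i l (zs :: nat \<Rightarrow> 'z). i < n \<longrightarrow> l < k \<longrightarrow>
       measure M {\<omega> \<in> space M. I n i \<omega> = l \<and> (\<forall>j<n. gZ (W j \<omega>) = zs j)}
         = \<pi> l * measure M {\<omega> \<in> space M. \<forall>j<n. gZ (W j \<omega>) = zs j}"
    and C3_bal: "\<forall>z\<in>Zs. \<forall>l<k. conv_in_prob M
       (\<lambda>n \<omega>. (real (card (cell n (\<lambda>i. I n i \<omega>) (\<lambda>i. gZ (W i \<omega>)) l z))
                 - \<pi> l * real (card (stratum n (\<lambda>i. gZ (W i \<omega>)) z)))
                / real (card (stratum n (\<lambda>i. gZ (W i \<omega>)) z))) 0"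
    \<comment> \<open>moment conditions on X and X Y^(l)\<close>
    and mom_X: "integrable M (\<lambda>\<omega>. (norm (gX (W 0 \<omega>)))\<^sup>2)"
    and mom_XY: "\<forall>l<k. integrable M (\<lambda>\<omega>. (norm (Y 0 l \<omega> *\<^sub>R gX (W 0 \<omega>)))\<^sup>2)"
    and posdef: "\<forall>z\<in>Zs. pos_def (cvar_vec M (\<lambda>\<omega>. gZ (W 0 \<omega>)) z (\<lambda>\<omega>. gX (W 0 \<omega>)))"
  shows
    "conv_in_prob M
       (\<lambda>n \<omega>. sigU_hat \<pi> Zs n (\<lambda>i. I n i \<omega>) (\<lambda>i. gZ (W i \<omega>)) (\<lambda>i. Y i (I n i \<omega>) \<omega>) t s)
       (sigU M (\<lambda>\<omega>. gZ (W 0 \<omega>)) (\<lambda>l. Y 0 l) \<pi> t s)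
     \<and> conv_in_prob M
       (\<lambda>n \<omega>. sigV_hat Zs n (\<lambda>i. I n i \<omega>) (\<lambda>i. gZ (W i \<omega>)) (\<lambda>i. Y i (I n i \<omega>) \<omega>) t s)
       (sigV M (\<lambda>\<omega>. gZ (W 0 \<omega>)) (\<lambda>l. Y 0 l) t s)
     \<and> conv_in_prob M
       (\<lambda>n \<omega>. sigA_hat \<pi> Zs n (\<lambda>i. I n i \<omega>) (\<lambda>i. gZ (W i \<omega>)) (\<lambda>i. gX (W i \<omega>))
                 (\<lambda>i. Y i (I n i \<omega>) \<omega>) t s)
       (sigA M (\<lambda>\<omega>. gZ (W 0 \<omega>)) (\<lambda>\<omega>. gX (W 0 \<omega>)) (\<lambda>l. Y 0 l) \<pi> t s)
     \<and> conv_in_prob M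
       (\<lambda>n \<omega>. sigB_hat k \<pi> Zs n (\<lambda>i. I n i \<omega>) (\<lambda>i. gZ (W i \<omega>)) (\<lambda>i. gX (W i \<omega>))
                 (\<lambda>i. Y i (I n i \<omega>) \<omega>) t s)
       (sigB M (\<lambda>\<omega>. gZ (W 0 \<omega>)) (\<lambda>\<omega>. gX (W 0 \<omega>)) (\<lambda>l. Y 0 l) \<pi> k t s)"
proof -
  interpret trial2 M Wsp k \<pi> Y W gZ Zs gX I
    unfolding trial2_def trial2_axioms_def trial_def
    using P pi_range pi_sum meas_Y meas_W meas_gZ meas_gX meas_I I_range C1_indep C1_ident C1_mom C2
      C3_fin C3_vals C3_pos C3_bal mom_X posdef
    by (intro conjI) assumption+
  have t: "t < k" and s: "s < k" using st by auto
  show ?thesis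
    using cipo_conv[OF fm resU[OF t s]] cipo_conv[OF fm resV[OF t s]]
      cipo_conv[OF fm resA[OF t s]] cipo_conv[OF fm resB[OF t s]]
    by blast
qed

end
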